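(* Let the setting, algorithm and notation be as described in the context, suppose the constraint qualification holds and the optimization problem has a nonempty solution set. Fix $(\bar x,\bar y,\bar z)\in\mathcal W^*$ and let $\bar\phi_k:=\phi_k(\bar x,\bar y,\bar z)=(\tau\sigma)^{-1}\|z^k-\bar z\|^2+\|x^k-\bar x\|^2_{\widehat\Sigma_f+S}+\|y^k-\bar y\|^2_{\widehat\Sigma_g+T+\sigma BB^*}$. (a) For any $\eta\in(0,1/2)$ and $k\ge0$, with $\beta:=\eta(1-\eta)/(1-2\eta)$, \[ \big(\bar\phi_k+\beta\sigma\|r^k\|^2\big)-\big(\bar\phi_{k+1}+\beta\sigma\|r^{k+1}\|^2\big)\ge\Big(\tfrac{1}{\tau^2\sigma}\|z^{k+1}-z^k\|^2+\|x^{k+1}-x^k\|^2_{\widehat\Sigma_f+S+\eta\sigma AA^*}+\|y^{k+1}-y^k\|^2_{\widehat\Sigma_g+T+\eta\sigma BB^*}\Big)-\Big(\tfrac{\tau+\beta}{\tau^2\sigma}\|z^{k+1}-z^k\|^2+\|x^{k+1}-x^k\|^2_{\widehat\Sigma_f-\frac12\Sigma_f}+\|y^{k+1}-y^k\|^2_{\widehat\Sigma_g-\frac12\Sigma_g+\eta\sigma BB^*}\Big). \] If in addition, for some $\eta\in(0,1/2)$, $\widehat\Sigma_f+S+\eta\sigma AA^*\succ0$ and $\widehat\Sigma_g+T+\eta\sigma BB^*\succ0$, and \[ \sum_{k=0}^\infty\Big(\|x^{k+1}-x^k\|^2_{\widehat\Sigma_f}+\|y^{k+1}-y^k\|^2_{\widehat\Sigma_g+\sigma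 BB^*}+\|r^{k+1}\|^2\Big)<+\infty, \] then $\{(x^k,y^k)\}$ converges to an optimal solution of the optimization problem and $\{z^k\}$ converges to an optimal solution of its dual. (b) Assume $\frac12\widehat\Sigma_g+T\succeq0$. Then for any $\alpha\in(0,1]$ and $k\ge1$, with $\kappa:=1-\alpha\min(\tau,\tau^{-1})$, \[ \big[\bar\phi_k+\kappa\sigma\|r^k\|^2+\alpha\xi_k\big]-\big[\bar\phi_{k+1}+\kappa\sigma\|r^{k+1}\|^2+\alpha\xi_{k+1}\big]\ge t_{k+1}+\big(-\tau+\alpha\min(1+\tau,1+\tau^{-1})\big)\sigma\|r^{k+1}\|^2 . \] If in addition $\tau\in(0,(1+\sqrt5)/2)$ and for some $\alpha\in(\tau/\min(1+\tau,1+\tau^{-1}),1]$ one has $\widehat\Sigma_f+S\succeq0$, $H_f\succeq0$, $\frac12\Sigma_f+S+\sigma AA^*\succ0$ and $M_g\succ0$ (with $H_f,M_g$ defined using this $\alpha$), then $\{(x^k,y^k)\}$ converges to an optimal solution of the optimization problem and $\{z^k\}$ converges to an optimal solution of its dual.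
   Context: Let $\mathcal X,\mathcal Y,\mathcal Z$ be finite-dimensional real Euclidean spaces with inner products $\langle\cdot,\cdot\rangle$ and induced norms $\|\cdot\|$. Let $p:\mathcal X\to(-\infty,+\infty]$ and $q:\mathcal Y\to(-\infty,+\infty]$ be closed proper convex functions, and let $f:\mathcal X\to\mathbb R$, $g:\mathcal Y\to\mathbb R$ be convex differentiable functions with Lipschitz continuous gradients. Let $A:\mathcal Z\to\mathcal X$, $B:\mathcal Z\to\mathcal Y$ be linear maps with adjoints $A^*,B^*$, and $c\in\mathcal Z$. The optimization problem is $\min_{x,y}\{p(x)+f(x)+q(y)+g(y): A^*x+B^*y=c\}$. Constraint qualification: there is $(x_0,y_0)\in\mathrm{ri}(\mathrm{dom}(p)\times\mathrm{dom}(q))$ with $A^*x_0+B^*y_0=c$. $\mathcal W^*$ denotes the set of KKT points, i.e. $(\bar x,\bar y,\bar z)\in\mathcal X\times\mathcal Y\times\mathcal Z$ with $0\in\partial p(\bar x)+\nabla f(\bar x)+A\bar z$, $0\in\partial q(\bar y)+\nabla g(\bar y)+B\bar z$, $A^*\bar x+B^*\bar y=c$. Let $\Sigma_f,\widehat\Sigma_f$ (on $\mathcal X$) and $\Sigma_g,\widehat\Sigma_g$ (on $\mathcal Y$) be self-adjoint positive semidefinite linear operators with $\widehat\Sigma_f\succeq\Sigma_f$, $\widehat\Sigma_g\succeq\Sigma_g$, such that for all $x,x'\in\mathcal X$, $y,y'\in\mathcal Y$: $f(x')+\langle x-x',\nabla f(x')\rangle+\frac12\|x-x'\|^2_{\Sigma_f}\le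 f(x)\le f(x')+\langle x-x',\nabla f(x')\rangle+\frac12\|x-x'\|^2_{\widehat\Sigma_f}$ and the analogous two inequalities for $g$ with $\Sigma_g,\widehat\Sigma_g$. For a self-adjoint (possibly indefinite) operator $G$, $\|u\|_G^2:=\langle u,Gu\rangle$. Algorithm (Majorized iPADMM): let $\sigma>0$, $\tau>0$, and let $S:\mathcal X\to\mathcal X$, $T:\mathcal Y\to\mathcal Y$ be self-adjoint, possibly indefinite, linear operators with $\widehat\Sigma_f+S+\sigma AA^*\succeq0$ and $\widehat\Sigma_g+T+\sigma BB^*\succeq0$. Starting from $(x^0,y^0,z^0)\in\mathrm{dom}(p)\times\mathrm{dom}(q)\times\mathcal Z$, for $k=0,1,\dots$: $x^{k+1}\in\arg\min_{x}\{p(x)+\langle\nabla f(x^k),x\rangle+\frac12\|x-x^k\|^2_{\widehat\Sigma_f+S}+\langle z^k,A^*x\rangle+\frac\sigma2\|A^*x+B^*y^k-c\|^2\}$, $y^{k+1}\in\arg\min_{y}\{q(y)+\langle\nabla g(y^k),y\rangle+\frac12\|y-y^k\|^2_{\widehat\Sigma_g+T}+\langle z^k,B^*y\rangle+\frac\sigma2\|A^*x^{k+1}+B^*y-c\|^2\}$, $z^{k+1}=z^k+\tau\sigma(A^*x^{k+1}+B^*y^{k+1}-c)$ (the minimizers are assumed to exist). Notation: $r^k:=A^*x^k+B^*y^k-c$; for $\alpha\in(0,1]$, $H_f:=\frac12\Sigma_f+S+\frac12(1-\alpha)\sigma AA^*$ and $M_g:=\frac12\Sigma_g+T+\min(\tau,1+\tau-\tau^2)\alpha\sigma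 BB^*$; $\phi_k(x,y,z):=(\tau\sigma)^{-1}\|z^k-z\|^2+\|x^k-x\|^2_{\widehat\Sigma_f+S}+\|y^k-y\|^2_{\widehat\Sigma_g+T}+\sigma\|A^*x+B^*y^k-c\|^2$; $\xi_{k}:=\|y^{k}-y^{k-1}\|^2_{\widehat\Sigma_g+T}$; $t_{k+1}:=\|x^{k+1}-x^k\|^2_{H_f}+\|y^{k+1}-y^k\|^2_{M_g}$. *)

theory Defs
  imports "HOL-Analysis.Analysis"
begin

definition wsq :: "('a::real_inner \<Rightarrow> 'a) \<Rightarrow> 'a \<Rightarrow> real" where
  "wsq G u = u \<bullet> G u"

definition self_adjoint_op :: "('a::real_inner \<Rightarrow> 'a) \<Rightarrow> bool" where
  "self_adjoint_op G \<longleftrightarrow> linear G \<and> (\<forall>u v. G u \<bullet> v = u \<bullet> G v)"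

definition psd_op :: "('a::real_inner \<Rightarrow> 'a) \<Rightarrow> bool" where
  "psd_op G \<longleftrightarrow> (\<forall>u. 0 \<le> u \<bullet> G u)"

definition pd_op :: "('a::real_inner \<Rightarrow> 'a) \<Rightarrow> bool" where
  "pd_op G \<longleftrightarrow> (\<forall>u. u \<noteq> 0 \<longrightarrow> 0 < u \<bullet> G u)"

definition edom :: "('a \<Rightarrow> ereal) \<Rightarrow> 'a set" where
  "edom p = {x. p x < \<infinity>}"

definition proper_efun :: "('a \<Rightarrow> ereal) \<Rightarrow> bool" where
  "proper_efun p \<longleftrightarrow> (\<forall>x. p x \<noteq> -\<infinity>) \<and> (\<exists>x. p x \<noteq> \<infinity>)"

definition convex_efun :: "('a::real_vector \<Rightarrow> ereal) \<Rightarrow> bool" where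
  "convex_efun p \<longleftrightarrow> (\<forall>x y t. 0 < t \<longrightarrow> t < 1 \<longrightarrow>
      p ((1 - t) *\<^sub>R x + t *\<^sub>R y) \<le> ereal (1 - t) * p x + ereal t * p y)"

text \<open>Closed = lower semicontinuous = closed epigraph.\<close>
definition closed_efun :: "('a::topological_space \<Rightarrow> ereal) \<Rightarrow> bool" where
  "closed_efun p \<longleftrightarrow> closed {(x, t::real). p x \<le> ereal t}"

definition subdiff :: "('a::real_inner \<Rightarrow> ereal) \<Rightarrow> 'a \<Rightarrow> 'a set" where
  "subdiff p x = {v. p x < \<infinity> \<and> (\<forall>x'. p x + ereal (v \<bullet> (x' - x)) \<le> p x')}"

definition KKT_set ::
  "('a::euclidean_space \<Rightarrow> ereal) \<Rightarrow> ('a \<Rightarrow> 'a) \<Rightarrow> ('b::euclidean_space \<Rightarrow> ereal) \<Rightarrow> ('b \<Rightarrow> 'b)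
   \<Rightarrow> ('c::euclidean_space \<Rightarrow> 'a) \<Rightarrow> ('c \<Rightarrow> 'b) \<Rightarrow> 'c \<Rightarrow> ('a \<times> 'b \<times> 'c) set" where
  "KKT_set p Df q Dg A B c =
     {(xb, yb, zb). (\<exists>v \<in> subdiff p xb. v + Df xb + A zb = 0)
                  \<and> (\<exists>w \<in> subdiff q yb. w + Dg yb + B zb = 0)
                  \<and> adjoint A xb + adjoint B yb = c}"

definition primal_opt ::
  "('a::euclidean_space \<Rightarrow> ereal) \<Rightarrow> ('a \<Rightarrow> real) \<Rightarrow> ('b::euclidean_space \<Rightarrow> ereal) \<Rightarrow> ('b \<Rightarrow> real)
   \<Rightarrow> ('c::euclidean_space \<Rightarrow> 'a) \<Rightarrow> ('c \<Rightarrow> 'b) \<Rightarrow> 'c \<Rightarrow> 'a \<Rightarrow> 'b \<Rightarrow> bool" where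
  "primal_opt p f q g A B c x y \<longleftrightarrow>
     adjoint A x + adjoint B y = c \<and>
     (\<forall>x' y'. adjoint A x' + adjoint B y' = c \<longrightarrow>
        p x + ereal (f x) + q y + ereal (g y) \<le> p x' + ereal (f x') + q y' + ereal (g y'))"

definition dual_fun ::
  "('a::euclidean_space \<Rightarrow> ereal) \<Rightarrow> ('a \<Rightarrow> real) \<Rightarrow> ('b::euclidean_space \<Rightarrow> ereal) \<Rightarrow> ('b \<Rightarrow> real)
   \<Rightarrow> ('c::euclidean_space \<Rightarrow> 'a) \<Rightarrow> ('c \<Rightarrow> 'b) \<Rightarrow> 'c \<Rightarrow> 'c \<Rightarrow> ereal" where
  "dual_fun p f q g A B c z =
     (INF x. INF y. p x + ereal (f x) + q y + ereal (g y)
                      + ereal (z \<bullet> (adjoint A x + adjoint B y - c)))"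

definition dual_opt ::
  "('a::euclidean_space \<Rightarrow> ereal) \<Rightarrow> ('a \<Rightarrow> real) \<Rightarrow> ('b::euclidean_space \<Rightarrow> ereal) \<Rightarrow> ('b \<Rightarrow> real)
   \<Rightarrow> ('c::euclidean_space \<Rightarrow> 'a) \<Rightarrow> ('c \<Rightarrow> 'b) \<Rightarrow> 'c \<Rightarrow> 'c \<Rightarrow> bool" where
  "dual_opt p f q g A B c z \<longleftrightarrow> (\<forall>z'. dual_fun p f q g A B c z' \<le> dual_fun p f q g A B c z)"

definition xsub ::
  "('a::euclidean_space \<Rightarrow> ereal) \<Rightarrow> ('a \<Rightarrow> 'a) \<Rightarrow> ('a \<Rightarrow> 'a) \<Rightarrow> ('a \<Rightarrow> 'a)
   \<Rightarrow> ('c::euclidean_space \<Rightarrow> 'a) \<Rightarrow> ('c \<Rightarrow> 'b::euclidean_space) \<Rightarrow> 'c \<Rightarrow> real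
   \<Rightarrow> 'a \<Rightarrow> 'b \<Rightarrow> 'c \<Rightarrow> 'a \<Rightarrow> ereal" where
  "xsub p Df Shf S A B c \<sigma> xk yk zk x =
     p x + ereal (Df xk \<bullet> x + wsq (\<lambda>u. Shf u + S u) (x - xk) / 2 + zk \<bullet> adjoint A x
                  + \<sigma> / 2 * (norm (adjoint A x + adjoint B yk - c))\<^sup>2)"

definition ysub ::
  "('b::euclidean_space \<Rightarrow> ereal) \<Rightarrow> ('b \<Rightarrow> 'b) \<Rightarrow> ('b \<Rightarrow> 'b) \<Rightarrow> ('b \<Rightarrow> 'b)
   \<Rightarrow> ('c::euclidean_space \<Rightarrow> 'a::euclidean_space) \<Rightarrow> ('c \<Rightarrow> 'b) \<Rightarrow> 'c \<Rightarrow> real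
   \<Rightarrow> 'a \<Rightarrow> 'b \<Rightarrow> 'c \<Rightarrow> 'b \<Rightarrow> ereal" where
  "ysub q Dg Shg T A B c \<sigma> xk1 yk zk y =
     q y + ereal (Dg yk \<bullet> y + wsq (\<lambda>u. Shg u + T u) (y - yk) / 2 + zk \<bullet> adjoint B y
                  + \<sigma> / 2 * (norm (adjoint A xk1 + adjoint B y - c))\<^sup>2)"

definition miPADMM_seq ::
  "('a::euclidean_space \<Rightarrow> ereal) \<Rightarrow> ('a \<Rightarrow> 'a) \<Rightarrow> ('a \<Rightarrow> 'a) \<Rightarrow> ('a \<Rightarrow> 'a)
   \<Rightarrow> ('b::euclidean_space \<Rightarrow> ereal) \<Rightarrow> ('b \<Rightarrow> 'b) \<Rightarrow> ('b \<Rightarrow> 'b) \<Rightarrow> ('b \<Rightarrow> 'b)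
   \<Rightarrow> ('c::euclidean_space \<Rightarrow> 'a) \<Rightarrow> ('c \<Rightarrow> 'b) \<Rightarrow> 'c \<Rightarrow> real \<Rightarrow> real
   \<Rightarrow> (nat \<Rightarrow> 'a) \<Rightarrow> (nat \<Rightarrow> 'b) \<Rightarrow> (nat \<Rightarrow> 'c) \<Rightarrow> bool" where
  "miPADMM_seq p Df Shf S q Dg Shg T A B c \<sigma> \<tau> x y z \<longleftrightarrow>
     x 0 \<in> edom p \<and> y 0 \<in> edom q \<and>
     (\<forall>k. (\<forall>x'. xsub p Df Shf S A B c \<sigma> (x k) (y k) (z k) (x (Suc k))
                  \<le> xsub p Df Shf S A B c \<sigma> (x k) (y k) (z k) x')
        \<and> (\<forall>y'. ysub q Dg Shg T A B c \<sigma> (x (Suc k)) (y k) (z k) (y (Suc k))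
                  \<le> ysub q Dg Shg T A B c \<sigma> (x (Suc k)) (y k) (z k) y')
        \<and> z (Suc k) = z k + (\<tau> * \<sigma>) *\<^sub>R (adjoint A (x (Suc k)) + adjoint B (y (Suc k)) - c))"

end

theory Submission
  imports Defs
begin

section \<open>Quadratic forms\<close>

lemma sa_linear: "self_adjoint_op G \<Longrightarrow> linear G"
  by (simp add: self_adjoint_op_def)

lemma sa_sym: "self_adjoint_op G \<Longrightarrow> u \<bullet> G v = G u \<bullet> v"
  by (simp add: self_adjoint_op_def)

lemma wsq_add:
  assumes "self_adjoint_op G"
  shows "wsq G (u + v) = wsq G u + 2 * (G u \<bullet> v) + wsq G v"
proof -
  have l: "linear G" using assms by (rule sa_linear)
  have "G (u + v) = G u + G v" using l by (simp add: linear_add)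
  moreover have "u \<bullet> G v = G u \<bullet> v" using assms by (rule sa_sym)
  ultimately show ?thesis unfolding wsq_def
    by (simp add: inner_add_left inner_add_right inner_commute)
qed

lemma wsq_diff:
  assumes "self_adjoint_op G"
  shows "wsq G (u - v) = wsq G u - 2 * (G u \<bullet> v) + wsq G v"
proof -
  have l: "linear G" using assms by (rule sa_linear)
  have "G (u - v) = G u - G v" using l by (simp add: linear_diff)
  moreover have "u \<bullet> G v = G u \<bullet> v" using assms by (rule sa_sym)
  ultimately show ?thesis unfolding wsq_def
    by (simp add: inner_diff_left inner_diff_right inner_commute)
qed

lemma wsq_scale:
  assumes "linear G"
  shows "wsq G (t *\<^sub>R u) = t\<^sup>2 * wsq G u"
  using assms unfolding wsq_def by (simp add: linear_scale power2_eq_square)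

lemma wsq_minus:
  assumes "linear G"
  shows "wsq G (- u) = wsq G u"
  using assms unfolding wsq_def by (simp add: linear_neg)

lemma wsq_swap:
  assumes "linear G"
  shows "wsq G (u - v) = wsq G (v - u)"
  using wsq_minus[OF assms, of "v - u"] by simp

lemma wsq_plus_op: "wsq (\<lambda>u. G u + H u) x = wsq G x + wsq H x"
  unfolding wsq_def by (simp add: inner_add_right)

lemma wsq_minus_op: "wsq (\<lambda>u. G u - H u) x = wsq G x - wsq H x"
  unfolding wsq_def by (simp add: inner_diff_right)

lemma wsq_scale_op: "wsq (\<lambda>u. c *\<^sub>R G u) x = c * wsq G x"
  unfolding wsq_def by simp

lemma wsq_AA:
  fixes A :: "'c::euclidean_space \<Rightarrow> 'a::euclidean_space"
  assumes "linear A"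
  shows "wsq (\<lambda>u. A (adjoint A u)) x = (norm (adjoint A x))\<^sup>2"
  unfolding wsq_def using adjoint_clauses(2)[OF assms, of x "adjoint A x"]
  by (simp add: power2_norm_eq_inner)

lemma psd_wsq: "psd_op G \<Longrightarrow> 0 \<le> wsq G u"
  by (simp add: psd_op_def wsq_def)

lemma psd_cs:
  assumes "self_adjoint_op G" "psd_op G"
  shows "2 * (G u \<bullet> v) \<le> wsq G u + wsq G v"
  using wsq_diff[OF assms(1), of u v] psd_wsq[OF assms(2), of "u - v"] by simp

lemma psd_half:
  assumes "self_adjoint_op G" "psd_op G"
  shows "wsq G (u - v) \<le> 2 * wsq G u + 2 * wsq G v"
  using wsq_diff[OF assms(1), of u v] wsq_add[OF assms(1), of u v] psd_wsq[OF assms(2), of "u + v"] by simp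

section \<open>Subgradients\<close>

lemma subdiff_mono:
  assumes "proper_efun p" "u \<in> subdiff p a" "v \<in> subdiff p b"
  shows "0 \<le> (u - v) \<bullet> (a - b)"
proof -
  have pa: "p a < \<infinity>" "p b < \<infinity>" using assms(2,3) by (auto simp: subdiff_def)
  have "p a \<noteq> -\<infinity>" "p b \<noteq> -\<infinity>" using assms(1) by (auto simp: proper_efun_def)
  then obtain P Q where PQ: "p a = ereal P" "p b = ereal Q" using pa
    by (metis ereal_cases less_ereal.simps(2) less_irrefl)
  have "p a + ereal (u \<bullet> (b - a)) \<le> p b" "p b + ereal (v \<bullet> (a - b)) \<le> p a"
    using assms(2,3) by (auto simp: subdiff_def)
  then have "P + u \<bullet> (b - a) \<le> Q" "Q + v \<bullet> (a - b) \<le> P" using PQ by auto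
  then show ?thesis by (simp add: inner_diff_left inner_diff_right algebra_simps)
qed

lemma small_t:
  fixes a c :: real
  assumes "\<And>t. 0 < t \<Longrightarrow> t < 1 \<Longrightarrow> a \<le> t * c"
  shows "a \<le> 0"
proof (rule ccontr)
  assume "\<not> a \<le> 0"
  define t where "t = min (1/2) (a / (2 * (\<bar>c\<bar> + 1)))"
  have t0: "0 < t" "t < 1" using \<open>\<not> a \<le> 0\<close> by (auto simp: t_def)
  have "t * c \<le> t * (\<bar>c\<bar> + 1)" using t0 by (intro mult_left_mono) auto
  also have "\<dots> \<le> a / (2 * (\<bar>c\<bar> + 1)) * (\<bar>c\<bar> + 1)"
    by (intro mult_right_mono) (auto simp: t_def)
  also have "\<dots> = a / 2" by (simp add: field_simps)
  finally show False using assms[OF t0] \<open>\<not> a \<le> 0\<close> by simp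
qed

lemma argmin_subgrad:
  fixes p :: "'a::real_inner \<Rightarrow> ereal"
  assumes pr: "proper_efun p" and cvx: "convex_efun p"
    and min: "\<And>x'. p xs + ereal (h xs) \<le> p x' + ereal (h x')"
    and quad: "\<And>d t. h (xs + t *\<^sub>R d) = h xs + t * (g \<bullet> d) + t\<^sup>2 * Q d"
  shows "- g \<in> subdiff p xs"
proof -
  obtain x0 where x0: "p x0 \<noteq> \<infinity>" using pr by (auto simp: proper_efun_def)
  have ninf: "\<And>x. p x \<noteq> -\<infinity>" using pr by (auto simp: proper_efun_def)
  have "p xs + ereal (h xs) \<noteq> \<infinity>"
    using min[of x0] x0 ninf[of x0] by (cases "p x0") auto
  then have "p xs \<noteq> \<infinity>" by auto
  then obtain P where P: "p xs = ereal P" using ninf[of xs] by (cases "p xs") auto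
  have "p xs + ereal (- g \<bullet> (x' - xs)) \<le> p x'" for x'
  proof (cases "p x' = \<infinity>")
    case True then show ?thesis by simp
  next
    case False
    then obtain P' where P': "p x' = ereal P'" using ninf[of x'] by (cases "p x'") auto
    define d where "d = x' - xs"
    have "P - P' - g \<bullet> d \<le> 0"
    proof (rule small_t[of _ "Q d"])
      fix t :: real assume t: "0 < t" "t < 1"
      have eq: "(1 - t) *\<^sub>R xs + t *\<^sub>R x' = xs + t *\<^sub>R d"
        by (simp add: d_def algebra_simps)
      have "p (xs + t *\<^sub>R d) \<le> ereal ((1 - t) * P + t * P')"
        using cvx t unfolding convex_efun_def eq[symmetric]
        by (metis P P' times_ereal.simps(1) plus_ereal.simps(1))
      moreover have "p xs + ereal (h xs) \<le> p (xs + t *\<^sub>R d) + ereal (h (xs + t *\<^sub>R d))"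
        by (rule min)
      ultimately have "P + h xs \<le> (1 - t) * P + t * P' + h (xs + t *\<^sub>R d)"
        using P by (cases "p (xs + t *\<^sub>R d)") auto
      then have "t * (P - P' - g \<bullet> d) \<le> t * (t * Q d)"
        unfolding quad by (simp add: algebra_simps power2_eq_square)
      then show "P - P' - g \<bullet> d \<le> t * Q d" using t by simp
    qed
    then show ?thesis using P P' by (simp add: d_def inner_minus_left)
  qed
  then show ?thesis unfolding subdiff_def using P by auto
qed

lemma sa_plus: "self_adjoint_op G \<Longrightarrow> self_adjoint_op H \<Longrightarrow> self_adjoint_op (\<lambda>u. G u + H u)"
  unfolding self_adjoint_op_def by (auto simp: linear_add linear_compose_add inner_add_left inner_add_right)

lemma sa_minus: "self_adjoint_op G \<Longrightarrow> self_adjoint_op H \<Longrightarrow> self_adjoint_op (\<lambda>u. G u - H u)"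
  unfolding self_adjoint_op_def by (auto simp: linear_compose_sub inner_diff_left inner_diff_right)

lemma sa_scale: "self_adjoint_op G \<Longrightarrow> self_adjoint_op (\<lambda>u. c *\<^sub>R G u)"
  unfolding self_adjoint_op_def by (auto simp: linear_compose_scale_right)

lemma sa_AA:
  fixes A :: "'c::euclidean_space \<Rightarrow> 'a::euclidean_space"
  assumes "linear A"
  shows "self_adjoint_op (\<lambda>u. A (adjoint A u))"
  unfolding self_adjoint_op_def
proof
  show "linear (\<lambda>u. A (adjoint A u))"
    using linear_compose[OF adjoint_linear[OF assms] assms] by (simp add: o_def)
  show "\<forall>u v. A (adjoint A u) \<bullet> v = u \<bullet> A (adjoint A v)"
  proof (intro allI)
    fix u v
    show "A (adjoint A u) \<bullet> v = u \<bullet> A (adjoint A v)"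
      using adjoint_clauses(1)[OF assms, of "adjoint A u" v] adjoint_clauses(2)[OF assms, of u "adjoint A v"]
      by simp
  qed
qed

section \<open>Gradient inequalities\<close>

lemma grad_three:
  fixes Df :: "'a::real_inner \<Rightarrow> 'a"
  assumes lo: "\<And>u u'. f u' + (u - u') \<bullet> Df u' + wsq Sf (u - u') / 2 \<le> f u"
    and up: "\<And>u u'. f u \<le> f u' + (u - u') \<bullet> Df u' + wsq Shf (u - u') / 2"
    and lin: "linear Sf"
  shows "wsq Sf (x1 - xb) / 2 + wsq Sf (x0 - xb) / 2 - wsq Shf (x1 - x0) / 2
          \<le> (Df x0 - Df xb) \<bullet> (x1 - xb)"
proof -
  have 1: "f x1 \<le> f x0 + (x1 - x0) \<bullet> Df x0 + wsq Shf (x1 - x0) / 2" by (rule up)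
  have 2: "f x0 + (xb - x0) \<bullet> Df x0 + wsq Sf (xb - x0) / 2 \<le> f xb" by (rule lo)
  have 3: "f xb + (x1 - xb) \<bullet> Df xb + wsq Sf (x1 - xb) / 2 \<le> f x1" by (rule lo)
  have s: "wsq Sf (xb - x0) = wsq Sf (x0 - xb)" by (rule wsq_swap[OF lin])
  show ?thesis using 1 2 3 s by (simp add: inner_diff_left inner_diff_right inner_commute algebra_simps)
qed

lemma grad_cocoer:
  fixes Dg :: "'a::real_inner \<Rightarrow> 'a"
  assumes lo: "\<And>u u'. g u' + (u - u') \<bullet> Dg u' + wsq Sg (u - u') / 2 \<le> g u"
    and up: "\<And>u u'. g u \<le> g u' + (u - u') \<bullet> Dg u' + wsq Shg (u - u') / 2"
    and lin: "linear Shg" and psd: "psd_op Sg"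
  shows "0 \<le> (Dg b - Dg a) \<bullet> (2 *\<^sub>R s + (b - a)) + wsq Shg s"
proof -
  have 1: "g a + (b + s - a) \<bullet> Dg a \<le> g (b + s)"
    using lo[where u="b + s" and u'=a] psd_wsq[OF psd, of "b + s - a"] by simp
  have 2: "g (b + s) \<le> g b + s \<bullet> Dg b + wsq Shg s / 2" using up[where u="b + s" and u'=b] by simp
  have 3: "g b + (a - s - b) \<bullet> Dg b \<le> g (a - s)"
    using lo[where u="a - s" and u'=b] psd_wsq[OF psd, of "a - s - b"] by simp
  have 4: "g (a - s) \<le> g a + (- s) \<bullet> Dg a + wsq Shg s / 2"
    using up[where u="a - s" and u'=a] wsq_minus[OF lin, of s] by simp
  show ?thesis using 1 2 3 4
    by (simp add: inner_diff_left inner_diff_right inner_add_left inner_add_right inner_commute algebra_simps)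
qed

section \<open>Subproblem optimality\<close>

lemma quad_exp:
  fixes A :: "'c::euclidean_space \<Rightarrow> 'a::euclidean_space"
  assumes G: "self_adjoint_op G" and A: "linear A"
  shows "D \<bullet> (xs + t *\<^sub>R d) + wsq G (xs + t *\<^sub>R d - xk) / 2 + zk \<bullet> adjoint A (xs + t *\<^sub>R d)
          + \<sigma> / 2 * (norm (adjoint A (xs + t *\<^sub>R d) + w))\<^sup>2
        = (D \<bullet> xs + wsq G (xs - xk) / 2 + zk \<bullet> adjoint A xs + \<sigma> / 2 * (norm (adjoint A xs + w))\<^sup>2)
          + t * ((D + G (xs - xk) + A zk + \<sigma> *\<^sub>R A (adjoint A xs + w)) \<bullet> d)
          + t\<^sup>2 * (wsq G d / 2 + \<sigma> / 2 * (norm (adjoint A d))\<^sup>2)"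
proof -
  have la: "linear (adjoint A)" by (rule adjoint_linear[OF A])
  have e1: "xs + t *\<^sub>R d - xk = (xs - xk) + t *\<^sub>R d" by (simp add: algebra_simps)
  have w1: "wsq G (xs + t *\<^sub>R d - xk) = wsq G (xs - xk) + 2 * t * (G (xs - xk) \<bullet> d) + t\<^sup>2 * wsq G d"
    unfolding e1 wsq_add[OF G] wsq_scale[OF sa_linear[OF G]] by simp
  have a1: "adjoint A (xs + t *\<^sub>R d) = adjoint A xs + t *\<^sub>R adjoint A d"
    using la by (simp add: linear_add linear_scale)
  have n1: "(norm (adjoint A xs + t *\<^sub>R adjoint A d + w))\<^sup>2
      = (norm (adjoint A xs + w))\<^sup>2 + 2 * t * ((adjoint A xs + w) \<bullet> adjoint A d) + t\<^sup>2 * (norm (adjoint A d))\<^sup>2"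
    unfolding power2_norm_eq_inner
    by (simp add: inner_add_left inner_add_right inner_commute algebra_simps power2_eq_square)
  have i1: "(adjoint A xs + w) \<bullet> adjoint A d = A (adjoint A xs + w) \<bullet> d"
    by (simp add: adjoint_clauses[OF A] inner_commute)
  have i2: "zk \<bullet> adjoint A d = A zk \<bullet> d" by (simp add: adjoint_clauses[OF A])
  show ?thesis unfolding w1 a1 n1 i1
    by (simp add: inner_add_left inner_add_right i2 algebra_simps power2_eq_square)
qed

lemma x_opt:
  fixes A :: "'c::euclidean_space \<Rightarrow> 'a::euclidean_space" and B :: "'c \<Rightarrow> 'b::euclidean_space"
  assumes pr: "proper_efun p" "convex_efun p" and G: "self_adjoint_op (\<lambda>u. Shf u + S u)"
    and A: "linear A"
    and mn: "\<And>x'. xsub p Df Shf S A B c \<sigma> xk yk zk xs \<le> xsub p Df Shf S A B c \<sigma> xk yk zk x'"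
  shows "- (Df xk + (Shf (xs - xk) + S (xs - xk)) + A zk + \<sigma> *\<^sub>R A (adjoint A xs + adjoint B yk - c))
          \<in> subdiff p xs"
proof -
  define h where "h = (\<lambda>x. Df xk \<bullet> x + wsq (\<lambda>u. Shf u + S u) (x - xk) / 2 + zk \<bullet> adjoint A x
                  + \<sigma> / 2 * (norm (adjoint A x + (adjoint B yk - c)))\<^sup>2)"
  have hx: "xsub p Df Shf S A B c \<sigma> xk yk zk x = p x + ereal (h x)" for x
    unfolding xsub_def h_def by (simp add: algebra_simps)
  have "- (Df xk + (Shf (xs - xk) + S (xs - xk)) + A zk + \<sigma> *\<^sub>R A (adjoint A xs + (adjoint B yk - c)))
          \<in> subdiff p xs"
  proof (rule argmin_subgrad[OF pr])
    show "p xs + ereal (h xs) \<le> p x' + ereal (h x')" for x' using mn[of x'] unfolding hx .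
    show "h (xs + t *\<^sub>R d) = h xs + t * ((Df xk + (Shf (xs - xk) + S (xs - xk)) + A zk + \<sigma> *\<^sub>R A (adjoint A xs + (adjoint B yk - c))) \<bullet> d)
       + t\<^sup>2 * (wsq (\<lambda>u. Shf u + S u) d / 2 + \<sigma> / 2 * (norm (adjoint A d))\<^sup>2)" for d t
      unfolding h_def using quad_exp[OF G A, of "Df xk" xs t d xk zk \<sigma> "adjoint B yk - c"] by simp
  qed
  then show ?thesis by (simp add: algebra_simps)
qed

lemma y_opt:
  fixes A :: "'c::euclidean_space \<Rightarrow> 'a::euclidean_space" and B :: "'c \<Rightarrow> 'b::euclidean_space"
  assumes pr: "proper_efun q" "convex_efun q" and G: "self_adjoint_op (\<lambda>u. Shg u + T u)"
    and B: "linear B"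
    and mn: "\<And>y'. ysub q Dg Shg T A B c \<sigma> xk1 yk zk ys \<le> ysub q Dg Shg T A B c \<sigma> xk1 yk zk y'"
  shows "- (Dg yk + (Shg (ys - yk) + T (ys - yk)) + B zk + \<sigma> *\<^sub>R B (adjoint A xk1 + adjoint B ys - c))
          \<in> subdiff q ys"
proof -
  define h where "h = (\<lambda>y. Dg yk \<bullet> y + wsq (\<lambda>u. Shg u + T u) (y - yk) / 2 + zk \<bullet> adjoint B y
                  + \<sigma> / 2 * (norm (adjoint B y + (adjoint A xk1 - c)))\<^sup>2)"
  have hx: "ysub q Dg Shg T A B c \<sigma> xk1 yk zk y = q y + ereal (h y)" for y
    unfolding ysub_def h_def by (simp add: algebra_simps)
  have "- (Dg yk + (Shg (ys - yk) + T (ys - yk)) + B zk + \<sigma> *\<^sub>R B (adjoint B ys + (adjoint A xk1 - c)))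
          \<in> subdiff q ys"
  proof (rule argmin_subgrad[OF pr])
    show "q ys + ereal (h ys) \<le> q y' + ereal (h y')" for y' using mn[of y'] unfolding hx .
    show "h (ys + t *\<^sub>R d) = h ys + t * ((Dg yk + (Shg (ys - yk) + T (ys - yk)) + B zk + \<sigma> *\<^sub>R B (adjoint B ys + (adjoint A xk1 - c))) \<bullet> d)
       + t\<^sup>2 * (wsq (\<lambda>u. Shg u + T u) d / 2 + \<sigma> / 2 * (norm (adjoint B d))\<^sup>2)" for d t
      unfolding h_def using quad_exp[OF G B, of "Dg yk" ys t d yk zk \<sigma> "adjoint A xk1 - c"] by simp
  qed
  then show ?thesis by (simp add: algebra_simps)
qed

lemma norm_sq_add: "(norm (u + v))\<^sup>2 = (norm u)\<^sup>2 + 2 * (u \<bullet> v) + (norm v)\<^sup>2"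
  for u v :: "'a::real_inner"
  unfolding power2_norm_eq_inner by (simp add: inner_add_left inner_add_right inner_commute)

lemma norm_sq_diff: "(norm (u - v))\<^sup>2 = (norm u)\<^sup>2 - 2 * (u \<bullet> v) + (norm v)\<^sup>2"
  for u v :: "'a::real_inner"
  unfolding power2_norm_eq_inner by (simp add: inner_diff_left inner_diff_right inner_commute)

lemma step_core:
  fixes A :: "'c::euclidean_space \<Rightarrow> 'a::euclidean_space" and B :: "'c \<Rightarrow> 'b::euclidean_space"
    and Df :: "'a \<Rightarrow> 'a" and Dg :: "'b \<Rightarrow> 'b"
  assumes A: "linear A" and B: "linear B"
    and pp: "proper_efun p" and pq: "proper_efun q"
    and G: "self_adjoint_op G" and H: "self_adjoint_op H"
    and Sf: "self_adjoint_op Sf" "psd_op Sf" and Sg: "self_adjoint_op Sg" "psd_op Sg"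
    and flo: "\<And>u u'. f u' + (u - u') \<bullet> Df u' + wsq Sf (u - u') / 2 \<le> f u"
    and fup: "\<And>u u'. f u \<le> f u' + (u - u') \<bullet> Df u' + wsq Shf (u - u') / 2"
    and glo: "\<And>u u'. g u' + (u - u') \<bullet> Dg u' + wsq Sg (u - u') / 2 \<le> g u"
    and gup: "\<And>u u'. g u \<le> g u' + (u - u') \<bullet> Dg u' + wsq Shg (u - u') / 2"
    and sig: "\<sigma> > 0" and tau: "\<tau> > 0"
    and ux: "- (Df x0 + G (x1 - x0) + A z0 + \<sigma> *\<^sub>R A (adjoint A x1 + adjoint B y0 - c)) \<in> subdiff p x1"
    and uy: "- (Dg y0 + H (y1 - y0) + B z0 + \<sigma> *\<^sub>R B (adjoint A x1 + adjoint B y1 - c)) \<in> subdiff q y1"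
    and z1: "z1 = z0 + (\<tau> * \<sigma>) *\<^sub>R (adjoint A x1 + adjoint B y1 - c)"
    and vb: "vb \<in> subdiff p xb" "vb + Df xb + A zb = 0"
    and wb: "wb \<in> subdiff q yb" "wb + Dg yb + B zb = 0"
    and feas: "adjoint A xb + adjoint B yb = c"
  shows "(1 / (\<tau> * \<sigma>) * (norm (z0 - zb))\<^sup>2 + wsq G (x0 - xb) + wsq H (y0 - yb)
            + \<sigma> * (norm (adjoint A xb + adjoint B y0 - c))\<^sup>2)
        - (1 / (\<tau> * \<sigma>) * (norm (z1 - zb))\<^sup>2 + wsq G (x1 - xb) + wsq H (y1 - yb)
            + \<sigma> * (norm (adjoint A xb + adjoint B y1 - c))\<^sup>2)
        \<ge> wsq G (x1 - x0) - wsq Shf (x1 - x0) + wsq Sf (x1 - x0) / 2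
          + wsq H (y1 - y0) - wsq Shg (y1 - y0) + wsq Sg (y1 - y0) / 2
          + \<sigma> * (norm (adjoint B (y1 - y0)))\<^sup>2
          + (2 - \<tau>) * \<sigma> * (norm (adjoint A x1 + adjoint B y1 - c))\<^sup>2
          - 2 * \<sigma> * (adjoint B (y1 - y0) \<bullet> (adjoint A x1 + adjoint B y1 - c))"
proof -
  have la: "linear (adjoint A)" and lb: "linear (adjoint B)"
    using adjoint_linear[OF A] adjoint_linear[OF B] by auto
  define xe where "xe = x1 - xb"
  define xe0 where "xe0 = x0 - xb"
  define dx where "dx = x1 - x0"
  define ye where "ye = y1 - yb"
  define ye0 where "ye0 = y0 - yb"
  define dy where "dy = y1 - y0"
  define ze0 where "ze0 = z0 - zb"
  define \<rho> where "\<rho> = adjoint A x1 + adjoint B y1 - c"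
  define bd where "bd = adjoint B dy"
  define by1 where "by1 = adjoint B ye"
  define ax where "ax = adjoint A xe"
  have r1: "\<rho> = ax + by1"
    unfolding \<rho>_def ax_def by1_def xe_def ye_def using feas
    by (simp add: linear_diff[OF la] linear_diff[OF lb] algebra_simps)
  have r2: "adjoint A x1 + adjoint B y0 - c = ax + by1 - bd"
    unfolding bd_def ax_def by1_def xe_def ye_def dy_def using feas
    by (simp add: linear_diff[OF la] linear_diff[OF lb] algebra_simps)
  have r3: "adjoint A xb + adjoint B y1 - c = by1"
    unfolding by1_def ye_def using feas by (simp add: linear_diff[OF lb] algebra_simps)
  have r4: "adjoint A xb + adjoint B y0 - c = by1 - bd"
    unfolding by1_def ye_def bd_def dy_def using feas by (simp add: linear_diff[OF lb] algebra_simps)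
  have "0 \<le> (- (Df x0 + G (x1 - x0) + A z0 + \<sigma> *\<^sub>R A (adjoint A x1 + adjoint B y0 - c)) - vb) \<bullet> (x1 - xb)"
    by (rule subdiff_mono[OF pp ux vb(1)])
  moreover have "vb = - Df xb - A zb" using vb(2) by (simp add: algebra_simps eq_neg_iff_add_eq_0)
  ultimately have "0 \<le> - ((Df x0 - Df xb) \<bullet> xe + G dx \<bullet> xe + (A z0 - A zb) \<bullet> xe
        + \<sigma> * (A (ax + by1 - bd) \<bullet> xe))"
    unfolding r2 xe_def dx_def by (simp add: inner_diff_left inner_add_left algebra_simps)
  moreover have "(A z0 - A zb) \<bullet> xe = ze0 \<bullet> ax"
    unfolding ze0_def ax_def using adjoint_clauses(1)[OF A, of "z0 - zb" xe]
    by (simp add: linear_diff[OF A] inner_commute)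
  moreover have "A (ax + by1 - bd) \<bullet> xe = (ax + by1 - bd) \<bullet> ax"
    unfolding ax_def using adjoint_clauses(1)[OF A, of "ax + by1 - bd" xe] by (simp add: inner_commute ax_def)
  ultimately have Mx: "(Df x0 - Df xb) \<bullet> xe + G dx \<bullet> xe + ze0 \<bullet> ax + \<sigma> * ((ax + by1 - bd) \<bullet> ax) \<le> 0"
    by simp
  have "0 \<le> (- (Dg y0 + H (y1 - y0) + B z0 + \<sigma> *\<^sub>R B (adjoint A x1 + adjoint B y1 - c)) - wb) \<bullet> (y1 - yb)"
    by (rule subdiff_mono[OF pq uy wb(1)])
  moreover have "wb = - Dg yb - B zb" using wb(2) by (simp add: algebra_simps eq_neg_iff_add_eq_0)
  ultimately have "0 \<le> - ((Dg y0 - Dg yb) \<bullet> ye + H dy \<bullet> ye + (B z0 - B zb) \<bullet> ye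
        + \<sigma> * (B (ax + by1) \<bullet> ye))"
    unfolding \<rho>_def[symmetric] r1 ye_def dy_def by (simp add: inner_diff_left inner_add_left algebra_simps)
  moreover have "(B z0 - B zb) \<bullet> ye = ze0 \<bullet> by1"
    unfolding ze0_def by1_def using adjoint_clauses(1)[OF B, of "z0 - zb" ye]
    by (simp add: linear_diff[OF B] inner_commute)
  moreover have "B (ax + by1) \<bullet> ye = (ax + by1) \<bullet> by1"
    unfolding by1_def using adjoint_clauses(1)[OF B, of "ax + by1" ye] by (simp add: inner_commute by1_def)
  ultimately have My: "(Dg y0 - Dg yb) \<bullet> ye + H dy \<bullet> ye + ze0 \<bullet> by1 + \<sigma> * ((ax + by1) \<bullet> by1) \<le> 0"
    by simp
  have Fx: "wsq Sf dx / 4 - wsq Shf dx / 2 \<le> (Df x0 - Df xb) \<bullet> xe"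
  proof -
    have "wsq Sf xe / 2 + wsq Sf xe0 / 2 - wsq Shf dx / 2 \<le> (Df x0 - Df xb) \<bullet> xe"
      using grad_three[OF flo fup sa_linear[OF Sf(1)], of x1 xb x0] unfolding xe_def xe0_def dx_def .
    moreover have "wsq Sf dx \<le> 2 * wsq Sf xe + 2 * wsq Sf xe0"
      using psd_half[OF Sf, of xe xe0] by (simp add: xe_def xe0_def dx_def)
    ultimately show ?thesis by simp
  qed
  have Fy: "wsq Sg dy / 4 - wsq Shg dy / 2 \<le> (Dg y0 - Dg yb) \<bullet> ye"
  proof -
    have "wsq Sg ye / 2 + wsq Sg ye0 / 2 - wsq Shg dy / 2 \<le> (Dg y0 - Dg yb) \<bullet> ye"
      using grad_three[OF glo gup sa_linear[OF Sg(1)], of y1 yb y0] unfolding ye_def ye0_def dy_def .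
    moreover have "wsq Sg dy \<le> 2 * wsq Sg ye + 2 * wsq Sg ye0"
      using psd_half[OF Sg, of ye ye0] by (simp add: ye_def ye0_def dy_def)
    ultimately show ?thesis by simp
  qed
  have IG: "2 * (G dx \<bullet> xe) = wsq G xe - wsq G xe0 + wsq G dx"
  proof -
    have "xe0 = xe - dx" by (simp add: xe_def xe0_def dx_def)
    then have "wsq G xe0 = wsq G xe - 2 * (G xe \<bullet> dx) + wsq G dx" using wsq_diff[OF G] by simp
    moreover have "G xe \<bullet> dx = G dx \<bullet> xe" using sa_sym[OF G, of dx xe] by (simp add: inner_commute)
    ultimately show ?thesis by simp
  qed
  have IH: "2 * (H dy \<bullet> ye) = wsq H ye - wsq H ye0 + wsq H dy"
  proof -
    have "ye0 = ye - dy" by (simp add: ye_def ye0_def dy_def)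
    then have "wsq H ye0 = wsq H ye - 2 * (H ye \<bullet> dy) + wsq H dy" using wsq_diff[OF H] by simp
    moreover have "H ye \<bullet> dy = H dy \<bullet> ye" using sa_sym[OF H, of dy ye] by (simp add: inner_commute)
    ultimately show ?thesis by simp
  qed
  have IZ: "1 / (\<tau> * \<sigma>) * (norm (z1 - zb))\<^sup>2 = 1 / (\<tau> * \<sigma>) * (norm ze0)\<^sup>2 + 2 * (ze0 \<bullet> \<rho>) + \<tau> * \<sigma> * (norm \<rho>)\<^sup>2"
  proof -
    have "z1 - zb = ze0 + (\<tau> * \<sigma>) *\<^sub>R \<rho>" unfolding z1 ze0_def \<rho>_def by simp
    then have "(norm (z1 - zb))\<^sup>2 = (norm ze0)\<^sup>2 + 2 * (\<tau> * \<sigma>) * (ze0 \<bullet> \<rho>) + (\<tau> * \<sigma>)\<^sup>2 * (norm \<rho>)\<^sup>2"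
      by (simp add: norm_sq_add power_mult_distrib)
    then show ?thesis using sig tau by (simp add: field_simps power2_eq_square)
  qed
  have dxx: "x1 - x0 = dx" "y1 - y0 = dy" "x0 - xb = xe0" "x1 - xb = xe" "y0 - yb = ye0" "y1 - yb = ye"
    "z0 - zb = ze0" by (auto simp: dx_def dy_def xe0_def xe_def ye0_def ye_def ze0_def)
  have cross: "(ax + by1 - bd) \<bullet> ax + (ax + by1) \<bullet> by1
     = (norm \<rho>)\<^sup>2 - bd \<bullet> \<rho> + (norm by1)\<^sup>2 / 2 - (norm (by1 - bd))\<^sup>2 / 2 + (norm bd)\<^sup>2 / 2"
    unfolding r1 power2_norm_eq_inner
    by (simp add: inner_add_left inner_add_right inner_diff_left inner_diff_right inner_commute field_simps)
  have zz: "ze0 \<bullet> ax + ze0 \<bullet> by1 = ze0 \<bullet> \<rho>" unfolding r1 by (simp add: inner_add_right)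
  have E: "\<sigma> * ((ax + by1 - bd) \<bullet> ax) + \<sigma> * ((ax + by1) \<bullet> by1)
     = \<sigma> * (norm \<rho>)\<^sup>2 - \<sigma> * (bd \<bullet> \<rho>) + \<sigma> * (norm by1)\<^sup>2 / 2 - \<sigma> * (norm (by1 - bd))\<^sup>2 / 2 + \<sigma> * (norm bd)\<^sup>2 / 2"
  proof -
    have "\<sigma> * ((ax + by1 - bd) \<bullet> ax) + \<sigma> * ((ax + by1) \<bullet> by1) = \<sigma> * ((ax + by1 - bd) \<bullet> ax + (ax + by1) \<bullet> by1)"
      by (simp only: distrib_left)
    also have "\<dots> = \<sigma> * ((norm \<rho>)\<^sup>2 - bd \<bullet> \<rho> + (norm by1)\<^sup>2 / 2 - (norm (by1 - bd))\<^sup>2 / 2 + (norm bd)\<^sup>2 / 2)"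
      by (simp only: cross)
    also have "\<dots> = \<sigma> * (norm \<rho>)\<^sup>2 - \<sigma> * (bd \<bullet> \<rho>) + \<sigma> * (norm by1)\<^sup>2 / 2 - \<sigma> * (norm (by1 - bd))\<^sup>2 / 2 + \<sigma> * (norm bd)\<^sup>2 / 2"
      by (simp only: distrib_left right_diff_distrib times_divide_eq_right)
    finally show ?thesis .
  qed
  have e1: "(2 - \<tau>) * \<sigma> * (norm \<rho>)\<^sup>2 = 2 * (\<sigma> * (norm \<rho>)\<^sup>2) - \<tau> * (\<sigma> * (norm \<rho>)\<^sup>2)"
    and e2: "2 * \<sigma> * (bd \<bullet> \<rho>) = 2 * (\<sigma> * (bd \<bullet> \<rho>))"
    and e3: "\<tau> * \<sigma> * (norm \<rho>)\<^sup>2 = \<tau> * (\<sigma> * (norm \<rho>)\<^sup>2)" by (simp_all add: algebra_simps)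
  show ?thesis
    unfolding dxx r3 r4 IZ bd_def[symmetric] \<rho>_def[symmetric] e1 e2 e3
    using Mx My Fx Fy IG IH zz E by linarith
qed

lemma step_y2:
  fixes A :: "'c::euclidean_space \<Rightarrow> 'a::euclidean_space" and B :: "'c \<Rightarrow> 'b::euclidean_space"
    and Dg :: "'b \<Rightarrow> 'b"
  assumes A: "linear A" and B: "linear B"
    and pq: "proper_efun q"
    and Shg: "self_adjoint_op Shg" and T: "self_adjoint_op T" and Sg: "psd_op Sg"
    and hT: "psd_op (\<lambda>v. (1/2) *\<^sub>R Shg v + T v)"
    and glo: "\<And>u u'. g u' + (u - u') \<bullet> Dg u' + wsq Sg (u - u') / 2 \<le> g u"
    and gup: "\<And>u u'. g u \<le> g u' + (u - u') \<bullet> Dg u' + wsq Shg (u - u') / 2"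
    and uy: "- (Dg y0 + (Shg (y1 - y0) + T (y1 - y0)) + B z0 + \<sigma> *\<^sub>R B (adjoint A x1 + adjoint B y1 - c)) \<in> subdiff q y1"
    and uy0: "- (Dg ym + (Shg (y0 - ym) + T (y0 - ym)) + B zm + \<sigma> *\<^sub>R B (adjoint A x0 + adjoint B y0 - c)) \<in> subdiff q y0"
    and z0: "z0 = zm + (\<tau> * \<sigma>) *\<^sub>R (adjoint A x0 + adjoint B y0 - c)"
  shows "2 * \<sigma> * (((adjoint A x1 + adjoint B y1 - c) + (\<tau> - 1) *\<^sub>R (adjoint A x0 + adjoint B y0 - c)) \<bullet> adjoint B (y1 - y0))
         \<le> wsq (\<lambda>v. Shg v + T v) (y0 - ym) - wsq (\<lambda>v. Shg v + T v) (y1 - y0)"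
proof -
  define H where "H = (\<lambda>v. Shg v + T v)"
  have Hs: "self_adjoint_op H" unfolding H_def by (rule sa_plus[OF Shg T])
  define dy where "dy = y1 - y0"
  define dy' where "dy' = y0 - ym"
  define \<rho> where "\<rho> = adjoint A x1 + adjoint B y1 - c"
  define \<rho>0 where "\<rho>0 = adjoint A x0 + adjoint B y0 - c"
  have "0 \<le> (- (Dg y0 + H dy + B z0 + \<sigma> *\<^sub>R B \<rho>) - - (Dg ym + H dy' + B zm + \<sigma> *\<^sub>R B \<rho>0)) \<bullet> dy"
    using subdiff_mono[OF pq uy uy0] unfolding H_def dy_def dy'_def \<rho>_def \<rho>0_def .
  moreover have "B z0 - B zm = B ((\<tau> * \<sigma>) *\<^sub>R \<rho>0)"
    unfolding z0 \<rho>0_def by (simp add: linear_add[OF B])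
  ultimately have "0 \<le> - ((Dg y0 - Dg ym) \<bullet> dy + H dy \<bullet> dy - H dy' \<bullet> dy
       + B ((\<tau> * \<sigma>) *\<^sub>R \<rho>0 + \<sigma> *\<^sub>R \<rho> - \<sigma> *\<^sub>R \<rho>0) \<bullet> dy)"
    by (simp add: inner_diff_left inner_add_left linear_add[OF B] linear_diff[OF B] linear_scale[OF B] algebra_simps)
  moreover have "B ((\<tau> * \<sigma>) *\<^sub>R \<rho>0 + \<sigma> *\<^sub>R \<rho> - \<sigma> *\<^sub>R \<rho>0) \<bullet> dy
      = \<sigma> * ((\<rho> + (\<tau> - 1) *\<^sub>R \<rho>0) \<bullet> adjoint B dy)"
    using adjoint_clauses(1)[OF B, of "(\<tau> * \<sigma>) *\<^sub>R \<rho>0 + \<sigma> *\<^sub>R \<rho> - \<sigma> *\<^sub>R \<rho>0" dy]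
    by (simp add: inner_commute inner_add_left inner_diff_left algebra_simps)
  ultimately have M: "(Dg y0 - Dg ym) \<bullet> dy + H dy \<bullet> dy - H dy' \<bullet> dy + \<sigma> * ((\<rho> + (\<tau> - 1) *\<^sub>R \<rho>0) \<bullet> adjoint B dy) \<le> 0"
    by linarith
  have C: "0 \<le> (Dg y0 - Dg ym) \<bullet> (2 *\<^sub>R ((1/2) *\<^sub>R (dy - dy')) + (y0 - ym)) + wsq Shg ((1/2) *\<^sub>R (dy - dy'))"
    by (rule grad_cocoer[OF glo gup sa_linear[OF Shg] Sg])
  have C2: "- wsq Shg (dy - dy') / 4 \<le> (Dg y0 - Dg ym) \<bullet> dy"
    using C unfolding wsq_scale[OF sa_linear[OF Shg]] dy'_def by (simp add: power2_eq_square)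
  have W: "wsq H (dy - dy') = wsq H dy - 2 * (H dy \<bullet> dy') + wsq H dy'" by (rule wsq_diff[OF Hs])
  have W2: "H dy' \<bullet> dy = H dy \<bullet> dy'" using sa_sym[OF Hs, of dy' dy] by (simp add: inner_commute)
  have W3: "H dy \<bullet> dy = wsq H dy" by (simp add: wsq_def inner_commute)
  have P: "0 \<le> wsq Shg (dy - dy') / 2 + wsq T (dy - dy')"
    using psd_wsq[OF hT, of "dy - dy'"] unfolding wsq_plus_op wsq_scale_op by simp
  have W4: "wsq H (dy - dy') = wsq Shg (dy - dy') + wsq T (dy - dy')" unfolding H_def by (rule wsq_plus_op)
  have "2 * \<sigma> * ((\<rho> + (\<tau> - 1) *\<^sub>R \<rho>0) \<bullet> adjoint B dy) \<le> wsq H dy' - wsq H dy"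
    using M C2 W W2 W3 P W4 by linarith
  then show ?thesis unfolding H_def dy_def dy'_def \<rho>_def \<rho>0_def .
qed

lemma vec_ineq_a:
  fixes a b :: "'c::real_inner"
  assumes "0 < \<eta>" "\<eta> < 1/2"
  shows "\<eta> * (norm a)\<^sup>2 \<le> (norm (a + b))\<^sup>2 + \<eta> * (1 - \<eta>) / (1 - 2 * \<eta>) * (norm b)\<^sup>2"
proof -
  define \<beta> where "\<beta> = \<eta> * (1 - \<eta>) / (1 - 2 * \<eta>)"
  have n1: "(norm ((1 - \<eta>) *\<^sub>R a + b))\<^sup>2 = (1 - \<eta>)\<^sup>2 * (norm a)\<^sup>2 + 2 * (1 - \<eta>) * (a \<bullet> b) + (norm b)\<^sup>2"
    unfolding norm_sq_add by (simp add: power_mult_distrib)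
  have n2: "(norm (a + b))\<^sup>2 = (norm a)\<^sup>2 + 2 * (a \<bullet> b) + (norm b)\<^sup>2" by (rule norm_sq_add)
  have bb: "(1 - \<eta>) * (1 + \<beta>) - 1 = \<eta>^3 / (1 - 2 * \<eta>)"
    using assms unfolding \<beta>_def by (simp add: field_simps power3_eq_cube)
  have bb0: "0 \<le> \<eta>^3 / (1 - 2 * \<eta>)" using assms by simp
  have key: "(1 - \<eta>) * ((norm (a + b))\<^sup>2 + \<beta> * (norm b)\<^sup>2 - \<eta> * (norm a)\<^sup>2)
      = (norm ((1 - \<eta>) *\<^sub>R a + b))\<^sup>2 + ((1 - \<eta>) * (1 + \<beta>) - 1) * (norm b)\<^sup>2"
    unfolding n1 n2 by (simp add: algebra_simps power2_eq_square)
  have "0 \<le> (1 - \<eta>) * ((norm (a + b))\<^sup>2 + \<beta> * (norm b)\<^sup>2 - \<eta> * (norm a)\<^sup>2)"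
    unfolding key bb using bb0 by (intro add_nonneg_nonneg mult_nonneg_nonneg) auto
  then have "0 \<le> (norm (a + b))\<^sup>2 + \<beta> * (norm b)\<^sup>2 - \<eta> * (norm a)\<^sup>2"
    using assms by (simp add: zero_le_mult_iff)
  then show ?thesis unfolding \<beta>_def by simp
qed

lemma vec_ineq_b:
  fixes p q b :: "'c::real_inner"
  assumes tau: "0 < \<tau>" and al: "0 < \<alpha>" "\<alpha> \<le> 1"
  shows "0 \<le> (norm b)\<^sup>2 + (2 - \<tau>) * (norm p)\<^sup>2 - 2 * (b \<bullet> p)
      + (1 - \<alpha> * min \<tau> (1 / \<tau>)) * (norm q)\<^sup>2 - (1 - \<alpha> * min \<tau> (1 / \<tau>)) * (norm p)\<^sup>2
      + 2 * \<alpha> * ((p + (\<tau> - 1) *\<^sub>R q) \<bullet> b)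
      - (1 - \<alpha>) / 2 * (norm (p - q - b))\<^sup>2
      - min \<tau> (1 + \<tau> - \<tau>\<^sup>2) * \<alpha> * (norm b)\<^sup>2
      - (- \<tau> + \<alpha> * min (1 + \<tau>) (1 + 1 / \<tau>)) * (norm p)\<^sup>2"
    (is "0 \<le> ?E")
proof (cases "\<tau> \<le> 1")
  case True
  have m: "min \<tau> (1 / \<tau>) = \<tau>" "min \<tau> (1 + \<tau> - \<tau>\<^sup>2) = \<tau>" "min (1 + \<tau>) (1 + 1 / \<tau>) = 1 + \<tau>"
    using True tau by (auto simp: min_def field_simps power2_eq_square mult_le_one)
  have "?E = (1 - \<alpha>) / 2 * (norm (p + q - b))\<^sup>2 + \<alpha> * (1 - \<tau>) * (norm (q - b))\<^sup>2"
    unfolding m power2_norm_eq_inner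
    by (simp add: inner_add_left inner_add_right inner_diff_left inner_diff_right inner_commute field_simps)
  moreover have "0 \<le> (1 - \<alpha>) / 2 * (norm (p + q - b))\<^sup>2 + \<alpha> * (1 - \<tau>) * (norm (q - b))\<^sup>2"
    using True al by (intro add_nonneg_nonneg mult_nonneg_nonneg) auto
  ultimately show ?thesis by simp
next
  case False
  have m: "min \<tau> (1 / \<tau>) = 1 / \<tau>" "min \<tau> (1 + \<tau> - \<tau>\<^sup>2) = 1 + \<tau> - \<tau>\<^sup>2" "min (1 + \<tau>) (1 + 1 / \<tau>) = 1 + 1 / \<tau>"
    using False tau less_1_mult[of \<tau> \<tau>] by (auto simp: min_def field_simps power2_eq_square)
  have "?E = (1 - \<alpha>) / 2 * (norm (p + q - b))\<^sup>2 + \<alpha> * (\<tau> - 1) / \<tau> * (norm (q + \<tau> *\<^sub>R b))\<^sup>2"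
    unfolding m power2_norm_eq_inner using tau
    by (simp add: inner_add_left inner_add_right inner_diff_left inner_diff_right inner_commute field_simps power2_eq_square)
  moreover have "0 \<le> (1 - \<alpha>) / 2 * (norm (p + q - b))\<^sup>2 + \<alpha> * (\<tau> - 1) / \<tau> * (norm (q + \<tau> *\<^sub>R b))\<^sup>2"
    using False al tau by (intro add_nonneg_nonneg mult_nonneg_nonneg divide_nonneg_pos) auto
  ultimately show ?thesis by simp
qed

lemma wsq_op_AA:
  fixes A :: "'c::euclidean_space \<Rightarrow> 'a::euclidean_space"
  assumes "linear A"
  shows "wsq (\<lambda>u. G u + c *\<^sub>R A (adjoint A u)) x = wsq G x + c * (norm (adjoint A x))\<^sup>2"
  unfolding wsq_def using adjoint_clauses(2)[OF assms, of x "adjoint A x"]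
  by (simp add: inner_add_right power2_norm_eq_inner)

lemma ineq_a:
  fixes A :: "'c::euclidean_space \<Rightarrow> 'a::euclidean_space" and B :: "'c \<Rightarrow> 'b::euclidean_space"
    and Df :: "'a \<Rightarrow> 'a" and Dg :: "'b \<Rightarrow> 'b"
  assumes A: "linear A" and B: "linear B"
    and pp: "proper_efun p" and pq: "proper_efun q"
    and G: "self_adjoint_op (\<lambda>u. Shf u + S u)" and H: "self_adjoint_op (\<lambda>v. Shg v + T v)"
    and Sf: "self_adjoint_op Sf" "psd_op Sf" and Sg: "self_adjoint_op Sg" "psd_op Sg"
    and flo: "\<And>u u'. f u' + (u - u') \<bullet> Df u' + wsq Sf (u - u') / 2 \<le> f u"
    and fup: "\<And>u u'. f u \<le> f u' + (u - u') \<bullet> Df u' + wsq Shf (u - u') / 2"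
    and glo: "\<And>u u'. g u' + (u - u') \<bullet> Dg u' + wsq Sg (u - u') / 2 \<le> g u"
    and gup: "\<And>u u'. g u \<le> g u' + (u - u') \<bullet> Dg u' + wsq Shg (u - u') / 2"
    and sig: "\<sigma> > 0" and tau: "\<tau> > 0"
    and ux: "- (Df x0 + (Shf (x1 - x0) + S (x1 - x0)) + A z0 + \<sigma> *\<^sub>R A (adjoint A x1 + adjoint B y0 - c)) \<in> subdiff p x1"
    and uy: "- (Dg y0 + (Shg (y1 - y0) + T (y1 - y0)) + B z0 + \<sigma> *\<^sub>R B (adjoint A x1 + adjoint B y1 - c)) \<in> subdiff q y1"
    and z1: "z1 = z0 + (\<tau> * \<sigma>) *\<^sub>R (adjoint A x1 + adjoint B y1 - c)"
    and vb: "vb \<in> subdiff p xb" "vb + Df xb + A zb = 0"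
    and wb: "wb \<in> subdiff q yb" "wb + Dg yb + B zb = 0"
    and feas: "adjoint A xb + adjoint B yb = c"
    and eta: "0 < \<eta>" "\<eta> < 1/2"
  shows "(let \<beta> = \<eta> * (1 - \<eta>) / (1 - 2 * \<eta>) in
          ((1 / (\<tau> * \<sigma>) * (norm (z0 - zb))\<^sup>2 + wsq (\<lambda>u. Shf u + S u) (x0 - xb) + wsq (\<lambda>v. Shg v + T v) (y0 - yb)
            + \<sigma> * (norm (adjoint A xb + adjoint B y0 - c))\<^sup>2) + \<beta> * \<sigma> * (norm (adjoint A x0 + adjoint B y0 - c))\<^sup>2)
        - ((1 / (\<tau> * \<sigma>) * (norm (z1 - zb))\<^sup>2 + wsq (\<lambda>u. Shf u + S u) (x1 - xb) + wsq (\<lambda>v. Shg v + T v) (y1 - yb)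
            + \<sigma> * (norm (adjoint A xb + adjoint B y1 - c))\<^sup>2) + \<beta> * \<sigma> * (norm (adjoint A x1 + adjoint B y1 - c))\<^sup>2)
          \<ge> (1 / (\<tau>\<^sup>2 * \<sigma>) * (norm (z1 - z0))\<^sup>2
              + wsq (\<lambda>u. Shf u + S u + (\<eta> * \<sigma>) *\<^sub>R A (adjoint A u)) (x1 - x0)
              + wsq (\<lambda>v. Shg v + T v + (\<eta> * \<sigma>) *\<^sub>R B (adjoint B v)) (y1 - y0))
            - ((\<tau> + \<beta>) / (\<tau>\<^sup>2 * \<sigma>) * (norm (z1 - z0))\<^sup>2
              + wsq (\<lambda>u. Shf u - (1/2) *\<^sub>R Sf u) (x1 - x0)
              + wsq (\<lambda>v. Shg v - (1/2) *\<^sub>R Sg v + (\<eta> * \<sigma>) *\<^sub>R B (adjoint B v)) (y1 - y0)))"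
proof -
  define \<beta> where "\<beta> = \<eta> * (1 - \<eta>) / (1 - 2 * \<eta>)"
  define \<Phi>0 where "\<Phi>0 = 1 / (\<tau> * \<sigma>) * (norm (z0 - zb))\<^sup>2 + wsq (\<lambda>u. Shf u + S u) (x0 - xb) + wsq (\<lambda>v. Shg v + T v) (y0 - yb)
            + \<sigma> * (norm (adjoint A xb + adjoint B y0 - c))\<^sup>2"
  define \<Phi>1 where "\<Phi>1 = 1 / (\<tau> * \<sigma>) * (norm (z1 - zb))\<^sup>2 + wsq (\<lambda>u. Shf u + S u) (x1 - xb) + wsq (\<lambda>v. Shg v + T v) (y1 - yb)
            + \<sigma> * (norm (adjoint A xb + adjoint B y1 - c))\<^sup>2"
  define \<rho> where "\<rho> = adjoint A x1 + adjoint B y1 - c"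
  define \<rho>0 where "\<rho>0 = adjoint A x0 + adjoint B y0 - c"
  define bd where "bd = adjoint B (y1 - y0)"
  define ad where "ad = adjoint A (x1 - x0)"
  have core: "\<Phi>0 - \<Phi>1 \<ge> wsq (\<lambda>u. Shf u + S u) (x1 - x0) - wsq Shf (x1 - x0) + wsq Sf (x1 - x0) / 2
          + wsq (\<lambda>v. Shg v + T v) (y1 - y0) - wsq Shg (y1 - y0) + wsq Sg (y1 - y0) / 2
          + \<sigma> * (norm bd)\<^sup>2 + (2 - \<tau>) * \<sigma> * (norm \<rho>)\<^sup>2 - 2 * \<sigma> * (bd \<bullet> \<rho>)"
    unfolding \<Phi>0_def \<Phi>1_def bd_def \<rho>_def
    by (rule step_core[OF A B pp pq G H Sf Sg flo fup glo gup sig tau ux uy z1 vb wb feas])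
  have rel: "\<rho> - bd = ad + \<rho>0"
    unfolding \<rho>_def bd_def ad_def \<rho>0_def
    by (simp add: linear_diff[OF adjoint_linear[OF A]] linear_diff[OF adjoint_linear[OF B]] algebra_simps)
  have vec: "\<eta> * (norm ad)\<^sup>2 \<le> (norm (\<rho> - bd))\<^sup>2 + \<beta> * (norm \<rho>0)\<^sup>2"
    unfolding rel \<beta>_def by (rule vec_ineq_a[OF eta])
  have nn: "(norm (\<rho> - bd))\<^sup>2 = (norm bd)\<^sup>2 - 2 * (bd \<bullet> \<rho>) + (norm \<rho>)\<^sup>2"
    by (simp add: norm_sq_diff inner_commute)
  have vec2: "0 \<le> \<sigma> * ((norm bd)\<^sup>2 - 2 * (bd \<bullet> \<rho>) + (norm \<rho>)\<^sup>2 + \<beta> * (norm \<rho>0)\<^sup>2 - \<eta> * (norm ad)\<^sup>2)"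
    using vec nn sig by simp
  have zz: "(norm (z1 - z0))\<^sup>2 = (\<tau> * \<sigma>)\<^sup>2 * (norm \<rho>)\<^sup>2" unfolding z1 \<rho>_def by (simp add: power_mult_distrib)
  have Z1: "1 / (\<tau>\<^sup>2 * \<sigma>) * (norm (z1 - z0))\<^sup>2 = \<sigma> * (norm \<rho>)\<^sup>2"
    and Z2: "(\<tau> + \<beta>) / (\<tau>\<^sup>2 * \<sigma>) * (norm (z1 - z0))\<^sup>2 = (\<tau> + \<beta>) * \<sigma> * (norm \<rho>)\<^sup>2"
    unfolding zz using sig tau by (simp_all add: field_simps power2_eq_square)
  have W1: "wsq (\<lambda>u. Shf u + S u + (\<eta> * \<sigma>) *\<^sub>R A (adjoint A u)) (x1 - x0) = wsq (\<lambda>u. Shf u + S u) (x1 - x0) + \<eta> * \<sigma> * (norm ad)\<^sup>2"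
    unfolding ad_def by (rule wsq_op_AA[OF A])
  have W2: "wsq (\<lambda>v. Shg v + T v + (\<eta> * \<sigma>) *\<^sub>R B (adjoint B v)) (y1 - y0) = wsq (\<lambda>v. Shg v + T v) (y1 - y0) + \<eta> * \<sigma> * (norm bd)\<^sup>2"
    unfolding bd_def by (rule wsq_op_AA[OF B])
  have W3: "wsq (\<lambda>u. Shf u - (1/2) *\<^sub>R Sf u) (x1 - x0) = wsq Shf (x1 - x0) - wsq Sf (x1 - x0) / 2"
    unfolding wsq_minus_op wsq_scale_op by simp
  have W4: "wsq (\<lambda>v. Shg v - (1/2) *\<^sub>R Sg v + (\<eta> * \<sigma>) *\<^sub>R B (adjoint B v)) (y1 - y0) = wsq Shg (y1 - y0) - wsq Sg (y1 - y0) / 2 + \<eta> * \<sigma> * (norm bd)\<^sup>2"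
    unfolding wsq_op_AA[OF B] wsq_minus_op wsq_scale_op bd_def by simp
  have "(\<Phi>0 + \<beta> * \<sigma> * (norm \<rho>0)\<^sup>2) - (\<Phi>1 + \<beta> * \<sigma> * (norm \<rho>)\<^sup>2)
     - ((\<sigma> * (norm \<rho>)\<^sup>2 + (wsq (\<lambda>u. Shf u + S u) (x1 - x0) + \<eta> * \<sigma> * (norm ad)\<^sup>2) + (wsq (\<lambda>v. Shg v + T v) (y1 - y0) + \<eta> * \<sigma> * (norm bd)\<^sup>2))
        - ((\<tau> + \<beta>) * \<sigma> * (norm \<rho>)\<^sup>2 + (wsq Shf (x1 - x0) - wsq Sf (x1 - x0) / 2) + (wsq Shg (y1 - y0) - wsq Sg (y1 - y0) / 2 + \<eta> * \<sigma> * (norm bd)\<^sup>2)))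
     = (\<Phi>0 - \<Phi>1 - (wsq (\<lambda>u. Shf u + S u) (x1 - x0) - wsq Shf (x1 - x0) + wsq Sf (x1 - x0) / 2
          + wsq (\<lambda>v. Shg v + T v) (y1 - y0) - wsq Shg (y1 - y0) + wsq Sg (y1 - y0) / 2
          + \<sigma> * (norm bd)\<^sup>2 + (2 - \<tau>) * \<sigma> * (norm \<rho>)\<^sup>2 - 2 * \<sigma> * (bd \<bullet> \<rho>)))
       + \<sigma> * ((norm bd)\<^sup>2 - 2 * (bd \<bullet> \<rho>) + (norm \<rho>)\<^sup>2 + \<beta> * (norm \<rho>0)\<^sup>2 - \<eta> * (norm ad)\<^sup>2)"
    by (simp add: algebra_simps)
  then have "(\<Phi>0 + \<beta> * \<sigma> * (norm \<rho>0)\<^sup>2) - (\<Phi>1 + \<beta> * \<sigma> * (norm \<rho>)\<^sup>2)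
     \<ge> (\<sigma> * (norm \<rho>)\<^sup>2 + (wsq (\<lambda>u. Shf u + S u) (x1 - x0) + \<eta> * \<sigma> * (norm ad)\<^sup>2) + (wsq (\<lambda>v. Shg v + T v) (y1 - y0) + \<eta> * \<sigma> * (norm bd)\<^sup>2))
        - ((\<tau> + \<beta>) * \<sigma> * (norm \<rho>)\<^sup>2 + (wsq Shf (x1 - x0) - wsq Sf (x1 - x0) / 2) + (wsq Shg (y1 - y0) - wsq Sg (y1 - y0) / 2 + \<eta> * \<sigma> * (norm bd)\<^sup>2))"
    using core vec2 by linarith
  then show ?thesis
    unfolding Let_def \<beta>_def[symmetric] \<Phi>0_def[symmetric] \<Phi>1_def[symmetric] \<rho>_def[symmetric] \<rho>0_def[symmetric]
      Z1 Z2 W1 W2 W3 W4 .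
qed

lemma ineq_b:
  fixes A :: "'c::euclidean_space \<Rightarrow> 'a::euclidean_space" and B :: "'c \<Rightarrow> 'b::euclidean_space"
    and Df :: "'a \<Rightarrow> 'a" and Dg :: "'b \<Rightarrow> 'b"
  assumes A: "linear A" and B: "linear B"
    and pp: "proper_efun p" and pq: "proper_efun q"
    and G: "self_adjoint_op (\<lambda>u. Shf u + S u)" and H: "self_adjoint_op (\<lambda>v. Shg v + T v)"
    and Sf: "self_adjoint_op Sf" "psd_op Sf" and Sg: "self_adjoint_op Sg" "psd_op Sg"
    and flo: "\<And>u u'. f u' + (u - u') \<bullet> Df u' + wsq Sf (u - u') / 2 \<le> f u"
    and fup: "\<And>u u'. f u \<le> f u' + (u - u') \<bullet> Df u' + wsq Shf (u - u') / 2"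
    and glo: "\<And>u u'. g u' + (u - u') \<bullet> Dg u' + wsq Sg (u - u') / 2 \<le> g u"
    and gup: "\<And>u u'. g u \<le> g u' + (u - u') \<bullet> Dg u' + wsq Shg (u - u') / 2"
    and sig: "\<sigma> > 0" and tau: "\<tau> > 0"
    and ux: "- (Df x0 + (Shf (x1 - x0) + S (x1 - x0)) + A z0 + \<sigma> *\<^sub>R A (adjoint A x1 + adjoint B y0 - c)) \<in> subdiff p x1"
    and uy: "- (Dg y0 + (Shg (y1 - y0) + T (y1 - y0)) + B z0 + \<sigma> *\<^sub>R B (adjoint A x1 + adjoint B y1 - c)) \<in> subdiff q y1"
    and z1: "z1 = z0 + (\<tau> * \<sigma>) *\<^sub>R (adjoint A x1 + adjoint B y1 - c)"
    and vb: "vb \<in> subdiff p xb" "vb + Df xb + A zb = 0"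
    and wb: "wb \<in> subdiff q yb" "wb + Dg yb + B zb = 0"
    and feas: "adjoint A xb + adjoint B yb = c"
    and uy0: "- (Dg ym + (Shg (y0 - ym) + T (y0 - ym)) + B zm + \<sigma> *\<^sub>R B (adjoint A x0 + adjoint B y0 - c)) \<in> subdiff q y0"
    and z0: "z0 = zm + (\<tau> * \<sigma>) *\<^sub>R (adjoint A x0 + adjoint B y0 - c)"
    and Shg: "self_adjoint_op Shg" and T: "self_adjoint_op T"
    and hT: "psd_op (\<lambda>v. (1/2) *\<^sub>R Shg v + T v)"
    and al: "0 < \<alpha>" "\<alpha> \<le> 1"
  shows "(let \<kappa> = 1 - \<alpha> * min \<tau> (1 / \<tau>) in
          ((1 / (\<tau> * \<sigma>) * (norm (z0 - zb))\<^sup>2 + wsq (\<lambda>u. Shf u + S u) (x0 - xb) + wsq (\<lambda>v. Shg v + T v) (y0 - yb)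
            + \<sigma> * (norm (adjoint A xb + adjoint B y0 - c))\<^sup>2) + \<kappa> * \<sigma> * (norm (adjoint A x0 + adjoint B y0 - c))\<^sup>2
            + \<alpha> * wsq (\<lambda>v. Shg v + T v) (y0 - ym))
        - ((1 / (\<tau> * \<sigma>) * (norm (z1 - zb))\<^sup>2 + wsq (\<lambda>u. Shf u + S u) (x1 - xb) + wsq (\<lambda>v. Shg v + T v) (y1 - yb)
            + \<sigma> * (norm (adjoint A xb + adjoint B y1 - c))\<^sup>2) + \<kappa> * \<sigma> * (norm (adjoint A x1 + adjoint B y1 - c))\<^sup>2
            + \<alpha> * wsq (\<lambda>v. Shg v + T v) (y1 - y0))
          \<ge> wsq (\<lambda>u. (1/2) *\<^sub>R Sf u + S u + ((1 - \<alpha>) * \<sigma> / 2) *\<^sub>R A (adjoint A u)) (x1 - x0)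
            + wsq (\<lambda>v. (1/2) *\<^sub>R Sg v + T v + (min \<tau> (1 + \<tau> - \<tau>\<^sup>2) * \<alpha> * \<sigma>) *\<^sub>R B (adjoint B v)) (y1 - y0)
            + (- \<tau> + \<alpha> * min (1 + \<tau>) (1 + 1 / \<tau>)) * \<sigma> * (norm (adjoint A x1 + adjoint B y1 - c))\<^sup>2)"
proof -
  define \<kappa> where "\<kappa> = 1 - \<alpha> * min \<tau> (1 / \<tau>)"
  define m where "m = min \<tau> (1 + \<tau> - \<tau>\<^sup>2)"
  define \<mu> where "\<mu> = min (1 + \<tau>) (1 + 1 / \<tau>)"
  define \<Phi>0 where "\<Phi>0 = 1 / (\<tau> * \<sigma>) * (norm (z0 - zb))\<^sup>2 + wsq (\<lambda>u. Shf u + S u) (x0 - xb) + wsq (\<lambda>v. Shg v + T v) (y0 - yb)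
            + \<sigma> * (norm (adjoint A xb + adjoint B y0 - c))\<^sup>2"
  define \<Phi>1 where "\<Phi>1 = 1 / (\<tau> * \<sigma>) * (norm (z1 - zb))\<^sup>2 + wsq (\<lambda>u. Shf u + S u) (x1 - xb) + wsq (\<lambda>v. Shg v + T v) (y1 - yb)
            + \<sigma> * (norm (adjoint A xb + adjoint B y1 - c))\<^sup>2"
  define \<xi>0 where "\<xi>0 = wsq (\<lambda>v. Shg v + T v) (y0 - ym)"
  define \<xi>1 where "\<xi>1 = wsq (\<lambda>v. Shg v + T v) (y1 - y0)"
  define \<rho> where "\<rho> = adjoint A x1 + adjoint B y1 - c"
  define \<rho>0 where "\<rho>0 = adjoint A x0 + adjoint B y0 - c"
  define bd where "bd = adjoint B (y1 - y0)"
  define ad where "ad = adjoint A (x1 - x0)"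
  have core: "\<Phi>0 - \<Phi>1 \<ge> wsq (\<lambda>u. Shf u + S u) (x1 - x0) - wsq Shf (x1 - x0) + wsq Sf (x1 - x0) / 2
          + wsq (\<lambda>v. Shg v + T v) (y1 - y0) - wsq Shg (y1 - y0) + wsq Sg (y1 - y0) / 2
          + \<sigma> * (norm bd)\<^sup>2 + (2 - \<tau>) * \<sigma> * (norm \<rho>)\<^sup>2 - 2 * \<sigma> * (bd \<bullet> \<rho>)"
    unfolding \<Phi>0_def \<Phi>1_def bd_def \<rho>_def
    by (rule step_core[OF A B pp pq G H Sf Sg flo fup glo gup sig tau ux uy z1 vb wb feas])
  have y2: "2 * \<sigma> * ((\<rho> + (\<tau> - 1) *\<^sub>R \<rho>0) \<bullet> bd) \<le> \<xi>0 - \<xi>1"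
    unfolding \<rho>_def \<rho>0_def bd_def \<xi>0_def \<xi>1_def
    by (rule step_y2[OF A B pq Shg T Sg(2) hT glo gup uy uy0 z0])
  have rel: "\<rho> - \<rho>0 - bd = ad"
    unfolding \<rho>_def bd_def ad_def \<rho>0_def
    by (simp add: linear_diff[OF adjoint_linear[OF A]] linear_diff[OF adjoint_linear[OF B]] algebra_simps)
  have vb0: "0 \<le> (norm bd)\<^sup>2 + (2 - \<tau>) * (norm \<rho>)\<^sup>2 - 2 * (bd \<bullet> \<rho>)
      + \<kappa> * (norm \<rho>0)\<^sup>2 - \<kappa> * (norm \<rho>)\<^sup>2
      + 2 * \<alpha> * ((\<rho> + (\<tau> - 1) *\<^sub>R \<rho>0) \<bullet> bd)
      - (1 - \<alpha>) / 2 * (norm ad)\<^sup>2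
      - m * \<alpha> * (norm bd)\<^sup>2
      - (- \<tau> + \<alpha> * \<mu>) * (norm \<rho>)\<^sup>2"
    using vec_ineq_b[OF tau al, of bd \<rho> \<rho>0] unfolding rel \<kappa>_def m_def \<mu>_def .
  have vb: "0 \<le> \<sigma> * ((norm bd)\<^sup>2 + (2 - \<tau>) * (norm \<rho>)\<^sup>2 - 2 * (bd \<bullet> \<rho>)
      + \<kappa> * (norm \<rho>0)\<^sup>2 - \<kappa> * (norm \<rho>)\<^sup>2
      + 2 * \<alpha> * ((\<rho> + (\<tau> - 1) *\<^sub>R \<rho>0) \<bullet> bd)
      - (1 - \<alpha>) / 2 * (norm ad)\<^sup>2
      - m * \<alpha> * (norm bd)\<^sup>2
      - (- \<tau> + \<alpha> * \<mu>) * (norm \<rho>)\<^sup>2)"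
    using vb0 sig by simp
  have ya: "0 \<le> \<alpha> * (\<xi>0 - \<xi>1 - 2 * \<sigma> * ((\<rho> + (\<tau> - 1) *\<^sub>R \<rho>0) \<bullet> bd))"
    using y2 al by simp
  have W1: "wsq (\<lambda>u. (1/2) *\<^sub>R Sf u + S u + ((1 - \<alpha>) * \<sigma> / 2) *\<^sub>R A (adjoint A u)) (x1 - x0)
      = wsq Sf (x1 - x0) / 2 + wsq S (x1 - x0) + (1 - \<alpha>) * \<sigma> / 2 * (norm ad)\<^sup>2"
    unfolding wsq_op_AA[OF A] wsq_plus_op wsq_scale_op ad_def by simp
  have W2: "wsq (\<lambda>v. (1/2) *\<^sub>R Sg v + T v + (min \<tau> (1 + \<tau> - \<tau>\<^sup>2) * \<alpha> * \<sigma>) *\<^sub>R B (adjoint B v)) (y1 - y0)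
      = wsq Sg (y1 - y0) / 2 + wsq T (y1 - y0) + m * \<alpha> * \<sigma> * (norm bd)\<^sup>2"
    unfolding wsq_op_AA[OF B] wsq_plus_op wsq_scale_op bd_def m_def by simp
  have W3: "wsq (\<lambda>u. Shf u + S u) (x1 - x0) = wsq Shf (x1 - x0) + wsq S (x1 - x0)"
    "wsq (\<lambda>v. Shg v + T v) (y1 - y0) = wsq Shg (y1 - y0) + wsq T (y1 - y0)"
    by (rule wsq_plus_op)+
  have "(\<Phi>0 + \<kappa> * \<sigma> * (norm \<rho>0)\<^sup>2 + \<alpha> * \<xi>0) - (\<Phi>1 + \<kappa> * \<sigma> * (norm \<rho>)\<^sup>2 + \<alpha> * \<xi>1)
     - ((wsq Sf (x1 - x0) / 2 + wsq S (x1 - x0) + (1 - \<alpha>) * \<sigma> / 2 * (norm ad)\<^sup>2)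
        + (wsq Sg (y1 - y0) / 2 + wsq T (y1 - y0) + m * \<alpha> * \<sigma> * (norm bd)\<^sup>2)
        + (- \<tau> + \<alpha> * \<mu>) * \<sigma> * (norm \<rho>)\<^sup>2)
     = (\<Phi>0 - \<Phi>1 - ((wsq Shf (x1 - x0) + wsq S (x1 - x0)) - wsq Shf (x1 - x0) + wsq Sf (x1 - x0) / 2
          + (wsq Shg (y1 - y0) + wsq T (y1 - y0)) - wsq Shg (y1 - y0) + wsq Sg (y1 - y0) / 2
          + \<sigma> * (norm bd)\<^sup>2 + (2 - \<tau>) * \<sigma> * (norm \<rho>)\<^sup>2 - 2 * \<sigma> * (bd \<bullet> \<rho>)))
       + \<alpha> * (\<xi>0 - \<xi>1 - 2 * \<sigma> * ((\<rho> + (\<tau> - 1) *\<^sub>R \<rho>0) \<bullet> bd))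
       + \<sigma> * ((norm bd)\<^sup>2 + (2 - \<tau>) * (norm \<rho>)\<^sup>2 - 2 * (bd \<bullet> \<rho>)
      + \<kappa> * (norm \<rho>0)\<^sup>2 - \<kappa> * (norm \<rho>)\<^sup>2
      + 2 * \<alpha> * ((\<rho> + (\<tau> - 1) *\<^sub>R \<rho>0) \<bullet> bd)
      - (1 - \<alpha>) / 2 * (norm ad)\<^sup>2
      - m * \<alpha> * (norm bd)\<^sup>2
      - (- \<tau> + \<alpha> * \<mu>) * (norm \<rho>)\<^sup>2)"
    by (simp add: algebra_simps)
  then have "(\<Phi>0 + \<kappa> * \<sigma> * (norm \<rho>0)\<^sup>2 + \<alpha> * \<xi>0) - (\<Phi>1 + \<kappa> * \<sigma> * (norm \<rho>)\<^sup>2 + \<alpha> * \<xi>1)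
     \<ge> (wsq Sf (x1 - x0) / 2 + wsq S (x1 - x0) + (1 - \<alpha>) * \<sigma> / 2 * (norm ad)\<^sup>2)
        + (wsq Sg (y1 - y0) / 2 + wsq T (y1 - y0) + m * \<alpha> * \<sigma> * (norm bd)\<^sup>2)
        + (- \<tau> + \<alpha> * \<mu>) * \<sigma> * (norm \<rho>)\<^sup>2"
    using core vb ya unfolding W3 by linarith
  then show ?thesis
    unfolding Let_def \<kappa>_def[symmetric] \<Phi>0_def[symmetric] \<Phi>1_def[symmetric] \<rho>_def[symmetric] \<rho>0_def[symmetric]
      \<xi>0_def[symmetric] \<xi>1_def[symmetric] W1 W2 \<mu>_def[symmetric] .
qed

lemma sub_lower:
  fixes p :: "'a::real_inner \<Rightarrow> ereal"
  assumes pp: "proper_efun p" and v: "v \<in> subdiff p xs"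
    and flo: "\<And>u u'. f u' + (u - u') \<bullet> Df u' + wsq Sf (u - u') / 2 \<le> f u"
    and Sf: "psd_op Sf"
  shows "p xs + ereal (f xs) + ereal ((v + Df xs) \<bullet> (x' - xs)) \<le> p x' + ereal (f x')"
proof -
  have ninf: "\<And>x. p x \<noteq> -\<infinity>" using pp by (auto simp: proper_efun_def)
  obtain P where P: "p xs = ereal P" using v ninf[of xs] by (cases "p xs") (auto simp: subdiff_def)
  show ?thesis
  proof (cases "p x' = \<infinity>")
    case True then show ?thesis by simp
  next
    case False
    then obtain P' where P': "p x' = ereal P'" using ninf[of x'] by (cases "p x'") auto
    have "p xs + ereal (v \<bullet> (x' - xs)) \<le> p x'" using v by (auto simp: subdiff_def)
    then have 1: "P + v \<bullet> (x' - xs) \<le> P'" using P P' by simp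
    have 2: "f xs + (x' - xs) \<bullet> Df xs \<le> f x'"
      using flo[where u=x' and u'=xs] psd_wsq[OF Sf, of "x' - xs"] by simp
    have 3: "(v + Df xs) \<bullet> (x' - xs) = v \<bullet> (x' - xs) + Df xs \<bullet> (x' - xs)" by (simp add: inner_add_left)
    have 4: "(x' - xs) \<bullet> Df xs = Df xs \<bullet> (x' - xs)" by (simp add: inner_commute)
    show ?thesis using 1 2 3 4 P P' by simp
  qed
qed

lemma kkt_primal_dual:
  fixes A :: "'c::euclidean_space \<Rightarrow> 'a::euclidean_space" and B :: "'c \<Rightarrow> 'b::euclidean_space"
  assumes A: "linear A" and B: "linear B"
    and pp: "proper_efun p" and pq: "proper_efun q"
    and flo: "\<And>u u'. f u' + (u - u') \<bullet> Df u' + wsq Sf (u - u') / 2 \<le> f u" and Sf: "psd_op Sf"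
    and glo: "\<And>u u'. g u' + (u - u') \<bullet> Dg u' + wsq Sg (u - u') / 2 \<le> g u" and Sg: "psd_op Sg"
    and kkt: "(xs, ys, zs) \<in> KKT_set p Df q Dg A B c"
  shows "primal_opt p f q g A B c xs ys" "dual_opt p f q g A B c zs"
proof -
  obtain v w where v: "v \<in> subdiff p xs" "v + Df xs + A zs = 0"
    and w: "w \<in> subdiff q ys" "w + Dg ys + B zs = 0" and feas: "adjoint A xs + adjoint B ys = c"
    using kkt unfolding KKT_set_def by auto
  have ninfp: "\<And>x. p x \<noteq> -\<infinity>" using pp by (auto simp: proper_efun_def)
  have ninfq: "\<And>x. q x \<noteq> -\<infinity>" using pq by (auto simp: proper_efun_def)
  obtain P where P: "p xs = ereal P" using v ninfp[of xs] by (cases "p xs") (auto simp: subdiff_def)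
  obtain Q where Q: "q ys = ereal Q" using w ninfq[of ys] by (cases "q ys") (auto simp: subdiff_def)
  have vv: "v + Df xs = - A zs" using v(2) by (simp add: algebra_simps eq_neg_iff_add_eq_0)
  have ww: "w + Dg ys = - B zs" using w(2) by (simp add: algebra_simps eq_neg_iff_add_eq_0)
  define Pv where "Pv = P + f xs + Q + g ys"
  have key: "ereal Pv
      \<le> p x' + ereal (f x') + q y' + ereal (g y') + ereal (zs \<bullet> (adjoint A x' + adjoint B y' - c))" for x' y'
  proof -
    have hx: "ereal (P + f xs - zs \<bullet> adjoint A (x' - xs)) \<le> p x' + ereal (f x')"
      using sub_lower[OF pp v(1) flo Sf, of x'] unfolding vv P
      by (simp add: adjoint_clauses[OF A] inner_minus_left)
    have hy: "ereal (Q + g ys - zs \<bullet> adjoint B (y' - ys)) \<le> q y' + ereal (g y')"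
      using sub_lower[OF pq w(1) glo Sg, of y'] unfolding ww Q
      by (simp add: adjoint_clauses[OF B] inner_minus_left)
    have eq: "Pv
       = (P + f xs - zs \<bullet> adjoint A (x' - xs)) + (Q + g ys - zs \<bullet> adjoint B (y' - ys))
         + zs \<bullet> (adjoint A x' + adjoint B y' - c)"
      unfolding Pv_def feas[symmetric]
      by (simp add: linear_diff[OF adjoint_linear[OF A]] linear_diff[OF adjoint_linear[OF B]]
          inner_diff_right inner_add_right algebra_simps)
    have "ereal Pv
        = ereal (P + f xs - zs \<bullet> adjoint A (x' - xs)) + ereal (Q + g ys - zs \<bullet> adjoint B (y' - ys))
          + ereal (zs \<bullet> (adjoint A x' + adjoint B y' - c))" unfolding eq by simp
    also have "\<dots> \<le> (p x' + ereal (f x')) + (q y' + ereal (g y')) + ereal (zs \<bullet> (adjoint A x' + adjoint B y' - c))"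
      by (intro add_mono hx hy order_refl)
    also have "\<dots> = p x' + ereal (f x') + q y' + ereal (g y') + ereal (zs \<bullet> (adjoint A x' + adjoint B y' - c))"
      by (simp add: add.assoc)
    finally show ?thesis .
  qed
  have valP: "p xs + ereal (f xs) + q ys + ereal (g ys) = ereal Pv" unfolding P Q Pv_def by simp
  show "primal_opt p f q g A B c xs ys"
    unfolding primal_opt_def
  proof (intro conjI allI impI)
    show "adjoint A xs + adjoint B ys = c" by (rule feas)
    fix x' y' assume f': "adjoint A x' + adjoint B y' = c"
    show "p xs + ereal (f xs) + q ys + ereal (g ys) \<le> p x' + ereal (f x') + q y' + ereal (g y')"
      using key[of x' y'] unfolding valP f' by simp
  qed
  have dz: "dual_fun p f q g A B c zs \<ge> ereal Pv"
    unfolding dual_fun_def by (intro INF_greatest) (use key in simp)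
  have dz': "dual_fun p f q g A B c z' \<le> ereal Pv" for z'
  proof -
    have "dual_fun p f q g A B c z' \<le> p xs + ereal (f xs) + q ys + ereal (g ys) + ereal (z' \<bullet> (adjoint A xs + adjoint B ys - c))"
      unfolding dual_fun_def
      by (rule INF_lower2[OF UNIV_I[of xs]], rule INF_lower2[OF UNIV_I[of ys]], simp)
    then show ?thesis unfolding valP feas by simp
  qed
  show "dual_opt p f q g A B c zs" unfolding dual_opt_def using dz dz' order_trans by blast
qed

lemma subdiff_closed:
  fixes p :: "'a::euclidean_space \<Rightarrow> ereal"
  assumes cl: "closed_efun p" and pp: "proper_efun p"
    and v: "\<And>j. v j \<in> subdiff p (xj j)" and xl: "xj \<longlonglongrightarrow> x" and vl: "v \<longlonglongrightarrow> w"
  shows "w \<in> subdiff p x"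
proof -
  have ninf: "\<And>x. p x \<noteq> -\<infinity>" using pp by (auto simp: proper_efun_def)
  have main: "p x \<le> ereal (P' - w \<bullet> (x' - x))" if P': "p x' = ereal P'" for x' P'
  proof -
    have cls: "closed {(x, t::real). p x \<le> ereal t}" using cl unfolding closed_efun_def .
    have tl: "(\<lambda>j. (xj j, P' - v j \<bullet> (x' - xj j))) \<longlonglongrightarrow> (x, P' - w \<bullet> (x' - x))"
      by (intro tendsto_Pair xl tendsto_diff tendsto_const tendsto_inner vl)
    have mem: "(xj j, P' - v j \<bullet> (x' - xj j)) \<in> {(x, t::real). p x \<le> ereal t}" for j
    proof -
      have h1: "p (xj j) + ereal (v j \<bullet> (x' - xj j)) \<le> p x'" and h2: "p (xj j) < \<infinity>"
        using v[of j] unfolding subdiff_def by blast+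
      obtain Pj where Pj: "p (xj j) = ereal Pj" using h2 ninf[of "xj j"] by (cases "p (xj j)") auto
      have "Pj + v j \<bullet> (x' - xj j) \<le> P'" using h1 unfolding Pj P' by simp
      then show ?thesis using Pj by simp
    qed
    have "(x, P' - w \<bullet> (x' - x)) \<in> {(x, t::real). p x \<le> ereal t}"
      using closed_sequentially[OF cls mem tl] .
    then show ?thesis by simp
  qed
  obtain x0 where x0: "p x0 \<noteq> \<infinity>" using pp by (auto simp: proper_efun_def)
  then obtain P0 where P0: "p x0 = ereal P0" using ninf[of x0] by (cases "p x0") auto
  have "p x \<le> ereal (P0 - w \<bullet> (x0 - x))" by (rule main[OF P0])
  then have fin: "p x \<noteq> \<infinity>" by auto
  then obtain P where P: "p x = ereal P" using ninf[of x] by (cases "p x") auto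
  have "p x + ereal (w \<bullet> (x' - x)) \<le> p x'" for x'
  proof (cases "p x' = \<infinity>")
    case True then show ?thesis by simp
  next
    case False
    then obtain P' where P': "p x' = ereal P'" using ninf[of x'] by (cases "p x'") auto
    have "P \<le> P' - w \<bullet> (x' - x)" using main[OF P'] P by simp
    then show ?thesis using P P' by simp
  qed
  then show ?thesis unfolding subdiff_def using P by auto
qed
lemma pd_coercive:
  fixes G :: "'a::euclidean_space \<Rightarrow> 'a"
  assumes lin: "linear G" and pd: "pd_op G"
  shows "\<exists>l>0. \<forall>u. l * (norm u)\<^sup>2 \<le> wsq G u"
proof -
  have cont: "continuous_on (sphere 0 1) (\<lambda>u. u \<bullet> G u)"
    using lin by (intro continuous_intros linear_continuous_on) (auto simp: linear_conv_bounded_linear)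
  obtain b :: 'a where b: "b \<in> Basis" using nonempty_Basis by blast
  have ne: "sphere (0::'a) 1 \<noteq> {}"
  proof -
    have "b \<in> sphere 0 1" using norm_Basis[OF b] by (simp add: sphere_def)
    then show ?thesis by blast
  qed
  obtain u0 where u0: "u0 \<in> sphere 0 1" and m: "\<And>u. u \<in> sphere 0 1 \<Longrightarrow> u0 \<bullet> G u0 \<le> u \<bullet> G u"
    using continuous_attains_inf[OF compact_sphere ne cont] by blast
  define l where "l = u0 \<bullet> G u0"
  have "u0 \<noteq> 0" using u0 by auto
  then have l0: "l > 0" unfolding l_def using pd by (simp add: pd_op_def)
  have "l * (norm u)\<^sup>2 \<le> wsq G u" for u
  proof (cases "u = 0")
    case True then show ?thesis using lin by (simp add: wsq_def linear_0)
  next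
    case False
    define e where "e = (1 / norm u) *\<^sub>R u"
    have e: "e \<in> sphere 0 1" using False by (simp add: e_def sphere_def)
    have ue: "u = norm u *\<^sub>R e" using False by (simp add: e_def)
    have "wsq G u = (norm u)\<^sup>2 * wsq G e" by (subst ue) (rule wsq_scale[OF lin])
    moreover have "l \<le> wsq G e" using m[OF e] by (simp add: l_def wsq_def)
    ultimately show ?thesis using mult_right_mono[of l "wsq G e" "(norm u)\<^sup>2"] by (simp add: mult.commute)
  qed
  then show ?thesis using l0 by blast
qed

lemma wsq_bound:
  fixes G :: "'a::euclidean_space \<Rightarrow> 'a"
  assumes lin: "linear G"
  shows "\<exists>K\<ge>0. \<forall>u. \<bar>wsq G u\<bar> \<le> K * (norm u)\<^sup>2"
proof -
  obtain K where K: "\<And>x. norm (G x) \<le> K * norm x" using linear_bounded[OF lin] by blast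
  have "\<bar>wsq G u\<bar> \<le> max K 0 * (norm u)\<^sup>2" for u
  proof -
    have "\<bar>wsq G u\<bar> \<le> norm u * norm (G u)" unfolding wsq_def by (rule Cauchy_Schwarz_ineq2)
    also have "\<dots> \<le> norm u * (max K 0 * norm u)"
      using order_trans[OF K[of u] mult_right_mono[OF max.cobounded1 norm_ge_zero]]
      by (rule mult_left_mono) simp
    finally show ?thesis by (simp add: power2_eq_square mult_ac)
  qed
  then show ?thesis by (intro exI[of _ "max K 0"]) auto
qed

lemma quasi_fejer:
  fixes V D E :: "nat \<Rightarrow> real"
  assumes V0: "\<And>k. 0 \<le> V k" and D0: "\<And>k. 0 \<le> D k" and E0: "\<And>k. 0 \<le> E k"
    and Es: "summable E"
    and step: "\<And>k. k \<ge> N \<Longrightarrow> V (Suc k) + D k \<le> V k + E k"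
  shows "convergent V" "summable (\<lambda>k. D (k + N))"
proof -
  define T where "T k = suminf E - (\<Sum>i<k. E i)" for k
  have T0: "0 \<le> T k" for k
    unfolding T_def suminf_minus_initial_segment[OF Es, symmetric]
    using E0 Es by (intro suminf_nonneg) auto
  have TS: "T (Suc k) = T k - E k" for k unfolding T_def by simp
  have Tl: "T \<longlonglongrightarrow> 0"
    unfolding T_def using tendsto_diff[OF tendsto_const summable_LIMSEQ[OF Es], of "suminf E"] by simp
  define W where "W k = V (k + N) + T (k + N)" for k
  have dec: "W (Suc k) + D (k + N) \<le> W k" for k
    using step[of "k + N"] TS[of "k + N"] unfolding W_def by simp
  have Wm: "W (Suc k) \<le> W k" for k using dec[of k] D0[of "k + N"] by linarith
  have W0: "0 \<le> W k" for k unfolding W_def using V0 T0 by (intro add_nonneg_nonneg)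
  have dW: "decseq W" using Wm by (simp add: decseq_Suc_iff)
  obtain L where L: "W \<longlonglongrightarrow> L" using decseq_convergent[OF dW, of 0] W0 by blast
  have "(\<lambda>k. W k - T (k + N)) \<longlonglongrightarrow> L - 0"
    by (intro tendsto_diff L LIMSEQ_ignore_initial_segment Tl)
  then have "(\<lambda>k. V (k + N)) \<longlonglongrightarrow> L" unfolding W_def by simp
  then show "convergent V" using convergent_ignore_initial_segment[of V N] by (auto simp: convergent_def)
  have ps: "(\<Sum>i<n. D (i + N)) + W n \<le> W 0" for n
  proof (induction n)
    case 0 then show ?case by simp
  next
    case (Suc n) then show ?case using dec[of n] by simp
  qed
  show "summable (\<lambda>k. D (k + N))"
  proof (rule summableI_nonneg_bounded[where x="W 0"])
    show "0 \<le> D (n + N)" for n by (rule D0)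
    show "(\<Sum>i<n. D (i + N)) \<le> W 0" for n using ps[of n] W0[of n] by linarith
  qed
qed

lemma sq_tendsto_zero:
  fixes f :: "nat \<Rightarrow> 'a::real_normed_vector"
  assumes "(\<lambda>k. (norm (f k - l))\<^sup>2) \<longlonglongrightarrow> 0"
  shows "f \<longlonglongrightarrow> l"
proof -
  have "(\<lambda>k. sqrt ((norm (f k - l))\<^sup>2)) \<longlonglongrightarrow> sqrt 0" by (intro tendsto_intros assms)
  then have "(\<lambda>k. norm (f k - l)) \<longlonglongrightarrow> 0" by simp
  then show ?thesis by (simp add: LIM_zero_iff tendsto_norm_zero_iff)
qed

lemma sandwich0:
  fixes g h :: "nat \<Rightarrow> real"
  assumes "\<And>k. 0 \<le> g k" "\<And>k. g k \<le> h k" "h \<longlonglongrightarrow> 0"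
  shows "g \<longlonglongrightarrow> 0"
  by (rule tendsto_sandwich[of "\<lambda>_. 0" g sequentially h]) (use assms in auto)

lemma conv_frame:
  fixes x :: "nat \<Rightarrow> 'a::euclidean_space" and y :: "nat \<Rightarrow> 'b::euclidean_space"
    and z :: "nat \<Rightarrow> 'c::euclidean_space" and V :: "'a \<times> 'b \<times> 'c \<Rightarrow> nat \<Rightarrow> real"
  assumes w0: "(x0, y0, z0) \<in> KK"
    and V0: "\<And>w k. w \<in> KK \<Longrightarrow> 0 \<le> V w k"
    and fej: "\<And>w. w \<in> KK \<Longrightarrow> convergent (V w)"
    and coer: "\<And>xw yw zw. (xw, yw, zw) \<in> KK \<Longrightarrow> \<exists>C\<ge>0. \<forall>k.
        (norm (x k - xw))\<^sup>2 + (norm (y k - yw))\<^sup>2 + (norm (z k - zw))\<^sup>2 \<le> C * (V (xw, yw, zw) k + \<epsilon> k)"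
    and eps: "\<epsilon> \<longlonglongrightarrow> 0"
    and cont: "\<And>xw yw zw. (xw, yw, zw) \<in> KK \<Longrightarrow> \<exists>C. \<forall>k.
        V (xw, yw, zw) k \<le> C * ((norm (x k - xw))\<^sup>2 + (norm (y k - yw))\<^sup>2 + (norm (z k - zw))\<^sup>2 + \<delta> k)"
    and del: "\<delta> \<longlonglongrightarrow> 0"
    and limkkt: "\<And>r xs ys zs. strict_mono r \<Longrightarrow> (x \<circ> r) \<longlonglongrightarrow> xs \<Longrightarrow> (y \<circ> r) \<longlonglongrightarrow> ys
        \<Longrightarrow> (z \<circ> r) \<longlonglongrightarrow> zs \<Longrightarrow> (xs, ys, zs) \<in> KK"
  shows "\<exists>xs ys zs. (xs, ys, zs) \<in> KK \<and> x \<longlonglongrightarrow> xs \<and> y \<longlonglongrightarrow> ys \<and> z \<longlonglongrightarrow> zs"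
proof -
  define T where "T k = (x k, y k, z k)" for k
  obtain C0 where C0: "C0 \<ge> 0" and c0: "\<And>k. (norm (x k - x0))\<^sup>2 + (norm (y k - y0))\<^sup>2 + (norm (z k - z0))\<^sup>2 \<le> C0 * (V (x0, y0, z0) k + \<epsilon> k)"
    using coer[OF w0] by blast
  obtain K1 where K1: "\<And>k. norm (V (x0, y0, z0) k) \<le> K1"
    using convergent_imp_Bseq[OF fej[OF w0]] unfolding Bseq_def by blast
  obtain K2 where K2: "\<And>k. norm (\<epsilon> k) \<le> K2"
    using convergent_imp_Bseq[of \<epsilon>] eps unfolding Bseq_def convergent_def by blast
  have nT: "(norm (T k - (x0, y0, z0)))\<^sup>2 = (norm (x k - x0))\<^sup>2 + (norm (y k - y0))\<^sup>2 + (norm (z k - z0))\<^sup>2" for k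
    unfolding T_def by (simp add: norm_Pair)
  have bT: "norm (T k - (x0, y0, z0)) \<le> 1 + C0 * (K1 + K2)" for k
  proof -
    have "V (x0, y0, z0) k + \<epsilon> k \<le> K1 + K2" using K1[of k] K2[of k] by auto
    then have "C0 * (V (x0, y0, z0) k + \<epsilon> k) \<le> C0 * (K1 + K2)" using C0 by (rule mult_left_mono)
    moreover have "norm (T k - (x0, y0, z0)) \<le> 1 + (norm (T k - (x0, y0, z0)))\<^sup>2"
      using zero_le_power2[of "norm (T k - (x0, y0, z0)) - 1/2"]
      by (simp add: power2_eq_square algebra_simps)
    ultimately show ?thesis using c0[of k] nT[of k] by linarith
  qed
  have "bounded (range T)"
    unfolding bounded_iff
  proof (intro exI ballI)
    fix t assume "t \<in> range T"
    then obtain k where k: "t = T k" by blast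
    have "norm (T k) \<le> norm (T k - (x0, y0, z0)) + norm (x0, y0, z0)" using norm_triangle_ineq[of "T k - (x0, y0, z0)" "(x0, y0, z0)"] by simp
    then show "norm t \<le> 1 + C0 * (K1 + K2) + norm (x0, y0, z0)" unfolding k using bT[of k] by linarith
  qed
  then obtain l r where r: "strict_mono r" and lr: "(T \<circ> r) \<longlonglongrightarrow> l"
    using bounded_imp_convergent_subsequence by blast
  obtain xs ys zs where l: "l = (xs, ys, zs)" by (cases l) auto
  have xr: "(x \<circ> r) \<longlonglongrightarrow> xs" using tendsto_fst[OF lr] unfolding l by (simp add: T_def o_def)
  have yr: "(y \<circ> r) \<longlonglongrightarrow> ys" using tendsto_fst[OF tendsto_snd[OF lr]] unfolding l by (simp add: T_def o_def)
  have zr: "(z \<circ> r) \<longlonglongrightarrow> zs" using tendsto_snd[OF tendsto_snd[OF lr]] unfolding l by (simp add: T_def o_def)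
  have ws: "(xs, ys, zs) \<in> KK" by (rule limkkt[OF r xr yr zr])
  obtain L where L: "V (xs, ys, zs) \<longlonglongrightarrow> L" using fej[OF ws] unfolding convergent_def by blast
  obtain C where C: "\<And>k. V (xs, ys, zs) k \<le> C * ((norm (x k - xs))\<^sup>2 + (norm (y k - ys))\<^sup>2 + (norm (z k - zs))\<^sup>2 + \<delta> k)"
    using cont[OF ws] by blast
  have "(\<lambda>j. C * ((norm ((x \<circ> r) j - xs))\<^sup>2 + (norm ((y \<circ> r) j - ys))\<^sup>2 + (norm ((z \<circ> r) j - zs))\<^sup>2 + (\<delta> \<circ> r) j))
      \<longlonglongrightarrow> C * ((norm (xs - xs))\<^sup>2 + (norm (ys - ys))\<^sup>2 + (norm (zs - zs))\<^sup>2 + 0)"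
    by (intro tendsto_mult tendsto_const tendsto_add tendsto_power tendsto_norm tendsto_diff xr yr zr LIMSEQ_subseq_LIMSEQ[OF del r])
  then have hh: "(\<lambda>j. C * ((norm ((x \<circ> r) j - xs))\<^sup>2 + (norm ((y \<circ> r) j - ys))\<^sup>2 + (norm ((z \<circ> r) j - zs))\<^sup>2 + (\<delta> \<circ> r) j)) \<longlonglongrightarrow> 0"
    by simp
  have "(\<lambda>j. V (xs, ys, zs) (r j)) \<longlonglongrightarrow> 0"
  proof (rule sandwich0[OF _ _ hh])
    show "0 \<le> V (xs, ys, zs) (r j)" for j by (rule V0[OF ws])
    show "V (xs, ys, zs) (r j) \<le> C * ((norm ((x \<circ> r) j - xs))\<^sup>2 + (norm ((y \<circ> r) j - ys))\<^sup>2 + (norm ((z \<circ> r) j - zs))\<^sup>2 + (\<delta> \<circ> r) j)" for j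
      using C[of "r j"] by (simp add: o_def)
  qed
  moreover have "(\<lambda>j. V (xs, ys, zs) (r j)) \<longlonglongrightarrow> L" using LIMSEQ_subseq_LIMSEQ[OF L r] by (simp add: o_def)
  ultimately have "L = 0" using LIMSEQ_unique by blast
  with L have V0s: "V (xs, ys, zs) \<longlonglongrightarrow> 0" by simp
  obtain Cs where Cs: "Cs \<ge> 0" and cs: "\<And>k. (norm (x k - xs))\<^sup>2 + (norm (y k - ys))\<^sup>2 + (norm (z k - zs))\<^sup>2 \<le> Cs * (V (xs, ys, zs) k + \<epsilon> k)"
    using coer[OF ws] by blast
  have h: "(\<lambda>k. Cs * (V (xs, ys, zs) k + \<epsilon> k)) \<longlonglongrightarrow> Cs * (0 + 0)"
    by (intro tendsto_mult tendsto_const tendsto_add V0s eps)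
  then have h': "(\<lambda>k. Cs * (V (xs, ys, zs) k + \<epsilon> k)) \<longlonglongrightarrow> 0" by simp
  have "(\<lambda>k. (norm (x k - xs))\<^sup>2) \<longlonglongrightarrow> 0"
  proof (rule sandwich0[OF _ _ h'])
    show "0 \<le> (norm (x k - xs))\<^sup>2" for k by simp
    show "(norm (x k - xs))\<^sup>2 \<le> Cs * (V (xs, ys, zs) k + \<epsilon> k)" for k
      using cs[of k] zero_le_power2[of "norm (x k - xs)"] zero_le_power2[of "norm (y k - ys)"] zero_le_power2[of "norm (z k - zs)"]
      by linarith
  qed
  moreover have "(\<lambda>k. (norm (y k - ys))\<^sup>2) \<longlonglongrightarrow> 0"
  proof (rule sandwich0[OF _ _ h'])
    show "0 \<le> (norm (y k - ys))\<^sup>2" for k by simp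
    show "(norm (y k - ys))\<^sup>2 \<le> Cs * (V (xs, ys, zs) k + \<epsilon> k)" for k
      using cs[of k] zero_le_power2[of "norm (x k - xs)"] zero_le_power2[of "norm (y k - ys)"] zero_le_power2[of "norm (z k - zs)"]
      by linarith
  qed
  moreover have "(\<lambda>k. (norm (z k - zs))\<^sup>2) \<longlonglongrightarrow> 0"
  proof (rule sandwich0[OF _ _ h'])
    show "0 \<le> (norm (z k - zs))\<^sup>2" for k by simp
    show "(norm (z k - zs))\<^sup>2 \<le> Cs * (V (xs, ys, zs) k + \<epsilon> k)" for k
      using cs[of k] zero_le_power2[of "norm (x k - xs)"] zero_le_power2[of "norm (y k - ys)"] zero_le_power2[of "norm (z k - zs)"]
      by linarith
  qed
  ultimately show ?thesis using ws by (blast intro: sq_tendsto_zero)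
qed

lemma lin_tendsto:
  fixes L :: "'a::euclidean_space \<Rightarrow> 'b::real_normed_vector"
  assumes "linear L" "(g \<longlongrightarrow> a) F"
  shows "((\<lambda>k. L (g k)) \<longlongrightarrow> L a) F"
  using bounded_linear.tendsto[OF assms(1)[unfolded linear_conv_bounded_linear] assms(2)] .

lemma limkkt:
  fixes A :: "'c::euclidean_space \<Rightarrow> 'a::euclidean_space" and B :: "'c \<Rightarrow> 'b::euclidean_space"
    and x :: "nat \<Rightarrow> 'a" and y :: "nat \<Rightarrow> 'b" and z :: "nat \<Rightarrow> 'c"
  assumes A: "linear A" and B: "linear B"
    and pp: "proper_efun p" "closed_efun p" and pq: "proper_efun q" "closed_efun q"
    and Dfc: "continuous_on UNIV Df" and Dgc: "continuous_on UNIV Dg"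
    and G: "linear G" and H: "linear H"
    and ux: "\<And>k. - (Df (x k) + G (x (Suc k) - x k) + A (z k)
             + \<sigma> *\<^sub>R A (adjoint A (x (Suc k)) + adjoint B (y k) - c)) \<in> subdiff p (x (Suc k))"
    and uy: "\<And>k. - (Dg (y k) + H (y (Suc k) - y k) + B (z k)
             + \<sigma> *\<^sub>R B (adjoint A (x (Suc k)) + adjoint B (y (Suc k)) - c)) \<in> subdiff q (y (Suc k))"
    and dx: "(\<lambda>k. x (Suc k) - x k) \<longlonglongrightarrow> 0" and dy: "(\<lambda>k. y (Suc k) - y k) \<longlonglongrightarrow> 0"
    and res: "(\<lambda>k. adjoint A (x k) + adjoint B (y k) - c) \<longlonglongrightarrow> 0"
    and r: "strict_mono r" and xr: "(x \<circ> r) \<longlonglongrightarrow> xs" and yr: "(y \<circ> r) \<longlonglongrightarrow> ys" and zr: "(z \<circ> r) \<longlonglongrightarrow> zs"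
  shows "(xs, ys, zs) \<in> KKT_set p Df q Dg A B c"
proof -
  have la: "linear (adjoint A)" and lb: "linear (adjoint B)" using adjoint_linear A B by auto
  have xr': "(\<lambda>j. x (r j)) \<longlonglongrightarrow> xs" and yr': "(\<lambda>j. y (r j)) \<longlonglongrightarrow> ys" and zr': "(\<lambda>j. z (r j)) \<longlonglongrightarrow> zs"
    using xr yr zr by (simp_all add: o_def)
  have dxr: "(\<lambda>j. x (Suc (r j)) - x (r j)) \<longlonglongrightarrow> 0" using LIMSEQ_subseq_LIMSEQ[OF dx r] by (simp add: o_def)
  have dyr: "(\<lambda>j. y (Suc (r j)) - y (r j)) \<longlonglongrightarrow> 0" using LIMSEQ_subseq_LIMSEQ[OF dy r] by (simp add: o_def)
  have x1: "(\<lambda>j. x (Suc (r j))) \<longlonglongrightarrow> xs"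
    using tendsto_add[OF xr' dxr] by simp
  have y1: "(\<lambda>j. y (Suc (r j))) \<longlonglongrightarrow> ys"
    using tendsto_add[OF yr' dyr] by simp
  have "(\<lambda>j. adjoint A (x (r j)) + adjoint B (y (r j)) - c) \<longlonglongrightarrow> adjoint A xs + adjoint B ys - c"
    by (intro tendsto_diff tendsto_add tendsto_const lin_tendsto[OF la] lin_tendsto[OF lb] xr' yr')
  moreover have "(\<lambda>j. adjoint A (x (r j)) + adjoint B (y (r j)) - c) \<longlonglongrightarrow> 0"
    using LIMSEQ_subseq_LIMSEQ[OF res r] by (simp add: o_def)
  ultimately have feas0: "adjoint A xs + adjoint B ys - c = 0" using LIMSEQ_unique by blast
  then have feas: "adjoint A xs + adjoint B ys = c" by simp
  have Dfx: "(\<lambda>j. Df (x (r j))) \<longlonglongrightarrow> Df xs"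
  proof -
    have "isCont Df xs" using Dfc by (simp add: continuous_on_eq_continuous_at)
    then show ?thesis using isCont_tendsto_compose[OF _ xr'] by blast
  qed
  have Dgy: "(\<lambda>j. Dg (y (r j))) \<longlonglongrightarrow> Dg ys"
  proof -
    have "isCont Dg ys" using Dgc by (simp add: continuous_on_eq_continuous_at)
    then show ?thesis using isCont_tendsto_compose[OF _ yr'] by blast
  qed
  have vx: "(\<lambda>j. - (Df (x (r j)) + G (x (Suc (r j)) - x (r j)) + A (z (r j))
             + \<sigma> *\<^sub>R A (adjoint A (x (Suc (r j))) + adjoint B (y (r j)) - c)))
        \<longlonglongrightarrow> - (Df xs + G 0 + A zs + \<sigma> *\<^sub>R A (adjoint A xs + adjoint B ys - c))"
    by (intro tendsto_minus tendsto_add tendsto_scaleR tendsto_const tendsto_diff Dfx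
        lin_tendsto[OF G dxr] lin_tendsto[OF A zr'] lin_tendsto[OF A] lin_tendsto[OF la x1] lin_tendsto[OF lb yr'])
  have sx: "- (Df xs + G 0 + A zs + \<sigma> *\<^sub>R A (adjoint A xs + adjoint B ys - c)) \<in> subdiff p xs"
    by (rule subdiff_closed[OF pp(2) pp(1) _ x1 vx]) (rule ux)
  have vy: "(\<lambda>j. - (Dg (y (r j)) + H (y (Suc (r j)) - y (r j)) + B (z (r j))
             + \<sigma> *\<^sub>R B (adjoint A (x (Suc (r j))) + adjoint B (y (Suc (r j))) - c)))
        \<longlonglongrightarrow> - (Dg ys + H 0 + B zs + \<sigma> *\<^sub>R B (adjoint A xs + adjoint B ys - c))"
    by (intro tendsto_minus tendsto_add tendsto_scaleR tendsto_const tendsto_diff Dgy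
        lin_tendsto[OF H dyr] lin_tendsto[OF B zr'] lin_tendsto[OF B] lin_tendsto[OF la x1] lin_tendsto[OF lb y1])
  have sy: "- (Dg ys + H 0 + B zs + \<sigma> *\<^sub>R B (adjoint A xs + adjoint B ys - c)) \<in> subdiff q ys"
    by (rule subdiff_closed[OF pq(2) pq(1) _ y1 vy]) (rule uy)
  have G0: "G 0 = 0" and H0: "H 0 = 0" and A0: "A 0 = 0" and B0: "B 0 = 0"
    using G H A B by (simp_all add: linear_0)
  show ?thesis unfolding KKT_set_def
  proof (clarify, intro conjI)
    show "\<exists>v\<in>subdiff p xs. v + Df xs + A zs = 0"
      using sx unfolding feas0 G0 A0 by (intro bexI[of _ "- (Df xs + A zs)"]) auto
    show "\<exists>w\<in>subdiff q ys. w + Dg ys + B zs = 0"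
      using sy unfolding feas0 H0 B0 by (intro bexI[of _ "- (Dg ys + B zs)"]) auto
    show "adjoint A xs + adjoint B ys = c" by (rule feas)
  qed
qed

lemma vec_young:
  fixes s b :: "'c::real_inner"
  assumes "0 < \<eta>" "\<eta> < 1/2"
  shows "\<eta> * (norm (s - b))\<^sup>2 \<le> \<eta> * (1 - \<eta>) / (1 - 2 * \<eta>) * (norm s)\<^sup>2 + (1 - \<eta>) * (norm b)\<^sup>2"
proof -
  have n1: "(norm (\<eta> *\<^sub>R s + (1 - 2 * \<eta>) *\<^sub>R b))\<^sup>2 = \<eta>\<^sup>2 * (norm s)\<^sup>2 + 2 * \<eta> * (1 - 2 * \<eta>) * (s \<bullet> b) + (1 - 2 * \<eta>)\<^sup>2 * (norm b)\<^sup>2"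
    by (simp only: norm_sq_add norm_scaleR inner_scaleR_left inner_scaleR_right power_mult_distrib power2_abs)
      (simp add: algebra_simps)
  have n2: "(norm (s - b))\<^sup>2 = (norm s)\<^sup>2 - 2 * (s \<bullet> b) + (norm b)\<^sup>2" by (rule norm_sq_diff)
  have key: "(1 - 2 * \<eta>) * (\<eta> * (1 - \<eta>) / (1 - 2 * \<eta>) * (norm s)\<^sup>2 + (1 - \<eta>) * (norm b)\<^sup>2 - \<eta> * (norm (s - b))\<^sup>2)
      = (norm (\<eta> *\<^sub>R s + (1 - 2 * \<eta>) *\<^sub>R b))\<^sup>2"
    unfolding n1 n2 using assms by (simp add: field_simps power2_eq_square)
  have "0 \<le> (1 - 2 * \<eta>) * (\<eta> * (1 - \<eta>) / (1 - 2 * \<eta>) * (norm s)\<^sup>2 + (1 - \<eta>) * (norm b)\<^sup>2 - \<eta> * (norm (s - b))\<^sup>2)"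
    unfolding key by simp
  then show ?thesis using assms by (simp add: zero_le_mult_iff)
qed

lemma adj_bound:
  fixes A :: "'c::euclidean_space \<Rightarrow> 'a::euclidean_space"
  assumes "linear A"
  shows "\<exists>K\<ge>0. \<forall>u. (norm (adjoint A u))\<^sup>2 \<le> K * (norm u)\<^sup>2"
proof -
  obtain K where K: "\<And>u. norm (adjoint A u) \<le> K * norm u"
    using linear_bounded[OF adjoint_linear[OF assms]] by blast
  have "(norm (adjoint A u))\<^sup>2 \<le> (max K 0)\<^sup>2 * (norm u)\<^sup>2" for u
  proof -
    have "norm (adjoint A u) \<le> max K 0 * norm u"
      using order_trans[OF K[of u] mult_right_mono[OF max.cobounded1 norm_ge_zero]] .
    then have "(norm (adjoint A u))\<^sup>2 \<le> (max K 0 * norm u)\<^sup>2" by (intro power_mono) auto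
    then show ?thesis by (simp add: power_mult_distrib)
  qed
  then show ?thesis by (intro exI[of _ "(max K 0)\<^sup>2"]) auto
qed

lemma wsq_abs_bound:
  fixes G :: "'a::euclidean_space \<Rightarrow> 'a"
  assumes "linear G"
  shows "\<exists>K\<ge>0. \<forall>u. wsq G u \<le> K * (norm u)\<^sup>2"
  using wsq_bound[OF assms] by (meson abs_ge_self order_trans)

lemma sum_bound4:
  fixes a1 a2 a3 a4 X Y Z W C :: real
  assumes "0 \<le> X" "0 \<le> Y" "0 \<le> Z" "0 \<le> W" "a1 \<le> C" "a2 \<le> C" "a3 \<le> C" "a4 \<le> C"
  shows "a1 * X + a2 * Y + a3 * Z + a4 * W \<le> C * (X + Y + Z + W)"
proof -
  have "a1 * X \<le> C * X" "a2 * Y \<le> C * Y" "a3 * Z \<le> C * Z" "a4 * W \<le> C * W"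
    using assms by (auto intro: mult_right_mono)
  then show ?thesis by (simp add: distrib_left)
qed

lemma le_max_mult: "0 \<le> (t::real) \<Longrightarrow> t \<le> max 1 a * t"
  using mult_right_mono[of 1 "max 1 a" t] by simp

lemma sum_bound3:
  fixes p1 p2 p3 c1 c2 c3 V :: real
  assumes "0 \<le> p1" "0 \<le> p2" "0 \<le> p3" "0 \<le> c1" "0 \<le> c2" "0 \<le> c3" "p1 + p2 + p3 \<le> V"
  shows "c1 * p1 + c2 * p2 + c3 * p3 \<le> (c1 + c2 + c3) * V"
proof -
  have "c1 * p1 \<le> c1 * V" "c2 * p2 \<le> c2 * V" "c3 * p3 \<le> c3 * V"
    using assms by (auto intro!: mult_left_mono)
  then show ?thesis by (simp add: distrib_right)
qed

lemma coer_combine: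
  fixes X Y Z P1 P2 P3 P4 R V lP lM s \<sigma> :: real
  assumes lP: "lP > 0" and lM: "lM > 0" and s: "s > 0" and sg: "\<sigma> > 0"
    and P: "0 \<le> P1" "0 \<le> P2" "0 \<le> P3" "0 \<le> P4" and R: "0 \<le> R"
    and hx: "lP * X \<le> P2 + 2 * \<sigma> * R + 2 * P4" and hy: "lM * Y \<le> P3 + P4" and hz: "Z \<le> s * P1"
    and hV: "P1 + P2 + P3 + P4 \<le> V"
  shows "X + Y + Z \<le> ((3 + 2 * \<sigma>) / lP + 2 / lM + s) * (V + R)"
proof -
  have V0: "0 \<le> V" using P hV by linarith
  have x: "X \<le> (P2 + 2 * \<sigma> * R + 2 * P4) / lP" using hx lP by (simp add: field_simps)
  have y: "Y \<le> (P3 + P4) / lM" using hy lM by (simp add: field_simps)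
  have x2: "(P2 + 2 * \<sigma> * R + 2 * P4) / lP \<le> ((3 + 2 * \<sigma>) / lP) * (V + R)"
  proof -
    have "P2 + 2 * \<sigma> * R + 2 * P4 \<le> (3 + 2 * \<sigma>) * (V + R)"
    proof -
      have "P2 + 2 * P4 \<le> 3 * V" using P hV by linarith
      moreover have "2 * \<sigma> * R \<le> 2 * \<sigma> * (V + R)" using sg V0 R by (intro mult_left_mono) auto
      moreover have "3 * V \<le> 3 * (V + R)" using R by simp
      moreover have "(3 + 2 * \<sigma>) * (V + R) = 3 * (V + R) + 2 * \<sigma> * (V + R)" by (simp add: algebra_simps)
      ultimately show ?thesis by linarith
    qed
    then have "(P2 + 2 * \<sigma> * R + 2 * P4) / lP \<le> ((3 + 2 * \<sigma>) * (V + R)) / lP"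
      using lP by (intro divide_right_mono) auto
    then show ?thesis by simp
  qed
  have y2: "(P3 + P4) / lM \<le> (2 / lM) * (V + R)"
  proof -
    have "P3 + P4 \<le> 2 * V + 2 * R" using P hV R by linarith
    then have "P3 + P4 \<le> 2 * (V + R)" by (simp add: distrib_left)
    then have "(P3 + P4) / lM \<le> (2 * (V + R)) / lM" using lM by (intro divide_right_mono) auto
    then show ?thesis by simp
  qed
  have z2: "s * P1 \<le> s * (V + R)" using P hV R s by (intro mult_left_mono) auto
  have "((3 + 2 * \<sigma>) / lP + 2 / lM + s) * (V + R) = ((3 + 2 * \<sigma>) / lP) * (V + R) + (2 / lM) * (V + R) + s * (V + R)"
    by (simp add: algebra_simps)
  then show ?thesis using x y x2 y2 z2 hz by linarith
qed

lemma summable_tendsto0: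
  fixes f :: "nat \<Rightarrow> real"
  shows "summable f \<Longrightarrow> f \<longlonglongrightarrow> 0"
  by (rule summable_LIMSEQ_zero)

theorem theorem4p1:
  fixes p :: "'a::euclidean_space \<Rightarrow> ereal" and f :: "'a \<Rightarrow> real" and Df :: "'a \<Rightarrow> 'a"
    and q :: "'b::euclidean_space \<Rightarrow> ereal" and g :: "'b \<Rightarrow> real" and Dg :: "'b \<Rightarrow> 'b"
    and A :: "'c::euclidean_space \<Rightarrow> 'a" and B :: "'c \<Rightarrow> 'b" and c :: 'c
    and Sf Shf S :: "'a \<Rightarrow> 'a" and Sg Shg T :: "'b \<Rightarrow> 'b"
    and \<sigma> \<tau> :: real
    and x :: "nat \<Rightarrow> 'a" and y :: "nat \<Rightarrow> 'b" and z :: "nat \<Rightarrow> 'c"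
    and xb :: 'a and yb :: 'b and zb :: 'c
  assumes p_cpc: "proper_efun p" "convex_efun p" "closed_efun p"
    and q_cpc: "proper_efun q" "convex_efun q" "closed_efun q"
    and f_conv: "convex_on UNIV f" and f_grad: "\<And>u. (f has_derivative (\<lambda>h. Df u \<bullet> h)) (at u)"
    and f_lip: "\<exists>L. L-lipschitz_on UNIV Df"
    and g_conv: "convex_on UNIV g" and g_grad: "\<And>u. (g has_derivative (\<lambda>h. Dg u \<bullet> h)) (at u)"
    and g_lip: "\<exists>L. L-lipschitz_on UNIV Dg"
    and A_lin: "linear A" and B_lin: "linear B"
    and Sf_sa: "self_adjoint_op Sf" "psd_op Sf" and Shf_sa: "self_adjoint_op Shf" "psd_op Shf"
    and Shf_ge: "psd_op (\<lambda>u. Shf u - Sf u)"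
    and Sg_sa: "self_adjoint_op Sg" "psd_op Sg" and Shg_sa: "self_adjoint_op Shg" "psd_op Shg"
    and Shg_ge: "psd_op (\<lambda>u. Shg u - Sg u)"
    and f_maj: "\<And>u u'. f u' + (u - u') \<bullet> Df u' + wsq Sf (u - u') / 2 \<le> f u"
               "\<And>u u'. f u \<le> f u' + (u - u') \<bullet> Df u' + wsq Shf (u - u') / 2"
    and g_maj: "\<And>v v'. g v' + (v - v') \<bullet> Dg v' + wsq Sg (v - v') / 2 \<le> g v"
               "\<And>v v'. g v \<le> g v' + (v - v') \<bullet> Dg v' + wsq Shg (v - v') / 2"
    and CQ: "\<exists>x0 y0. (x0, y0) \<in> rel_interior (edom p \<times> edom q) \<and> adjoint A x0 + adjoint B y0 = c"
    and sol_nonempty: "\<exists>xs ys. primal_opt p f q g A B c xs ys"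
    and sigma_pos: "\<sigma> > 0" and tau_pos: "\<tau> > 0"
    and S_sa: "self_adjoint_op S" and T_sa: "self_adjoint_op T"
    and S_cond: "psd_op (\<lambda>u. Shf u + S u + \<sigma> *\<^sub>R A (adjoint A u))"
    and T_cond: "psd_op (\<lambda>v. Shg v + T v + \<sigma> *\<^sub>R B (adjoint B v))"
    and alg: "miPADMM_seq p Df Shf S q Dg Shg T A B c \<sigma> \<tau> x y z"
    and kkt: "(xb, yb, zb) \<in> KKT_set p Df q Dg A B c"
  defines "AA \<equiv> \<lambda>u. A (adjoint A u)" and "BB \<equiv> \<lambda>v. B (adjoint B v)"
    and "r \<equiv> \<lambda>k. adjoint A (x k) + adjoint B (y k) - c"
    and "phib \<equiv> \<lambda>k. (1 / (\<tau> * \<sigma>)) * (norm (z k - zb))\<^sup>2 + wsq (\<lambda>u. Shf u + S u) (x k - xb)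
                     + wsq (\<lambda>v. Shg v + T v) (y k - yb)
                     + \<sigma> * (norm (adjoint A xb + adjoint B (y k) - c))\<^sup>2"
    and "xi \<equiv> \<lambda>k. wsq (\<lambda>v. Shg v + T v) (y k - y (k - 1))"
    and "Hf \<equiv> \<lambda>\<alpha> u. (1/2) *\<^sub>R Sf u + S u + ((1 - \<alpha>) * \<sigma> / 2) *\<^sub>R A (adjoint A u)"
    and "Mg \<equiv> \<lambda>\<alpha> v. (1/2) *\<^sub>R Sg v + T v + (min \<tau> (1 + \<tau> - \<tau>\<^sup>2) * \<alpha> * \<sigma>) *\<^sub>R B (adjoint B v)"
    and "conv \<equiv> (\<exists>xs ys zs. ((\<lambda>k. (x k, y k)) \<longlonglongrightarrow> (xs, ys)) \<and> primal_opt p f q g A B c xs ys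
                    \<and> (z \<longlonglongrightarrow> zs) \<and> dual_opt p f q g A B c zs)"
  shows
    "(\<forall>\<eta> k. 0 < \<eta> \<longrightarrow> \<eta> < 1/2 \<longrightarrow>
        (let \<beta> = \<eta> * (1 - \<eta>) / (1 - 2 * \<eta>) in
          (phib k + \<beta> * \<sigma> * (norm (r k))\<^sup>2) - (phib (Suc k) + \<beta> * \<sigma> * (norm (r (Suc k)))\<^sup>2)
          \<ge> (1 / (\<tau>\<^sup>2 * \<sigma>) * (norm (z (Suc k) - z k))\<^sup>2
              + wsq (\<lambda>u. Shf u + S u + (\<eta> * \<sigma>) *\<^sub>R AA u) (x (Suc k) - x k)
              + wsq (\<lambda>v. Shg v + T v + (\<eta> * \<sigma>) *\<^sub>R BB v) (y (Suc k) - y k))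
            - ((\<tau> + \<beta>) / (\<tau>\<^sup>2 * \<sigma>) * (norm (z (Suc k) - z k))\<^sup>2
              + wsq (\<lambda>u. Shf u - (1/2) *\<^sub>R Sf u) (x (Suc k) - x k)
              + wsq (\<lambda>v. Shg v - (1/2) *\<^sub>R Sg v + (\<eta> * \<sigma>) *\<^sub>R BB v) (y (Suc k) - y k))))
   \<and> ((\<exists>\<eta>. 0 < \<eta> \<and> \<eta> < 1/2 \<and> pd_op (\<lambda>u. Shf u + S u + (\<eta> * \<sigma>) *\<^sub>R AA u)
            \<and> pd_op (\<lambda>v. Shg v + T v + (\<eta> * \<sigma>) *\<^sub>R BB v))
       \<longrightarrow> summable (\<lambda>k. wsq Shf (x (Suc k) - x k) + wsq (\<lambda>v. Shg v + \<sigma> *\<^sub>R BB v) (y (Suc k) - y k)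
                        + (norm (r (Suc k)))\<^sup>2)
       \<longrightarrow> conv)
   \<and> (psd_op (\<lambda>v. (1/2) *\<^sub>R Shg v + T v) \<longrightarrow>
       (\<forall>\<alpha> k. 0 < \<alpha> \<longrightarrow> \<alpha> \<le> 1 \<longrightarrow> 1 \<le> k \<longrightarrow>
          (let \<kappa> = 1 - \<alpha> * min \<tau> (1 / \<tau>) in
            (phib k + \<kappa> * \<sigma> * (norm (r k))\<^sup>2 + \<alpha> * xi k)
              - (phib (Suc k) + \<kappa> * \<sigma> * (norm (r (Suc k)))\<^sup>2 + \<alpha> * xi (Suc k))
            \<ge> wsq (Hf \<alpha>) (x (Suc k) - x k) + wsq (Mg \<alpha>) (y (Suc k) - y k)
              + (- \<tau> + \<alpha> * min (1 + \<tau>) (1 + 1 / \<tau>)) * \<sigma> * (norm (r (Suc k)))\<^sup>2))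
       \<and> ((\<tau> < (1 + sqrt 5) / 2 \<and>
            (\<exists>\<alpha>. \<tau> / min (1 + \<tau>) (1 + 1 / \<tau>) < \<alpha> \<and> \<alpha> \<le> 1
                 \<and> psd_op (\<lambda>u. Shf u + S u) \<and> psd_op (Hf \<alpha>)
                 \<and> pd_op (\<lambda>u. (1/2) *\<^sub>R Sf u + S u + \<sigma> *\<^sub>R AA u) \<and> pd_op (Mg \<alpha>)))
           \<longrightarrow> conv))"
proof -
  have la: "linear (adjoint A)" and lb: "linear (adjoint B)" using adjoint_linear A_lin B_lin by auto
  have G: "self_adjoint_op (\<lambda>u. Shf u + S u)" by (rule sa_plus[OF Shf_sa(1) S_sa])
  have H: "self_adjoint_op (\<lambda>v. Shg v + T v)" by (rule sa_plus[OF Shg_sa(1) T_sa])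
  have xmin: "\<And>k x'. xsub p Df Shf S A B c \<sigma> (x k) (y k) (z k) (x (Suc k)) \<le> xsub p Df Shf S A B c \<sigma> (x k) (y k) (z k) x'"
    and ymin: "\<And>k y'. ysub q Dg Shg T A B c \<sigma> (x (Suc k)) (y k) (z k) (y (Suc k)) \<le> ysub q Dg Shg T A B c \<sigma> (x (Suc k)) (y k) (z k) y'"
    and zup: "\<And>k. z (Suc k) = z k + (\<tau> * \<sigma>) *\<^sub>R (adjoint A (x (Suc k)) + adjoint B (y (Suc k)) - c)"
    using alg unfolding miPADMM_seq_def by blast+
  have ux: "\<And>k. - (Df (x k) + (Shf (x (Suc k) - x k) + S (x (Suc k) - x k)) + A (z k)
             + \<sigma> *\<^sub>R A (adjoint A (x (Suc k)) + adjoint B (y k) - c)) \<in> subdiff p (x (Suc k))"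
    by (rule x_opt[OF p_cpc(1,2) G A_lin xmin])
  have uy: "\<And>k. - (Dg (y k) + (Shg (y (Suc k) - y k) + T (y (Suc k) - y k)) + B (z k)
             + \<sigma> *\<^sub>R B (adjoint A (x (Suc k)) + adjoint B (y (Suc k)) - c)) \<in> subdiff q (y (Suc k))"
    by (rule y_opt[OF q_cpc(1,2) H B_lin ymin])
  have IA: "(let \<beta> = \<eta> * (1 - \<eta>) / (1 - 2 * \<eta>) in
          ((1 / (\<tau> * \<sigma>) * (norm (z k - zw))\<^sup>2 + wsq (\<lambda>u. Shf u + S u) (x k - xw) + wsq (\<lambda>v. Shg v + T v) (y k - yw)
            + \<sigma> * (norm (adjoint A xw + adjoint B (y k) - c))\<^sup>2) + \<beta> * \<sigma> * (norm (adjoint A (x k) + adjoint B (y k) - c))\<^sup>2)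
        - ((1 / (\<tau> * \<sigma>) * (norm (z (Suc k) - zw))\<^sup>2 + wsq (\<lambda>u. Shf u + S u) (x (Suc k) - xw) + wsq (\<lambda>v. Shg v + T v) (y (Suc k) - yw)
            + \<sigma> * (norm (adjoint A xw + adjoint B (y (Suc k)) - c))\<^sup>2) + \<beta> * \<sigma> * (norm (adjoint A (x (Suc k)) + adjoint B (y (Suc k)) - c))\<^sup>2)
          \<ge> (1 / (\<tau>\<^sup>2 * \<sigma>) * (norm (z (Suc k) - z k))\<^sup>2
              + wsq (\<lambda>u. Shf u + S u + (\<eta> * \<sigma>) *\<^sub>R A (adjoint A u)) (x (Suc k) - x k)
              + wsq (\<lambda>v. Shg v + T v + (\<eta> * \<sigma>) *\<^sub>R B (adjoint B v)) (y (Suc k) - y k))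
            - ((\<tau> + \<beta>) / (\<tau>\<^sup>2 * \<sigma>) * (norm (z (Suc k) - z k))\<^sup>2
              + wsq (\<lambda>u. Shf u - (1/2) *\<^sub>R Sf u) (x (Suc k) - x k)
              + wsq (\<lambda>v. Shg v - (1/2) *\<^sub>R Sg v + (\<eta> * \<sigma>) *\<^sub>R B (adjoint B v)) (y (Suc k) - y k)))"
    if kw: "(xw, yw, zw) \<in> KKT_set p Df q Dg A B c" and e: "0 < \<eta>" "\<eta> < 1/2" for xw yw zw \<eta> k
  proof -
    obtain vw ww where vw: "vw \<in> subdiff p xw" "vw + Df xw + A zw = 0"
      and ww: "ww \<in> subdiff q yw" "ww + Dg yw + B zw = 0" and fw: "adjoint A xw + adjoint B yw = c"
      using kw unfolding KKT_set_def by auto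
    show ?thesis
      by (rule ineq_a[OF A_lin B_lin p_cpc(1) q_cpc(1) G H Sf_sa Sg_sa f_maj g_maj sigma_pos tau_pos
            ux uy zup vw ww fw e])
  qed
  have IB: "(let \<kappa> = 1 - \<alpha> * min \<tau> (1 / \<tau>) in
          ((1 / (\<tau> * \<sigma>) * (norm (z (Suc m) - zw))\<^sup>2 + wsq (\<lambda>u. Shf u + S u) (x (Suc m) - xw) + wsq (\<lambda>v. Shg v + T v) (y (Suc m) - yw)
            + \<sigma> * (norm (adjoint A xw + adjoint B (y (Suc m)) - c))\<^sup>2) + \<kappa> * \<sigma> * (norm (adjoint A (x (Suc m)) + adjoint B (y (Suc m)) - c))\<^sup>2
            + \<alpha> * wsq (\<lambda>v. Shg v + T v) (y (Suc m) - y m))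
        - ((1 / (\<tau> * \<sigma>) * (norm (z (Suc (Suc m)) - zw))\<^sup>2 + wsq (\<lambda>u. Shf u + S u) (x (Suc (Suc m)) - xw) + wsq (\<lambda>v. Shg v + T v) (y (Suc (Suc m)) - yw)
            + \<sigma> * (norm (adjoint A xw + adjoint B (y (Suc (Suc m))) - c))\<^sup>2) + \<kappa> * \<sigma> * (norm (adjoint A (x (Suc (Suc m))) + adjoint B (y (Suc (Suc m))) - c))\<^sup>2
            + \<alpha> * wsq (\<lambda>v. Shg v + T v) (y (Suc (Suc m)) - y (Suc m)))
          \<ge> wsq (\<lambda>u. (1/2) *\<^sub>R Sf u + S u + ((1 - \<alpha>) * \<sigma> / 2) *\<^sub>R A (adjoint A u)) (x (Suc (Suc m)) - x (Suc m))
            + wsq (\<lambda>v. (1/2) *\<^sub>R Sg v + T v + (min \<tau> (1 + \<tau> - \<tau>\<^sup>2) * \<alpha> * \<sigma>) *\<^sub>R B (adjoint B v)) (y (Suc (Suc m)) - y (Suc m))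
            + (- \<tau> + \<alpha> * min (1 + \<tau>) (1 + 1 / \<tau>)) * \<sigma> * (norm (adjoint A (x (Suc (Suc m))) + adjoint B (y (Suc (Suc m))) - c))\<^sup>2)"
    if kw: "(xw, yw, zw) \<in> KKT_set p Df q Dg A B c"
      and hT: "psd_op (\<lambda>v. (1/2) *\<^sub>R Shg v + T v)" and al: "0 < \<alpha>" "\<alpha> \<le> 1" for xw yw zw \<alpha> m
  proof -
    obtain vw ww where vw: "vw \<in> subdiff p xw" "vw + Df xw + A zw = 0"
      and ww: "ww \<in> subdiff q yw" "ww + Dg yw + B zw = 0" and fw: "adjoint A xw + adjoint B yw = c"
      using kw unfolding KKT_set_def by auto
    show ?thesis
      by (rule ineq_b[OF A_lin B_lin p_cpc(1) q_cpc(1) G H Sf_sa Sg_sa f_maj g_maj sigma_pos tau_pos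
            ux uy zup vw ww fw uy zup Shg_sa(1) T_sa hT al])
  qed
  have partA: "\<forall>\<eta> k. 0 < \<eta> \<longrightarrow> \<eta> < 1/2 \<longrightarrow>
        (let \<beta> = \<eta> * (1 - \<eta>) / (1 - 2 * \<eta>) in
          (phib k + \<beta> * \<sigma> * (norm (r k))\<^sup>2) - (phib (Suc k) + \<beta> * \<sigma> * (norm (r (Suc k)))\<^sup>2)
          \<ge> (1 / (\<tau>\<^sup>2 * \<sigma>) * (norm (z (Suc k) - z k))\<^sup>2
              + wsq (\<lambda>u. Shf u + S u + (\<eta> * \<sigma>) *\<^sub>R AA u) (x (Suc k) - x k)
              + wsq (\<lambda>v. Shg v + T v + (\<eta> * \<sigma>) *\<^sub>R BB v) (y (Suc k) - y k))
            - ((\<tau> + \<beta>) / (\<tau>\<^sup>2 * \<sigma>) * (norm (z (Suc k) - z k))\<^sup>2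
              + wsq (\<lambda>u. Shf u - (1/2) *\<^sub>R Sf u) (x (Suc k) - x k)
              + wsq (\<lambda>v. Shg v - (1/2) *\<^sub>R Sg v + (\<eta> * \<sigma>) *\<^sub>R BB v) (y (Suc k) - y k)))"
    unfolding phib_def r_def AA_def BB_def using IA[OF kkt] by blast
  have partB: "psd_op (\<lambda>v. (1/2) *\<^sub>R Shg v + T v) \<longrightarrow>
       (\<forall>\<alpha> k. 0 < \<alpha> \<longrightarrow> \<alpha> \<le> 1 \<longrightarrow> 1 \<le> k \<longrightarrow>
          (let \<kappa> = 1 - \<alpha> * min \<tau> (1 / \<tau>) in
            (phib k + \<kappa> * \<sigma> * (norm (r k))\<^sup>2 + \<alpha> * xi k)
              - (phib (Suc k) + \<kappa> * \<sigma> * (norm (r (Suc k)))\<^sup>2 + \<alpha> * xi (Suc k))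
            \<ge> wsq (Hf \<alpha>) (x (Suc k) - x k) + wsq (Mg \<alpha>) (y (Suc k) - y k)
              + (- \<tau> + \<alpha> * min (1 + \<tau>) (1 + 1 / \<tau>)) * \<sigma> * (norm (r (Suc k)))\<^sup>2))"
  proof (intro impI allI)
    fix \<alpha> :: real and k :: nat assume hT: "psd_op (\<lambda>v. (1/2) *\<^sub>R Shg v + T v)" and al: "0 < \<alpha>" "\<alpha> \<le> 1" and k: "1 \<le> k"
    then obtain m where m: "k = Suc m" by (cases k) auto
    show "(let \<kappa> = 1 - \<alpha> * min \<tau> (1 / \<tau>) in
            (phib k + \<kappa> * \<sigma> * (norm (r k))\<^sup>2 + \<alpha> * xi k)
              - (phib (Suc k) + \<kappa> * \<sigma> * (norm (r (Suc k)))\<^sup>2 + \<alpha> * xi (Suc k))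
            \<ge> wsq (Hf \<alpha>) (x (Suc k) - x k) + wsq (Mg \<alpha>) (y (Suc k) - y k)
              + (- \<tau> + \<alpha> * min (1 + \<tau>) (1 + 1 / \<tau>)) * \<sigma> * (norm (r (Suc k)))\<^sup>2)"
      unfolding m phib_def r_def xi_def Hf_def Mg_def diff_Suc_1
      by (rule IB[OF kkt hT al])
  qed
  have convA: "(\<exists>\<eta>. 0 < \<eta> \<and> \<eta> < 1/2 \<and> pd_op (\<lambda>u. Shf u + S u + (\<eta> * \<sigma>) *\<^sub>R AA u)
            \<and> pd_op (\<lambda>v. Shg v + T v + (\<eta> * \<sigma>) *\<^sub>R BB v))
       \<longrightarrow> summable (\<lambda>k. wsq Shf (x (Suc k) - x k) + wsq (\<lambda>v. Shg v + \<sigma> *\<^sub>R BB v) (y (Suc k) - y k)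
                        + (norm (r (Suc k)))\<^sup>2)
       \<longrightarrow> conv"
  proof (intro impI)
    assume ex: "\<exists>\<eta>. 0 < \<eta> \<and> \<eta> < 1/2 \<and> pd_op (\<lambda>u. Shf u + S u + (\<eta> * \<sigma>) *\<^sub>R AA u)
            \<and> pd_op (\<lambda>v. Shg v + T v + (\<eta> * \<sigma>) *\<^sub>R BB v)"
      and sm0: "summable (\<lambda>k. wsq Shf (x (Suc k) - x k) + wsq (\<lambda>v. Shg v + \<sigma> *\<^sub>R BB v) (y (Suc k) - y k)
                        + (norm (r (Suc k)))\<^sup>2)"
    obtain \<eta> where e: "0 < \<eta>" "\<eta> < 1/2" and pdG: "pd_op (\<lambda>u. Shf u + S u + (\<eta> * \<sigma>) *\<^sub>R A (adjoint A u))"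
      and pdH: "pd_op (\<lambda>v. Shg v + T v + (\<eta> * \<sigma>) *\<^sub>R B (adjoint B v))"
      using ex unfolding AA_def BB_def by blast
    define res where "res k = adjoint A (x k) + adjoint B (y k) - c" for k
    define sq where "sq k = wsq Shf (x (Suc k) - x k) + wsq (\<lambda>v. Shg v + \<sigma> *\<^sub>R B (adjoint B v)) (y (Suc k) - y k)
                        + (norm (res (Suc k)))\<^sup>2" for k
    have sm: "summable sq" using sm0 unfolding sq_def res_def r_def BB_def .
    define \<beta> where "\<beta> = \<eta> * (1 - \<eta>) / (1 - 2 * \<eta>)"
    have b0: "0 < \<beta>" unfolding \<beta>_def using e by simp
    define G' where "G' = (\<lambda>u. Shf u + S u)"
    define H' where "H' = (\<lambda>v. Shg v + T v)"
    define G\<eta> where "G\<eta> = (\<lambda>u. Shf u + S u + (\<eta> * \<sigma>) *\<^sub>R A (adjoint A u))"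
    define H\<eta> where "H\<eta> = (\<lambda>v. Shg v + T v + (\<eta> * \<sigma>) *\<^sub>R B (adjoint B v))"
    have lG\<eta>: "linear G\<eta>" unfolding G\<eta>_def
      using sa_linear[OF sa_plus[OF G sa_scale[OF sa_AA[OF A_lin]]]] by simp
    have lH\<eta>: "linear H\<eta>" unfolding H\<eta>_def
      using sa_linear[OF sa_plus[OF H sa_scale[OF sa_AA[OF B_lin]]]] by simp
    obtain l1 where l1: "l1 > 0" "\<And>u. l1 * (norm u)\<^sup>2 \<le> wsq G\<eta> u"
      using pd_coercive[OF lG\<eta>] pdG unfolding G\<eta>_def by blast
    obtain l2 where l2: "l2 > 0" "\<And>u. l2 * (norm u)\<^sup>2 \<le> wsq H\<eta> u"
      using pd_coercive[OF lH\<eta>] pdH unfolding H\<eta>_def by blast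
    define V where "V w k = 1 / (\<tau> * \<sigma>) * (norm (z k - snd (snd w)))\<^sup>2 + wsq G' (x k - fst w)
        + wsq H' (y k - fst (snd w)) + \<sigma> * (norm (adjoint A (fst w) + adjoint B (y k) - c))\<^sup>2
        + \<beta> * \<sigma> * (norm (res k))\<^sup>2" for w :: "'a \<times> 'b \<times> 'c" and k
    define D where "D k = 1 / (\<tau>\<^sup>2 * \<sigma>) * (norm (z (Suc k) - z k))\<^sup>2 + wsq G\<eta> (x (Suc k) - x k)
              + wsq H\<eta> (y (Suc k) - y k)" for k
    define E where "E k = (\<tau> + \<beta>) / (\<tau>\<^sup>2 * \<sigma>) * (norm (z (Suc k) - z k))\<^sup>2
              + wsq (\<lambda>u. Shf u - (1/2) *\<^sub>R Sf u) (x (Suc k) - x k)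
              + wsq (\<lambda>v. Shg v - (1/2) *\<^sub>R Sg v + (\<eta> * \<sigma>) *\<^sub>R B (adjoint B v)) (y (Suc k) - y k)" for k
    have step: "V w (Suc k) + D k \<le> V w k + E k" if w: "w \<in> KKT_set p Df q Dg A B c" for w k
    proof -
      obtain xw yw zw where wt: "w = (xw, yw, zw)" by (cases w) auto
      show ?thesis using IA[OF w[unfolded wt] e, of k]
        unfolding V_def D_def E_def wt Let_def \<beta>_def[symmetric] G'_def H'_def G\<eta>_def H\<eta>_def res_def by simp
    qed
    have dz: "(norm (z (Suc k) - z k))\<^sup>2 = (\<tau> * \<sigma>)\<^sup>2 * (norm (res (Suc k)))\<^sup>2" for k
      unfolding zup res_def by (simp add: power_mult_distrib)
    have D0: "0 \<le> D k" for k
      unfolding D_def using l1(1) l2(1) l1(2)[of "x (Suc k) - x k"] l2(2)[of "y (Suc k) - y k"] sigma_pos tau_pos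
      by (intro add_nonneg_nonneg) (auto intro: order_trans[rotated] mult_nonneg_nonneg)
    have Ex: "wsq (\<lambda>u. Shf u - (1/2) *\<^sub>R Sf u) u = wsq (\<lambda>u. Shf u - Sf u) u + wsq Sf u / 2"
      "wsq (\<lambda>u. Shf u - (1/2) *\<^sub>R Sf u) u = wsq Shf u - wsq Sf u / 2" for u
      unfolding wsq_minus_op wsq_scale_op by simp_all
    have Ey: "wsq (\<lambda>v. Shg v - (1/2) *\<^sub>R Sg v + (\<eta> * \<sigma>) *\<^sub>R B (adjoint B v)) v
        = wsq (\<lambda>v. Shg v - Sg v) v + wsq Sg v / 2 + \<eta> * \<sigma> * (norm (adjoint B v))\<^sup>2"
      "wsq (\<lambda>v. Shg v - (1/2) *\<^sub>R Sg v + (\<eta> * \<sigma>) *\<^sub>R B (adjoint B v)) v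
        = wsq Shg v - wsq Sg v / 2 + \<eta> * \<sigma> * (norm (adjoint B v))\<^sup>2" for v
      unfolding wsq_op_AA[OF B_lin] wsq_minus_op wsq_scale_op by simp_all
    have sqy: "wsq (\<lambda>v. Shg v + \<sigma> *\<^sub>R B (adjoint B v)) v = wsq Shg v + \<sigma> * (norm (adjoint B v))\<^sup>2" for v
      by (rule wsq_op_AA[OF B_lin])
    have E0: "0 \<le> E k" for k
    proof -
      have "0 \<le> wsq (\<lambda>u. Shf u - Sf u) (x (Suc k) - x k)" "0 \<le> wsq Sf (x (Suc k) - x k)"
        "0 \<le> wsq (\<lambda>v. Shg v - Sg v) (y (Suc k) - y k)" "0 \<le> wsq Sg (y (Suc k) - y k)"
        using psd_wsq Shf_ge Sf_sa(2) Shg_ge Sg_sa(2) by auto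
      moreover have "0 \<le> \<eta> * \<sigma> * (norm (adjoint B (y (Suc k) - y k)))\<^sup>2" using e sigma_pos by simp
      moreover have "0 \<le> (\<tau> + \<beta>) / (\<tau>\<^sup>2 * \<sigma>) * (norm (z (Suc k) - z k))\<^sup>2" using tau_pos b0 sigma_pos by simp
      ultimately show ?thesis unfolding E_def Ex(1) Ey(1) by linarith
    qed
    define M where "M = max 1 ((\<tau> + \<beta>) * \<sigma>)"
    have Esq: "E k \<le> M * sq k" for k
    proof -
      have z1: "(\<tau> + \<beta>) / (\<tau>\<^sup>2 * \<sigma>) * (norm (z (Suc k) - z k))\<^sup>2 = ((\<tau> + \<beta>) * \<sigma>) * (norm (res (Suc k)))\<^sup>2"
        unfolding dz using tau_pos sigma_pos by (simp add: field_simps power2_eq_square)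
      have a: "((\<tau> + \<beta>) * \<sigma>) * (norm (res (Suc k)))\<^sup>2 \<le> M * (norm (res (Suc k)))\<^sup>2"
        unfolding M_def by (intro mult_right_mono) auto
      have p1: "0 \<le> wsq Shf (x (Suc k) - x k)" using psd_wsq[OF Shf_sa(2)] .
      have p2: "0 \<le> wsq Sf (x (Suc k) - x k)" "0 \<le> wsq Sg (y (Suc k) - y k)" using psd_wsq Sf_sa(2) Sg_sa(2) by auto
      have p3: "0 \<le> wsq Shg (y (Suc k) - y k) + \<sigma> * (norm (adjoint B (y (Suc k) - y k)))\<^sup>2"
        using psd_wsq[OF Shg_sa(2)] sigma_pos by (intro add_nonneg_nonneg) auto
      have b1: "wsq Shf (x (Suc k) - x k) \<le> M * wsq Shf (x (Suc k) - x k)"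
        using p1 unfolding M_def by (rule le_max_mult)
      have b2: "wsq Shg (y (Suc k) - y k) + \<sigma> * (norm (adjoint B (y (Suc k) - y k)))\<^sup>2
         \<le> M * (wsq Shg (y (Suc k) - y k) + \<sigma> * (norm (adjoint B (y (Suc k) - y k)))\<^sup>2)"
        using p3 unfolding M_def by (rule le_max_mult)
      have "\<eta> * \<sigma> * (norm (adjoint B (y (Suc k) - y k)))\<^sup>2 \<le> \<sigma> * (norm (adjoint B (y (Suc k) - y k)))\<^sup>2"
        using e sigma_pos by (intro mult_right_mono) auto
      then show ?thesis unfolding E_def sq_def Ex(2) Ey(2) z1 sqy distrib_left
        using a p2 b1 b2[unfolded distrib_left] by linarith
    qed
    have sq0: "0 \<le> sq k" for k
      unfolding sq_def sqy using psd_wsq[OF Shf_sa(2)] psd_wsq[OF Shg_sa(2)] sigma_pos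
      by (intro add_nonneg_nonneg) auto
    have Es: "summable E"
      by (rule summable_comparison_test'[where g="\<lambda>k. M * sq k" and N=0])
         (use E0 Esq summable_mult[OF sm, of M] in auto)
    have lG': "linear G'" unfolding G'_def by (rule sa_linear[OF G])
    have lH': "linear H'" unfolding H'_def by (rule sa_linear[OF H])
    have wGe: "wsq G\<eta> u = wsq G' u + \<eta> * \<sigma> * (norm (adjoint A u))\<^sup>2" for u
      unfolding G\<eta>_def G'_def by (rule wsq_op_AA[OF A_lin])
    have wHe: "wsq H\<eta> u = wsq H' u + \<eta> * \<sigma> * (norm (adjoint B u))\<^sup>2" for u
      unfolding H\<eta>_def H'_def by (rule wsq_op_AA[OF B_lin])
    have low: "l1 * (norm (x k - xw))\<^sup>2 + l2 * (norm (y k - yw))\<^sup>2 + 1 / (\<tau> * \<sigma>) * (norm (z k - zw))\<^sup>2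
        \<le> V (xw, yw, zw) k" if w: "(xw, yw, zw) \<in> KKT_set p Df q Dg A B c" for xw yw zw k
    proof -
      have fw: "adjoint A xw + adjoint B yw = c" using w unfolding KKT_set_def by auto
      have e1: "adjoint A xw + adjoint B (y k) - c = adjoint B (y k - yw)"
        unfolding fw[symmetric] by (simp add: linear_diff[OF lb])
      have e2: "res k - adjoint B (y k - yw) = adjoint A (x k - xw)"
        unfolding res_def fw[symmetric] by (simp add: linear_diff[OF lb] linear_diff[OF la] algebra_simps)
      have yg: "\<eta> * (norm (adjoint A (x k - xw)))\<^sup>2 \<le> \<beta> * (norm (res k))\<^sup>2 + (1 - \<eta>) * (norm (adjoint B (y k - yw)))\<^sup>2"
        using vec_young[OF e, of "res k" "adjoint B (y k - yw)"] unfolding e2 \<beta>_def .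
      have yg2: "\<sigma> * (\<eta> * (norm (adjoint A (x k - xw)))\<^sup>2) \<le> \<sigma> * (\<beta> * (norm (res k))\<^sup>2 + (1 - \<eta>) * (norm (adjoint B (y k - yw)))\<^sup>2)"
        using yg sigma_pos by (intro mult_left_mono) auto
      have yg3: "\<eta> * \<sigma> * (norm (adjoint A (x k - xw)))\<^sup>2 \<le> \<beta> * \<sigma> * (norm (res k))\<^sup>2 + \<sigma> * (norm (adjoint B (y k - yw)))\<^sup>2
           - \<eta> * \<sigma> * (norm (adjoint B (y k - yw)))\<^sup>2"
        using yg2 by (simp add: algebra_simps)
      show ?thesis unfolding V_def fst_conv snd_conv e1
        using yg3 wGe[of "x k - xw"] wHe[of "y k - yw"] l1(2)[of "x k - xw"] l2(2)[of "y k - yw"] by linarith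
    qed
    have V0: "0 \<le> V w k" if w: "w \<in> KKT_set p Df q Dg A B c" for w k
    proof -
      obtain xw yw zw where wt: "w = (xw, yw, zw)" by (cases w) auto
      have "0 \<le> l1 * (norm (x k - xw))\<^sup>2 + l2 * (norm (y k - yw))\<^sup>2 + 1 / (\<tau> * \<sigma>) * (norm (z k - zw))\<^sup>2"
        using l1(1) l2(1) sigma_pos tau_pos by (intro add_nonneg_nonneg mult_nonneg_nonneg) auto
      then show ?thesis using low[OF w[unfolded wt], of k] unfolding wt by linarith
    qed
    have QF: "convergent (V w) \<and> summable (\<lambda>k. D (k + 0))" if w: "w \<in> KKT_set p Df q Dg A B c" for w
      using quasi_fejer[of "V w" D E 0, OF V0[OF w] D0 E0 Es step[OF w]] by blast
    have Ds: "summable D" using QF[OF kkt] by simp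
    have Dl: "D \<longlonglongrightarrow> 0" using summable_LIMSEQ_zero[OF Ds] .
    have sql: "sq \<longlonglongrightarrow> 0" using summable_LIMSEQ_zero[OF sm] .
    have "(\<lambda>k. (norm (res (Suc k) - 0))\<^sup>2) \<longlonglongrightarrow> 0"
    proof (rule sandwich0[OF _ _ sql])
      show "0 \<le> (norm (res (Suc k) - 0))\<^sup>2" for k by simp
      show "(norm (res (Suc k) - 0))\<^sup>2 \<le> sq k" for k
        unfolding sq_def sqy using psd_wsq[OF Shf_sa(2)] psd_wsq[OF Shg_sa(2)] sigma_pos
        by (simp add: add_increasing)
    qed
    then have "(\<lambda>k. res (Suc k)) \<longlonglongrightarrow> 0" by (rule sq_tendsto_zero)
    then have resl: "res \<longlonglongrightarrow> 0" by (rule LIMSEQ_imp_Suc)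
    have "(\<lambda>k. (norm ((x (Suc k) - x k) - 0))\<^sup>2) \<longlonglongrightarrow> 0"
    proof (rule sandwich0[where h="\<lambda>k. D k / l1"])
      show "0 \<le> (norm ((x (Suc k) - x k) - 0))\<^sup>2" for k by simp
      show "(norm ((x (Suc k) - x k) - 0))\<^sup>2 \<le> D k / l1" for k
      proof -
        have "0 \<le> wsq H\<eta> (y (Suc k) - y k)" using l2 by (meson order_trans mult_nonneg_nonneg less_imp_le zero_le_power2)
        moreover have "0 \<le> 1 / (\<tau>\<^sup>2 * \<sigma>) * (norm (z (Suc k) - z k))\<^sup>2" using sigma_pos by simp
        ultimately have "l1 * (norm (x (Suc k) - x k))\<^sup>2 \<le> D k" unfolding D_def using l1(2)[of "x (Suc k) - x k"] by linarith
        then show ?thesis using l1(1) by (simp add: field_simps)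
      qed
      show "(\<lambda>k. D k / l1) \<longlonglongrightarrow> 0" using tendsto_divide_zero[OF Dl, of l1] .
    qed
    then have dxl: "(\<lambda>k. x (Suc k) - x k) \<longlonglongrightarrow> 0" by (rule sq_tendsto_zero)
    have "(\<lambda>k. (norm ((y (Suc k) - y k) - 0))\<^sup>2) \<longlonglongrightarrow> 0"
    proof (rule sandwich0[where h="\<lambda>k. D k / l2"])
      show "0 \<le> (norm ((y (Suc k) - y k) - 0))\<^sup>2" for k by simp
      show "(norm ((y (Suc k) - y k) - 0))\<^sup>2 \<le> D k / l2" for k
      proof -
        have "0 \<le> wsq G\<eta> (x (Suc k) - x k)" using l1 by (meson order_trans mult_nonneg_nonneg less_imp_le zero_le_power2)
        moreover have "0 \<le> 1 / (\<tau>\<^sup>2 * \<sigma>) * (norm (z (Suc k) - z k))\<^sup>2" using sigma_pos by simp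
        ultimately have "l2 * (norm (y (Suc k) - y k))\<^sup>2 \<le> D k" unfolding D_def using l2(2)[of "y (Suc k) - y k"] by linarith
        then show ?thesis using l2(1) by (simp add: field_simps)
      qed
      show "(\<lambda>k. D k / l2) \<longlonglongrightarrow> 0" using tendsto_divide_zero[OF Dl, of l2] .
    qed
    then have dyl: "(\<lambda>k. y (Suc k) - y k) \<longlonglongrightarrow> 0" by (rule sq_tendsto_zero)
    obtain KG where KG: "KG \<ge> 0" "\<And>u. wsq G' u \<le> KG * (norm u)\<^sup>2" using wsq_abs_bound[OF lG'] by blast
    obtain KH where KH: "KH \<ge> 0" "\<And>u. wsq H' u \<le> KH * (norm u)\<^sup>2" using wsq_abs_bound[OF lH'] by blast
    obtain KB where KB: "KB \<ge> 0" "\<And>u. (norm (adjoint B u))\<^sup>2 \<le> KB * (norm u)\<^sup>2" using adj_bound[OF B_lin] by blast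
    obtain LD where "LD-lipschitz_on UNIV Df" using f_lip by blast
    then have Dfc: "continuous_on UNIV Df" by (rule lipschitz_on_continuous_on)
    obtain LG where "LG-lipschitz_on UNIV Dg" using g_lip by blast
    then have Dgc: "continuous_on UNIV Dg" by (rule lipschitz_on_continuous_on)
    have "\<exists>xs ys zs. (xs, ys, zs) \<in> KKT_set p Df q Dg A B c \<and> x \<longlonglongrightarrow> xs \<and> y \<longlonglongrightarrow> ys \<and> z \<longlonglongrightarrow> zs"
    proof (rule conv_frame[where V=V and \<epsilon>="\<lambda>k. 0" and \<delta>="\<lambda>k. (norm (res k))\<^sup>2"])
      show "(xb, yb, zb) \<in> KKT_set p Df q Dg A B c" by (rule kkt)
      show "\<And>w k. w \<in> KKT_set p Df q Dg A B c \<Longrightarrow> 0 \<le> V w k" by (rule V0)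
      show "\<And>w. w \<in> KKT_set p Df q Dg A B c \<Longrightarrow> convergent (V w)" using QF by blast
      show "(\<lambda>k. 0::real) \<longlonglongrightarrow> 0" by simp
      show "(\<lambda>k. (norm (res k))\<^sup>2) \<longlonglongrightarrow> 0"
        using tendsto_power[OF tendsto_norm[OF resl], of 2] by simp
      fix xw yw zw assume w: "(xw, yw, zw) \<in> KKT_set p Df q Dg A B c"
      show "\<exists>C\<ge>0. \<forall>k. (norm (x k - xw))\<^sup>2 + (norm (y k - yw))\<^sup>2 + (norm (z k - zw))\<^sup>2 \<le> C * (V (xw, yw, zw) k + 0)"
      proof (intro exI[of _ "1 / l1 + 1 / l2 + \<tau> * \<sigma>"] conjI allI)
        show "0 \<le> 1 / l1 + 1 / l2 + \<tau> * \<sigma>" using l1(1) l2(1) sigma_pos tau_pos by simp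
        fix k
        have "(1 / l1) * (l1 * (norm (x k - xw))\<^sup>2) + (1 / l2) * (l2 * (norm (y k - yw))\<^sup>2) + (\<tau> * \<sigma>) * (1 / (\<tau> * \<sigma>) * (norm (z k - zw))\<^sup>2)
            \<le> (1 / l1 + 1 / l2 + \<tau> * \<sigma>) * V (xw, yw, zw) k"
          by (rule sum_bound3) (use l1(1) l2(1) sigma_pos tau_pos low[OF w, of k] in auto)
        then show "(norm (x k - xw))\<^sup>2 + (norm (y k - yw))\<^sup>2 + (norm (z k - zw))\<^sup>2 \<le> (1 / l1 + 1 / l2 + \<tau> * \<sigma>) * (V (xw, yw, zw) k + 0)"
          using l1(1) l2(1) sigma_pos tau_pos by simp
      qed
      show "\<exists>C. \<forall>k. V (xw, yw, zw) k \<le> C * ((norm (x k - xw))\<^sup>2 + (norm (y k - yw))\<^sup>2 + (norm (z k - zw))\<^sup>2 + (norm (res k))\<^sup>2)"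
      proof (intro exI allI)
        fix k
        have fw: "adjoint A xw + adjoint B yw = c" using w unfolding KKT_set_def by auto
        have e1: "adjoint A xw + adjoint B (y k) - c = adjoint B (y k - yw)"
          unfolding fw[symmetric] by (simp add: linear_diff[OF lb])
        have "\<sigma> * (norm (adjoint B (y k - yw)))\<^sup>2 \<le> \<sigma> * (KB * (norm (y k - yw))\<^sup>2)"
          using KB(2) sigma_pos by (intro mult_left_mono) auto
        then have "V (xw, yw, zw) k \<le> KG * (norm (x k - xw))\<^sup>2 + (KH + \<sigma> * KB) * (norm (y k - yw))\<^sup>2
             + 1 / (\<tau> * \<sigma>) * (norm (z k - zw))\<^sup>2 + \<beta> * \<sigma> * (norm (res k))\<^sup>2"
          unfolding V_def fst_conv snd_conv e1 using KG(2)[of "x k - xw"] KH(2)[of "y k - yw"]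
          by (simp add: algebra_simps)
        also have "\<dots> \<le> (KG + (KH + \<sigma> * KB) + 1 / (\<tau> * \<sigma>) + \<beta> * \<sigma>)
            * ((norm (x k - xw))\<^sup>2 + (norm (y k - yw))\<^sup>2 + (norm (z k - zw))\<^sup>2 + (norm (res k))\<^sup>2)"
          by (rule sum_bound4) (use KG(1) KH(1) KB(1) sigma_pos tau_pos b0 in auto)
        finally show "V (xw, yw, zw) k \<le> (KG + (KH + \<sigma> * KB) + 1 / (\<tau> * \<sigma>) + \<beta> * \<sigma>)
            * ((norm (x k - xw))\<^sup>2 + (norm (y k - yw))\<^sup>2 + (norm (z k - zw))\<^sup>2 + (norm (res k))\<^sup>2)" .
      qed
    next
      fix rr xs ys zs assume rr: "strict_mono rr" "(x \<circ> rr) \<longlonglongrightarrow> xs" "(y \<circ> rr) \<longlonglongrightarrow> ys" "(z \<circ> rr) \<longlonglongrightarrow> zs"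
      show "(xs, ys, zs) \<in> KKT_set p Df q Dg A B c"
        by (rule limkkt[where G="\<lambda>u. Shf u + S u" and H="\<lambda>v. Shg v + T v", OF A_lin B_lin p_cpc(1,3) q_cpc(1,3)
              Dfc Dgc sa_linear[OF G] sa_linear[OF H] ux uy dxl dyl resl[unfolded res_def] rr])
    qed
    then obtain xs ys zs where lim: "(xs, ys, zs) \<in> KKT_set p Df q Dg A B c" "x \<longlonglongrightarrow> xs" "y \<longlonglongrightarrow> ys" "z \<longlonglongrightarrow> zs"
      by blast
    show conv unfolding conv_def
      using kkt_primal_dual[OF A_lin B_lin p_cpc(1) q_cpc(1) f_maj(1) Sf_sa(2) g_maj(1) Sg_sa(2) lim(1)]
        tendsto_Pair[OF lim(2) lim(3)] lim(4) by blast
  qed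
  have convB: "psd_op (\<lambda>v. (1/2) *\<^sub>R Shg v + T v) \<longrightarrow> ((\<tau> < (1 + sqrt 5) / 2 \<and>
            (\<exists>\<alpha>. \<tau> / min (1 + \<tau>) (1 + 1 / \<tau>) < \<alpha> \<and> \<alpha> \<le> 1
                 \<and> psd_op (\<lambda>u. Shf u + S u) \<and> psd_op (Hf \<alpha>)
                 \<and> pd_op (\<lambda>u. (1/2) *\<^sub>R Sf u + S u + \<sigma> *\<^sub>R AA u) \<and> pd_op (Mg \<alpha>)))
           \<longrightarrow> conv)"
  proof (intro impI)
    assume hT: "psd_op (\<lambda>v. (1/2) *\<^sub>R Shg v + T v)"
      and hyp: "\<tau> < (1 + sqrt 5) / 2 \<and>
            (\<exists>\<alpha>. \<tau> / min (1 + \<tau>) (1 + 1 / \<tau>) < \<alpha> \<and> \<alpha> \<le> 1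
                 \<and> psd_op (\<lambda>u. Shf u + S u) \<and> psd_op (Hf \<alpha>)
                 \<and> pd_op (\<lambda>u. (1/2) *\<^sub>R Sf u + S u + \<sigma> *\<^sub>R AA u) \<and> pd_op (Mg \<alpha>))"
    define \<mu> where "\<mu> = min (1 + \<tau>) (1 + 1 / \<tau>)"
    define mm where "mm = min \<tau> (1 + \<tau> - \<tau>\<^sup>2)"
    obtain \<alpha> where al: "\<tau> / \<mu> < \<alpha>" "\<alpha> \<le> 1" and psdG: "psd_op (\<lambda>u. Shf u + S u)"
      and psdHf: "psd_op (\<lambda>u. (1/2) *\<^sub>R Sf u + S u + ((1 - \<alpha>) * \<sigma> / 2) *\<^sub>R A (adjoint A u))"
      and pdP: "pd_op (\<lambda>u. (1/2) *\<^sub>R Sf u + S u + \<sigma> *\<^sub>R A (adjoint A u))"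
      and pdM: "pd_op (\<lambda>v. (1/2) *\<^sub>R Sg v + T v + (mm * \<alpha> * \<sigma>) *\<^sub>R B (adjoint B v))"
      using hyp unfolding Hf_def Mg_def AA_def \<mu>_def mm_def by blast
    have mu0: "\<mu> > 0" unfolding \<mu>_def using tau_pos by (simp add: add_pos_pos)
    have amu: "\<tau> < \<alpha> * \<mu>" using al(1) mu0 by (simp add: field_simps)
    have a0: "0 < \<alpha>" using al(1) mu0 tau_pos by (smt (verit) divide_pos_pos)
    define \<kappa> where "\<kappa> = 1 - \<alpha> * min \<tau> (1 / \<tau>)"
    have mt1: "min \<tau> (1 / \<tau>) \<le> 1"
    proof (cases "\<tau> \<le> 1")
      case True then show ?thesis by simp
    next
      case False then have "1 / \<tau> \<le> 1" by simp
      then show ?thesis by simp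
    qed
    have k0: "0 \<le> \<kappa>" unfolding \<kappa>_def using mult_mono[OF al(2) mt1] a0 tau_pos
      by (smt (verit) min_def divide_pos_pos)
    have mm1: "mm * \<alpha> \<le> 1"
    proof -
      have "mm \<le> 1"
      proof (cases "\<tau> \<le> 1")
        case True then show ?thesis unfolding mm_def by simp
      next
        case False then have "1 + \<tau> - \<tau>\<^sup>2 \<le> 1" by (simp add: power2_eq_square)
        then show ?thesis unfolding mm_def by simp
      qed
      then show ?thesis using al(2) a0
        by (cases "mm \<ge> 0") (auto intro: order_trans[OF mult_left_mono[of \<alpha> 1 mm]] simp: mult_le_one mult_neg_pos)
    qed
    define res where "res k = adjoint A (x k) + adjoint B (y k) - c" for k
    define G' where "G' = (\<lambda>u. Shf u + S u)"
    define H' where "H' = (\<lambda>v. Shg v + T v)"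
    define HF where "HF = (\<lambda>u. (1/2) *\<^sub>R Sf u + S u + ((1 - \<alpha>) * \<sigma> / 2) *\<^sub>R A (adjoint A u))"
    define PP where "PP = (\<lambda>u. (1/2) *\<^sub>R Sf u + S u + \<sigma> *\<^sub>R A (adjoint A u))"
    define MG where "MG = (\<lambda>v. (1/2) *\<^sub>R Sg v + T v + (mm * \<alpha> * \<sigma>) *\<^sub>R B (adjoint B v))"
    have lPP: "linear PP" unfolding PP_def
      using sa_linear[OF sa_plus[OF sa_plus[OF sa_scale[OF Sf_sa(1)] S_sa] sa_scale[OF sa_AA[OF A_lin]]]] by simp
    have lMG: "linear MG" unfolding MG_def
      using sa_linear[OF sa_plus[OF sa_plus[OF sa_scale[OF Sg_sa(1)] T_sa] sa_scale[OF sa_AA[OF B_lin]]]] by simp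
    obtain lP where lP: "lP > 0" "\<And>u. lP * (norm u)\<^sup>2 \<le> wsq PP u"
      using pd_coercive[OF lPP] pdP unfolding PP_def by blast
    obtain lM where lM: "lM > 0" "\<And>u. lM * (norm u)\<^sup>2 \<le> wsq MG u"
      using pd_coercive[OF lMG] pdM unfolding MG_def by blast
    have wPP: "wsq PP u = wsq Sf u / 2 + wsq S u + \<sigma> * (norm (adjoint A u))\<^sup>2" for u
      unfolding PP_def wsq_op_AA[OF A_lin] wsq_plus_op wsq_scale_op by simp
    have wHF: "wsq HF u = wsq Sf u / 2 + wsq S u + (1 - \<alpha>) * \<sigma> / 2 * (norm (adjoint A u))\<^sup>2" for u
      unfolding HF_def wsq_op_AA[OF A_lin] wsq_plus_op wsq_scale_op by simp
    have wMG: "wsq MG v = wsq Sg v / 2 + wsq T v + mm * \<alpha> * \<sigma> * (norm (adjoint B v))\<^sup>2" for v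
      unfolding MG_def wsq_op_AA[OF B_lin] wsq_plus_op wsq_scale_op by simp
    have wG': "wsq G' u = wsq Shf u + wsq S u" for u unfolding G'_def by (rule wsq_plus_op)
    have wH': "wsq H' v = wsq Shg v + wsq T v" for v unfolding H'_def by (rule wsq_plus_op)
    have H'0: "0 \<le> wsq H' v" for v
    proof -
      have "0 \<le> wsq Shg v / 2 + wsq T v" using psd_wsq[OF hT, of v] unfolding wsq_plus_op wsq_scale_op by simp
      moreover have "0 \<le> wsq Shg v" by (rule psd_wsq[OF Shg_sa(2)])
      ultimately show ?thesis unfolding wH' by linarith
    qed
    have G'0: "0 \<le> wsq G' u" for u using psd_wsq[OF psdG] unfolding G'_def .
    have HF0: "0 \<le> wsq HF u" for u using psd_wsq[OF psdHf] unfolding HF_def .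
    have MG0: "0 \<le> wsq MG u" for u using lM by (meson order_trans mult_nonneg_nonneg less_imp_le zero_le_power2)
    define \<xi> where "\<xi> k = wsq H' (y k - y (k - 1))" for k
    define V where "V w k = 1 / (\<tau> * \<sigma>) * (norm (z k - snd (snd w)))\<^sup>2 + wsq G' (x k - fst w)
        + wsq H' (y k - fst (snd w)) + \<sigma> * (norm (adjoint A (fst w) + adjoint B (y k) - c))\<^sup>2
        + \<kappa> * \<sigma> * (norm (res k))\<^sup>2 + \<alpha> * \<xi> k" for w :: "'a \<times> 'b \<times> 'c" and k
    define D where "D k = wsq HF (x (Suc k) - x k) + wsq MG (y (Suc k) - y k)
              + (- \<tau> + \<alpha> * \<mu>) * \<sigma> * (norm (res (Suc k)))\<^sup>2" for k
    have step: "V w (Suc k) + D k \<le> V w k + 0" if w: "w \<in> KKT_set p Df q Dg A B c" and k: "k \<ge> 1" for w k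
    proof -
      obtain xw yw zw where wt: "w = (xw, yw, zw)" by (cases w) auto
      obtain n where n: "k = Suc n" using k by (cases k) auto
      show ?thesis using IB[OF w[unfolded wt] hT a0 al(2), of n]
        unfolding V_def D_def wt Let_def \<kappa>_def[symmetric] G'_def H'_def HF_def MG_def res_def n \<xi>_def
          \<mu>_def[symmetric] mm_def[symmetric] diff_Suc_1 by simp
    qed
    have D0: "0 \<le> D k" for k
    proof -
      have "0 \<le> (- \<tau> + \<alpha> * \<mu>) * \<sigma> * (norm (res (Suc k)))\<^sup>2" using amu sigma_pos by simp
      then show ?thesis unfolding D_def using HF0 MG0 by (intro add_nonneg_nonneg) auto
    qed
    have xi0: "0 \<le> \<xi> k" for k unfolding \<xi>_def by (rule H'0)
    have V0: "0 \<le> V w k" for w k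
      unfolding V_def using G'0 H'0 xi0 k0 a0 sigma_pos tau_pos
      by (intro add_nonneg_nonneg mult_nonneg_nonneg) auto
    have QF: "convergent (V w) \<and> summable (\<lambda>k. D (k + 1))" if w: "w \<in> KKT_set p Df q Dg A B c" for w
      using quasi_fejer[of "V w" D "\<lambda>k. 0" 1, OF V0 D0 _ _ step[OF w]] by auto
    have Dl: "(\<lambda>k. D (k + 1)) \<longlonglongrightarrow> 0" using summable_LIMSEQ_zero QF[OF kkt] by blast
    have "(\<lambda>k. (norm ((y (Suc (k + 1)) - y (k + 1)) - 0))\<^sup>2) \<longlonglongrightarrow> 0"
    proof (rule sandwich0[where h="\<lambda>k. D (k + 1) / lM"])
      show "0 \<le> (norm ((y (Suc (k + 1)) - y (k + 1)) - 0))\<^sup>2" for k by simp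
      show "(norm ((y (Suc (k + 1)) - y (k + 1)) - 0))\<^sup>2 \<le> D (k + 1) / lM" for k
      proof -
        have "0 \<le> (- \<tau> + \<alpha> * \<mu>) * \<sigma> * (norm (res (Suc (k + 1))))\<^sup>2" using amu sigma_pos by simp
        then have "lM * (norm (y (Suc (k + 1)) - y (k + 1)))\<^sup>2 \<le> D (k + 1)"
          unfolding D_def using lM(2)[of "y (Suc (k + 1)) - y (k + 1)"] HF0[of "x (Suc (k + 1)) - x (k + 1)"] by linarith
        then show ?thesis using lM(1) by (simp add: field_simps)
      qed
      show "(\<lambda>k. D (k + 1) / lM) \<longlonglongrightarrow> 0" using tendsto_divide_zero[OF Dl, of lM] .
    qed
    then have "(\<lambda>k. y (Suc (k + 1)) - y (k + 1)) \<longlonglongrightarrow> 0" by (rule sq_tendsto_zero)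
    then have "(\<lambda>k. y (Suc (Suc k)) - y (Suc k)) \<longlonglongrightarrow> 0" by simp
    then have dyl: "(\<lambda>k. y (Suc k) - y k) \<longlonglongrightarrow> 0" by (rule LIMSEQ_imp_Suc)
    have "(\<lambda>k. (norm (res (Suc (k + 1)) - 0))\<^sup>2) \<longlonglongrightarrow> 0"
    proof (rule sandwich0[where h="\<lambda>k. D (k + 1) / ((- \<tau> + \<alpha> * \<mu>) * \<sigma>)"])
      show "0 \<le> (norm (res (Suc (k + 1)) - 0))\<^sup>2" for k by simp
      show "(norm (res (Suc (k + 1)) - 0))\<^sup>2 \<le> D (k + 1) / ((- \<tau> + \<alpha> * \<mu>) * \<sigma>)" for k
      proof -
        have "(- \<tau> + \<alpha> * \<mu>) * \<sigma> * (norm (res (Suc (k + 1))))\<^sup>2 \<le> D (k + 1)"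
          unfolding D_def using HF0[of "x (Suc (k + 1)) - x (k + 1)"] MG0[of "y (Suc (k + 1)) - y (k + 1)"] by linarith
        moreover have "0 < (- \<tau> + \<alpha> * \<mu>) * \<sigma>" using amu sigma_pos by simp
        ultimately show ?thesis by (simp add: field_simps)
      qed
      show "(\<lambda>k. D (k + 1) / ((- \<tau> + \<alpha> * \<mu>) * \<sigma>)) \<longlonglongrightarrow> 0" using tendsto_divide_zero[OF Dl] .
    qed
    then have "(\<lambda>k. res (Suc (k + 1))) \<longlonglongrightarrow> 0" by (rule sq_tendsto_zero)
    then have "(\<lambda>k. res (Suc (Suc k))) \<longlonglongrightarrow> 0" by simp
    then have "(\<lambda>k. res (Suc k)) \<longlonglongrightarrow> 0" by (rule LIMSEQ_imp_Suc)
    then have resl: "res \<longlonglongrightarrow> 0" by (rule LIMSEQ_imp_Suc)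
    have adx: "(\<lambda>k. adjoint A (x (Suc k) - x k)) \<longlonglongrightarrow> 0"
    proof -
      have eq: "adjoint A (x (Suc k) - x k) = res (Suc k) - res k - adjoint B (y (Suc k) - y k)" for k
        unfolding res_def by (simp add: linear_diff[OF la] linear_diff[OF lb] algebra_simps)
      have "(\<lambda>k. res (Suc k) - res k - adjoint B (y (Suc k) - y k)) \<longlonglongrightarrow> 0 - 0 - adjoint B 0"
        by (intro tendsto_diff LIMSEQ_Suc resl lin_tendsto[OF lb dyl])
      then show ?thesis unfolding eq using linear_0[OF lb] by simp
    qed
    have "(\<lambda>k. (norm ((x (Suc (k + 1)) - x (k + 1)) - 0))\<^sup>2) \<longlonglongrightarrow> 0"
    proof (rule sandwich0[where h="\<lambda>k. (D (k + 1) + (1 + \<alpha>) * \<sigma> / 2 * (norm (adjoint A (x (Suc (k + 1)) - x (k + 1))))\<^sup>2) / lP"])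
      show "0 \<le> (norm ((x (Suc (k + 1)) - x (k + 1)) - 0))\<^sup>2" for k by simp
      show "(norm ((x (Suc (k + 1)) - x (k + 1)) - 0))\<^sup>2
          \<le> (D (k + 1) + (1 + \<alpha>) * \<sigma> / 2 * (norm (adjoint A (x (Suc (k + 1)) - x (k + 1))))\<^sup>2) / lP" for k
      proof -
        define u where "u = x (Suc (k + 1)) - x (k + 1)"
        have "0 \<le> (- \<tau> + \<alpha> * \<mu>) * \<sigma> * (norm (res (Suc (k + 1))))\<^sup>2" using amu sigma_pos by simp
        then have "wsq HF u \<le> D (k + 1)" unfolding D_def u_def using MG0[of "y (Suc (k + 1)) - y (k + 1)"] by linarith
        moreover have "wsq PP u = wsq HF u + (1 + \<alpha>) * \<sigma> / 2 * (norm (adjoint A u))\<^sup>2"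
          unfolding wPP wHF by (simp add: field_simps)
        ultimately have "lP * (norm u)\<^sup>2 \<le> D (k + 1) + (1 + \<alpha>) * \<sigma> / 2 * (norm (adjoint A u))\<^sup>2"
          using lP(2)[of u] by linarith
        then show ?thesis unfolding u_def[symmetric] using lP(1) by (simp add: field_simps)
      qed
      have "(\<lambda>k. (D (k + 1) + (1 + \<alpha>) * \<sigma> / 2 * (norm (adjoint A (x (Suc (k + 1)) - x (k + 1))))\<^sup>2) / lP)
          \<longlonglongrightarrow> (0 + (1 + \<alpha>) * \<sigma> / 2 * (norm (0::'c))\<^sup>2) / lP"
      proof -
        have adx2: "(\<lambda>k. adjoint A (x (Suc (k + 1)) - x (k + 1))) \<longlonglongrightarrow> 0" using LIMSEQ_Suc[OF adx] by simp
        show ?thesis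
          by (intro tendsto_divide tendsto_add tendsto_mult tendsto_const tendsto_power tendsto_norm Dl adx2)
            (use lP in auto)
      qed
      then show "(\<lambda>k. (D (k + 1) + (1 + \<alpha>) * \<sigma> / 2 * (norm (adjoint A (x (Suc (k + 1)) - x (k + 1))))\<^sup>2) / lP) \<longlonglongrightarrow> 0"
        by simp
    qed
    then have "(\<lambda>k. x (Suc (k + 1)) - x (k + 1)) \<longlonglongrightarrow> 0" by (rule sq_tendsto_zero)
    then have "(\<lambda>k. x (Suc (Suc k)) - x (Suc k)) \<longlonglongrightarrow> 0" by simp
    then have dxl: "(\<lambda>k. x (Suc k) - x k) \<longlonglongrightarrow> 0" by (rule LIMSEQ_imp_Suc)
    have lG': "linear G'" unfolding G'_def by (rule sa_linear[OF G])
    have lH': "linear H'" unfolding H'_def by (rule sa_linear[OF H])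
    obtain KG where KG: "KG \<ge> 0" "\<And>u. wsq G' u \<le> KG * (norm u)\<^sup>2" using wsq_abs_bound[OF lG'] by blast
    obtain KH where KH: "KH \<ge> 0" "\<And>u. wsq H' u \<le> KH * (norm u)\<^sup>2" using wsq_abs_bound[OF lH'] by blast
    obtain KB where KB: "KB \<ge> 0" "\<And>u. (norm (adjoint B u))\<^sup>2 \<le> KB * (norm u)\<^sup>2" using adj_bound[OF B_lin] by blast
    have xil: "\<xi> \<longlonglongrightarrow> 0"
    proof -
      have "(\<lambda>k. KH * (norm (y (Suc k) - y k))\<^sup>2) \<longlonglongrightarrow> KH * (norm (0::'b))\<^sup>2"
        by (intro tendsto_mult tendsto_const tendsto_power tendsto_norm dyl)
      then have h: "(\<lambda>k. KH * (norm (y (Suc k) - y k))\<^sup>2) \<longlonglongrightarrow> 0" by simp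
      have "(\<lambda>k. \<xi> (Suc k)) \<longlonglongrightarrow> 0"
      proof (rule sandwich0[OF _ _ h])
        show "0 \<le> \<xi> (Suc k)" for k by (rule xi0)
        show "\<xi> (Suc k) \<le> KH * (norm (y (Suc k) - y k))\<^sup>2" for k unfolding \<xi>_def diff_Suc_1 by (rule KH(2))
      qed
      then show ?thesis by (rule LIMSEQ_imp_Suc)
    qed
    obtain LD where "LD-lipschitz_on UNIV Df" using f_lip by blast
    then have Dfc: "continuous_on UNIV Df" by (rule lipschitz_on_continuous_on)
    obtain LG where "LG-lipschitz_on UNIV Dg" using g_lip by blast
    then have Dgc: "continuous_on UNIV Dg" by (rule lipschitz_on_continuous_on)
    have "\<exists>xs ys zs. (xs, ys, zs) \<in> KKT_set p Df q Dg A B c \<and> x \<longlonglongrightarrow> xs \<and> y \<longlonglongrightarrow> ys \<and> z \<longlonglongrightarrow> zs"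
    proof (rule conv_frame[where V=V and \<epsilon>="\<lambda>k. (norm (res k))\<^sup>2" and \<delta>="\<lambda>k. (norm (res k))\<^sup>2 + \<xi> k"])
      show "(xb, yb, zb) \<in> KKT_set p Df q Dg A B c" by (rule kkt)
      show "\<And>w k. w \<in> KKT_set p Df q Dg A B c \<Longrightarrow> 0 \<le> V w k" by (rule V0)
      show "\<And>w. w \<in> KKT_set p Df q Dg A B c \<Longrightarrow> convergent (V w)" using QF by blast
      show "(\<lambda>k. (norm (res k))\<^sup>2) \<longlonglongrightarrow> 0"
        using tendsto_power[OF tendsto_norm[OF resl], of 2] by simp
      show "(\<lambda>k. (norm (res k))\<^sup>2 + \<xi> k) \<longlonglongrightarrow> 0"
        using tendsto_add[OF tendsto_power[OF tendsto_norm[OF resl], of 2] xil] by simp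
      fix xw yw zw assume w: "(xw, yw, zw) \<in> KKT_set p Df q Dg A B c"
      have fw: "adjoint A xw + adjoint B yw = c" using w unfolding KKT_set_def by auto
      have e1: "\<And>k. adjoint A xw + adjoint B (y k) - c = adjoint B (y k - yw)"
        unfolding fw[symmetric] by (simp add: linear_diff[OF lb])
      show "\<exists>C\<ge>0. \<forall>k. (norm (x k - xw))\<^sup>2 + (norm (y k - yw))\<^sup>2 + (norm (z k - zw))\<^sup>2 \<le> C * (V (xw, yw, zw) k + (norm (res k))\<^sup>2)"
      proof (intro exI[of _ "(3 + 2 * \<sigma>) / lP + 2 / lM + \<tau> * \<sigma>"] conjI allI)
        show "0 \<le> (3 + 2 * \<sigma>) / lP + 2 / lM + \<tau> * \<sigma>" using lP(1) lM(1) sigma_pos tau_pos by simp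
        fix k
        have e2: "adjoint A (x k - xw) = res k - adjoint B (y k - yw)"
          unfolding res_def fw[symmetric] by (simp add: linear_diff[OF lb] linear_diff[OF la] algebra_simps)
        have n2: "(norm (adjoint A (x k - xw)))\<^sup>2 \<le> 2 * (norm (res k))\<^sup>2 + 2 * (norm (adjoint B (y k - yw)))\<^sup>2"
          unfolding e2 using norm_sq_diff[of "res k" "adjoint B (y k - yw)"] norm_sq_add[of "res k" "adjoint B (y k - yw)"]
            zero_le_power2[of "norm (res k + adjoint B (y k - yw))"] by linarith
        have hx: "lP * (norm (x k - xw))\<^sup>2 \<le> wsq G' (x k - xw) + 2 * \<sigma> * (norm (res k))\<^sup>2 + 2 * (\<sigma> * (norm (adjoint B (y k - yw)))\<^sup>2)"
        proof -
          have "wsq Sf (x k - xw) \<le> wsq Shf (x k - xw)" using psd_wsq[OF Shf_ge, of "x k - xw"] unfolding wsq_minus_op by simp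
          moreover have "0 \<le> wsq Sf (x k - xw)" by (rule psd_wsq[OF Sf_sa(2)])
          moreover have "\<sigma> * (norm (adjoint A (x k - xw)))\<^sup>2 \<le> \<sigma> * (2 * (norm (res k))\<^sup>2 + 2 * (norm (adjoint B (y k - yw)))\<^sup>2)"
            using n2 sigma_pos by (intro mult_left_mono) auto
          ultimately show ?thesis using lP(2)[of "x k - xw"] unfolding wPP wG' by (simp add: algebra_simps)
        qed
        have hy: "lM * (norm (y k - yw))\<^sup>2 \<le> wsq H' (y k - yw) + \<sigma> * (norm (adjoint B (y k - yw)))\<^sup>2"
        proof -
          have "wsq Sg (y k - yw) \<le> wsq Shg (y k - yw)" using psd_wsq[OF Shg_ge, of "y k - yw"] unfolding wsq_minus_op by simp
          moreover have "0 \<le> wsq Sg (y k - yw)" by (rule psd_wsq[OF Sg_sa(2)])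
          moreover have "mm * \<alpha> * \<sigma> * (norm (adjoint B (y k - yw)))\<^sup>2 \<le> \<sigma> * (norm (adjoint B (y k - yw)))\<^sup>2"
            using mult_right_mono[OF mm1, of "\<sigma> * (norm (adjoint B (y k - yw)))\<^sup>2"] sigma_pos by (simp add: mult_ac)
          ultimately show ?thesis using lM(2)[of "y k - yw"] unfolding wMG wH' by linarith
        qed
        have hz: "(norm (z k - zw))\<^sup>2 \<le> (\<tau> * \<sigma>) * (1 / (\<tau> * \<sigma>) * (norm (z k - zw))\<^sup>2)"
          using sigma_pos tau_pos by simp
        have hV: "1 / (\<tau> * \<sigma>) * (norm (z k - zw))\<^sup>2 + wsq G' (x k - xw) + wsq H' (y k - yw) + \<sigma> * (norm (adjoint B (y k - yw)))\<^sup>2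
            \<le> V (xw, yw, zw) k"
        proof -
          have "0 \<le> \<kappa> * \<sigma> * (norm (res k))\<^sup>2" using k0 sigma_pos by simp
          moreover have "0 \<le> \<alpha> * \<xi> k" using a0 xi0 by simp
          ultimately show ?thesis unfolding V_def fst_conv snd_conv e1 by linarith
        qed
        show "(norm (x k - xw))\<^sup>2 + (norm (y k - yw))\<^sup>2 + (norm (z k - zw))\<^sup>2
            \<le> ((3 + 2 * \<sigma>) / lP + 2 / lM + \<tau> * \<sigma>) * (V (xw, yw, zw) k + (norm (res k))\<^sup>2)"
          by (rule coer_combine[OF lP(1) lM(1) _ sigma_pos _ G'0 H'0 _ _ hx hy hz hV])
             (use sigma_pos tau_pos in auto)
      qed
      show "\<exists>C. \<forall>k. V (xw, yw, zw) k \<le> C * ((norm (x k - xw))\<^sup>2 + (norm (y k - yw))\<^sup>2 + (norm (z k - zw))\<^sup>2 + ((norm (res k))\<^sup>2 + \<xi> k))"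
      proof (intro exI allI)
        fix k
        have "\<sigma> * (norm (adjoint B (y k - yw)))\<^sup>2 \<le> \<sigma> * (KB * (norm (y k - yw))\<^sup>2)"
          using KB(2) sigma_pos by (intro mult_left_mono) auto
        moreover have "\<kappa> * \<sigma> * (norm (res k))\<^sup>2 + \<alpha> * \<xi> k \<le> (\<kappa> * \<sigma> + \<alpha>) * ((norm (res k))\<^sup>2 + \<xi> k)"
        proof -
          have "\<kappa> * \<sigma> * (norm (res k))\<^sup>2 \<le> (\<kappa> * \<sigma> + \<alpha>) * (norm (res k))\<^sup>2" using a0 by (intro mult_right_mono) auto
          moreover have "\<alpha> * \<xi> k \<le> (\<kappa> * \<sigma> + \<alpha>) * \<xi> k" using k0 sigma_pos xi0 by (intro mult_right_mono) auto
          ultimately show ?thesis by (simp add: distrib_left)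
        qed
        ultimately have "V (xw, yw, zw) k \<le> KG * (norm (x k - xw))\<^sup>2 + (KH + \<sigma> * KB) * (norm (y k - yw))\<^sup>2
             + 1 / (\<tau> * \<sigma>) * (norm (z k - zw))\<^sup>2 + (\<kappa> * \<sigma> + \<alpha>) * ((norm (res k))\<^sup>2 + \<xi> k)"
          unfolding V_def fst_conv snd_conv e1 using KG(2)[of "x k - xw"] KH(2)[of "y k - yw"]
          by (simp add: algebra_simps)
        also have "\<dots> \<le> (KG + (KH + \<sigma> * KB) + 1 / (\<tau> * \<sigma>) + (\<kappa> * \<sigma> + \<alpha>))
            * ((norm (x k - xw))\<^sup>2 + (norm (y k - yw))\<^sup>2 + (norm (z k - zw))\<^sup>2 + ((norm (res k))\<^sup>2 + \<xi> k))"
          by (rule sum_bound4) (use KG(1) KH(1) KB(1) sigma_pos tau_pos k0 a0 xi0 in auto)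
        finally show "V (xw, yw, zw) k \<le> (KG + (KH + \<sigma> * KB) + 1 / (\<tau> * \<sigma>) + (\<kappa> * \<sigma> + \<alpha>))
            * ((norm (x k - xw))\<^sup>2 + (norm (y k - yw))\<^sup>2 + (norm (z k - zw))\<^sup>2 + ((norm (res k))\<^sup>2 + \<xi> k))" .
      qed
    next
      fix rr xs ys zs assume rr: "strict_mono rr" "(x \<circ> rr) \<longlonglongrightarrow> xs" "(y \<circ> rr) \<longlonglongrightarrow> ys" "(z \<circ> rr) \<longlonglongrightarrow> zs"
      show "(xs, ys, zs) \<in> KKT_set p Df q Dg A B c"
        by (rule limkkt[where G="\<lambda>u. Shf u + S u" and H="\<lambda>v. Shg v + T v", OF A_lin B_lin p_cpc(1,3) q_cpc(1,3)
              Dfc Dgc sa_linear[OF G] sa_linear[OF H] ux uy dxl dyl resl[unfolded res_def] rr])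
    qed
    then obtain xs ys zs where lim: "(xs, ys, zs) \<in> KKT_set p Df q Dg A B c" "x \<longlonglongrightarrow> xs" "y \<longlonglongrightarrow> ys" "z \<longlonglongrightarrow> zs"
      by blast
    show conv unfolding conv_def
      using kkt_primal_dual[OF A_lin B_lin p_cpc(1) q_cpc(1) f_maj(1) Sf_sa(2) g_maj(1) Sg_sa(2) lim(1)]
        tendsto_Pair[OF lim(2) lim(3)] lim(4) by blast
  qed
  show ?thesis
    apply (intro conjI)
      apply (rule partA)
     apply (rule convA)
    using partB convB by blast
qed

end
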